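(* Let $\mathcal K$ be a 2-category which admits Eilenberg–Moore constructions for monads and in which idempotent 2-cells split. Let $(t,\mu,\eta)$ be a monad and $(c,\delta,\varepsilon)$ a comonad on a 0-cell $k$. (1) The following are equivalent: (i) there is a 2-cell $\psi:tc\Rightarrow ct$ with $c\mu\ast\psi t\ast t\psi=\psi\ast\mu c$, $\delta t\ast\psi=cc\mu\ast c\psi t\ast\psi ct\ast t\delta t\ast t\psi\ast t\eta c$ and $\varepsilon t\ast\psi=\mu\ast t\varepsilon t\ast t\psi\ast t\eta c$ (i.e. $((c,\psi),\delta,\varepsilon)$ is a comonad in $\mathrm{Mnd}^\iota(\mathcal K)$); (ii) there is a 2-cell $\psi:tc\Rightarrow ct$ such that $((c,\psi),\ \delta t\ast\psi\ast\eta c,\ \varepsilon t\ast\psi\ast\eta c)$ is a comonad on $t$ in $\mathrm{EM}^w(\mathcal K)$; (iii) there is a comonad $(\overline c,\delta^\iota,\varepsilon^\iota)$ on $J(t)$ in $\mathcal K$, where $(\overline c,\iota,\pi)$ is a weak lifting of $c$ for $t,t$, such that $\delta^\iota$ is a weak $\iota$-lifting of $\delta$ and $\varepsilon^\iota$ is a weak $\iota$-lifting of $\varepsilon$. (2) The following are equivalent: (i) there is a 2-cell $\psi:tc\Rightarrow ct$ with $c\mu\ast\psi t\ast t\psi=\psi\ast\mu c$, $c\psi\ast\psi c\ast t\delta=cc\mu\ast c\psi t\ast\psi ct\ast\eta cct\ast\delta t\ast\psi$ and $t\varepsilon=\varepsilon t\ast\psi$ (i.e. $((c,\psi),\delta,\varepsilon)$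 is a comonad in $\mathrm{Mnd}^\pi(\mathcal K)$); (ii) there is a 2-cell $\psi:tc\Rightarrow ct$ such that $((c,\psi),\ c\psi\ast\psi c\ast\eta cc\ast\delta,\ \eta\ast\varepsilon)$ is a comonad on $t$ in $\mathrm{EM}^w(\mathcal K)$; (iii) there is a comonad $(\overline c,\delta^\pi,\varepsilon^\pi)$ on $J(t)$ in $\mathcal K$, where $(\overline c,\iota,\pi)$ is a weak lifting of $c$ for $t,t$, such that $\delta^\pi$ is a weak $\pi$-lifting of $\delta$ and $\varepsilon^\pi$ is a weak $\pi$-lifting of $\varepsilon$. (3) The following are equivalent: (i) there is a 2-cell $\psi:tc\Rightarrow ct$ with $c\mu\ast\psi t\ast t\psi=\psi\ast\mu c$, $c\psi\ast\psi c\ast t\delta=\delta t\ast\psi$ and $t\varepsilon=\varepsilon t\ast\psi$; (ii) there is a comonad $(\overline c,\overline\delta,\overline\varepsilon)$ on $J(t)$ in $\mathcal K$, where $(\overline c,\iota,\pi)$ is a weak lifting of $c$ for $t,t$, such that $\overline\delta$ is both a weak $\iota$-lifting and a weak $\pi$-lifting of $\delta$ and $\overline\varepsilon$ is both a weak $\iota$-lifting and a weak $\pi$-lifting of $\varepsilon$.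
   Context: Conventions in a 2-category $\mathcal K$: horizontal composition and whiskering by juxtaposition in the order of functor composition; identity 1-cell of $k$ written $k$, identity 2-cell of $V$ written $V$; vertical composition $\ast$ with $\alpha\ast\beta$ meaning $\beta$ then $\alpha$. Monad $(t,\mu,\eta)$: $\mu:tt\Rightarrow t$, $\eta:k\Rightarrow t$ associative and unital. Comonad $(c,\delta,\varepsilon)$: $\delta:c\Rightarrow cc$, $\varepsilon:c\Rightarrow k$ with $\delta c\ast\delta=c\delta\ast\delta$, $\varepsilon c\ast\delta=c=c\varepsilon\ast\delta$. $\mathrm{EM}^w(\mathcal K)$: 0-cells monads; 1-cells $(V,\psi):(t,\mu,\eta)\to(t',\mu',\eta')$ with $\psi:t'V\Rightarrow Vt$ and $V\mu\ast\psi t\ast t'\psi=\psi\ast\mu'V$; 2-cells $(V,\psi)\Rightarrow(W,\phi)$ are $\varrho:V\Rightarrow Wt$ with $W\mu\ast\varrho t\ast\psi=W\mu\ast\phi t\ast t'\varrho$ and $\varrho=W\mu\ast\phi t\ast\eta'Wt\ast\varrho$; identity 1-cell $(k,t)$, identity 2-cell $\phi\ast\eta'W$; 1-cell composite $(V',\psi')\circ(V,\psi)=(V'V,V'\psi\ast\psi'V)$; 2-cell composites $\varrho'\circ\varrho=W'W\mu\ast W'\varrho t\ast W'\psi\ast\varrho'V$ and $\tau\bullet\varrho=U\mu\ast\tau t\ast\varrho$. $\mathrm{Mnd}^\iota(\mathcal K)$ (resp. $\mathrm{Mnd}^\pi(\mathcal K)$): same 0- and 1-cells, 2-cells $\omega:V\Rightarrow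 W$ of $\mathcal K$ with $\omega t\ast\psi=W\mu\ast\phi t\ast t'\omega t\ast t'\psi\ast t'\eta'V$ (resp. $\phi\ast t'\omega=W\mu\ast\phi t\ast\eta'Wt\ast\omega t\ast\psi$), compositions of $\mathcal K$. $\mathcal K$ admits Eilenberg–Moore constructions for monads: the inclusion of $\mathcal K$ in the Lack–Street 2-category of monads has a right 2-adjoint $J$; the monad $(t,\mu,\eta)$ gives an adjunction $f\dashv v$, $v:J(t)\to k$, unit $\eta$, counit $\epsilon$, $t=vf$, $\mu=v\epsilon f$. Idempotent 2-cells split. Weak liftings (for $t$ and $t$): a weak lifting of a 1-cell $V:k\to k$ is $(\overline V,\iota,\pi)$, $\overline V:J(t)\to J(t)$, $\iota:v\overline V\Rightarrow Vv$, $\pi:Vv\Rightarrow v\overline V$, $\pi\ast\iota$ the identity. For $\omega:V\Rightarrow W$ between 1-cells with weak liftings, a weak $\iota$-lifting is $\omega^\iota:\overline V\Rightarrow\overline W$ with $\iota\ast v\omega^\iota=\omega v\ast\iota$, a weak $\pi$-lifting is $\omega^\pi$ with $v\omega^\pi\ast\pi=\pi\ast\omega v$. In (iii) of (1),(2) and in (3)(ii), the weak lifting of $cc$ used is $(\overline c\,\overline c,\ c\iota\ast\iota\overline c,\ \pi\overline c\ast c\pi)$ and that of the identity 1-cell $k$ is $(J(t),v,v)$. *)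

theory Defs
  imports Main
begin

text \<open>A strict 2-category given by its sets of 0-, 1- and 2-cells and the structure maps.
  comp1 g f and hcomp a b are in the order of functor composition (f first, resp. b first);
  vcomp a b means b then a.\<close>

record ('o,'a,'b) twocat =
  obj :: "'o set"
  arr1 :: "'a set"
  arr2 :: "'b set"
  src :: "'a \<Rightarrow> 'o"
  trg :: "'a \<Rightarrow> 'o"
  dom2 :: "'b \<Rightarrow> 'a"
  cod2 :: "'b \<Rightarrow> 'a"
  id1 :: "'o \<Rightarrow> 'a"
  comp1 :: "'a \<Rightarrow> 'a \<Rightarrow> 'a"
  id2 :: "'a \<Rightarrow> 'b"
  vcomp :: "'b \<Rightarrow> 'b \<Rightarrow> 'b"
  hcomp :: "'b \<Rightarrow> 'b \<Rightarrow> 'b"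

definition hom1 :: "('o,'a,'b,'z) twocat_scheme \<Rightarrow> 'a \<Rightarrow> 'o \<Rightarrow> 'o \<Rightarrow> bool" where
  "hom1 C f x y \<longleftrightarrow> f \<in> arr1 C \<and> src C f = x \<and> trg C f = y"

definition hom2 :: "('o,'a,'b,'z) twocat_scheme \<Rightarrow> 'b \<Rightarrow> 'a \<Rightarrow> 'a \<Rightarrow> bool" where
  "hom2 C \<alpha> f g \<longleftrightarrow> \<alpha> \<in> arr2 C \<and> dom2 C \<alpha> = f \<and> cod2 C \<alpha> = g"

text \<open>Whiskering: wl C f a is "f a", wr C a f is "a f".\<close>
definition wl :: "('o,'a,'b,'z) twocat_scheme \<Rightarrow> 'a \<Rightarrow> 'b \<Rightarrow> 'b" where
  "wl C f \<alpha> = hcomp C (id2 C f) \<alpha>"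

definition wr :: "('o,'a,'b,'z) twocat_scheme \<Rightarrow> 'b \<Rightarrow> 'a \<Rightarrow> 'b" where
  "wr C \<alpha> f = hcomp C \<alpha> (id2 C f)"

definition two_category :: "('o,'a,'b,'z) twocat_scheme \<Rightarrow> bool" where
  "two_category C \<longleftrightarrow>
    (\<forall>f\<in>arr1 C. src C f \<in> obj C \<and> trg C f \<in> obj C) \<and>
    (\<forall>x\<in>obj C. hom1 C (id1 C x) x x) \<and>
    (\<forall>f\<in>arr1 C. \<forall>g\<in>arr1 C. src C g = trg C f \<longrightarrow>
        hom1 C (comp1 C g f) (src C f) (trg C g)) \<and>
    (\<forall>f\<in>arr1 C. \<forall>g\<in>arr1 C. \<forall>h\<in>arr1 C. src C g = trg C f \<and> src C h = trg C g \<longrightarrow>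
        comp1 C h (comp1 C g f) = comp1 C (comp1 C h g) f) \<and>
    (\<forall>f\<in>arr1 C. comp1 C (id1 C (trg C f)) f = f \<and> comp1 C f (id1 C (src C f)) = f) \<and>
    (\<forall>\<alpha>\<in>arr2 C. dom2 C \<alpha> \<in> arr1 C \<and> cod2 C \<alpha> \<in> arr1 C \<and>
        src C (dom2 C \<alpha>) = src C (cod2 C \<alpha>) \<and> trg C (dom2 C \<alpha>) = trg C (cod2 C \<alpha>)) \<and>
    (\<forall>f\<in>arr1 C. hom2 C (id2 C f) f f) \<and>
    (\<forall>\<alpha>\<in>arr2 C. \<forall>\<beta>\<in>arr2 C. dom2 C \<alpha> = cod2 C \<beta> \<longrightarrow>
        hom2 C (vcomp C \<alpha> \<beta>) (dom2 C \<beta>) (cod2 C \<alpha>)) \<and>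
    (\<forall>\<alpha>\<in>arr2 C. \<forall>\<beta>\<in>arr2 C. \<forall>\<gamma>\<in>arr2 C. dom2 C \<alpha> = cod2 C \<beta> \<and> dom2 C \<beta> = cod2 C \<gamma> \<longrightarrow>
        vcomp C \<alpha> (vcomp C \<beta> \<gamma>) = vcomp C (vcomp C \<alpha> \<beta>) \<gamma>) \<and>
    (\<forall>\<alpha>\<in>arr2 C. vcomp C (id2 C (cod2 C \<alpha>)) \<alpha> = \<alpha> \<and> vcomp C \<alpha> (id2 C (dom2 C \<alpha>)) = \<alpha>) \<and>
    (\<forall>\<alpha>\<in>arr2 C. \<forall>\<beta>\<in>arr2 C. src C (dom2 C \<alpha>) = trg C (dom2 C \<beta>) \<longrightarrow>
        hom2 C (hcomp C \<alpha> \<beta>) (comp1 C (dom2 C \<alpha>) (dom2 C \<beta>)) (comp1 C (cod2 C \<alpha>) (cod2 C \<beta>))) \<and>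
    (\<forall>\<alpha>\<in>arr2 C. \<forall>\<beta>\<in>arr2 C. \<forall>\<gamma>\<in>arr2 C.
        src C (dom2 C \<alpha>) = trg C (dom2 C \<beta>) \<and> src C (dom2 C \<beta>) = trg C (dom2 C \<gamma>) \<longrightarrow>
        hcomp C \<alpha> (hcomp C \<beta> \<gamma>) = hcomp C (hcomp C \<alpha> \<beta>) \<gamma>) \<and>
    (\<forall>f\<in>arr1 C. \<forall>g\<in>arr1 C. src C g = trg C f \<longrightarrow>
        hcomp C (id2 C g) (id2 C f) = id2 C (comp1 C g f)) \<and>
    (\<forall>\<alpha>\<in>arr2 C. hcomp C (id2 C (id1 C (trg C (dom2 C \<alpha>)))) \<alpha> = \<alpha> \<and>
        hcomp C \<alpha> (id2 C (id1 C (src C (dom2 C \<alpha>)))) = \<alpha>) \<and>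
    (\<forall>\<alpha>\<in>arr2 C. \<forall>\<alpha>'\<in>arr2 C. \<forall>\<beta>\<in>arr2 C. \<forall>\<beta>'\<in>arr2 C.
        dom2 C \<alpha>' = cod2 C \<alpha> \<and> dom2 C \<beta>' = cod2 C \<beta> \<and> src C (dom2 C \<alpha>) = trg C (dom2 C \<beta>) \<longrightarrow>
        hcomp C (vcomp C \<alpha>' \<alpha>) (vcomp C \<beta>' \<beta>) = vcomp C (hcomp C \<alpha>' \<beta>') (hcomp C \<alpha> \<beta>))"

definition is_monad :: "('o,'a,'b,'z) twocat_scheme \<Rightarrow> 'o \<Rightarrow> 'a \<Rightarrow> 'b \<Rightarrow> 'b \<Rightarrow> bool" where
  "is_monad C k t \<mu> \<eta> \<longleftrightarrow> k \<in> obj C \<and> hom1 C t k k \<and>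
     hom2 C \<mu> (comp1 C t t) t \<and> hom2 C \<eta> (id1 C k) t \<and>
     vcomp C \<mu> (wr C \<mu> t) = vcomp C \<mu> (wl C t \<mu>) \<and>
     vcomp C \<mu> (wr C \<eta> t) = id2 C t \<and> vcomp C \<mu> (wl C t \<eta>) = id2 C t"

definition is_comonad :: "('o,'a,'b,'z) twocat_scheme \<Rightarrow> 'o \<Rightarrow> 'a \<Rightarrow> 'b \<Rightarrow> 'b \<Rightarrow> bool" where
  "is_comonad C k c \<delta> \<epsilon> \<longleftrightarrow> k \<in> obj C \<and> hom1 C c k k \<and>
     hom2 C \<delta> c (comp1 C c c) \<and> hom2 C \<epsilon> c (id1 C k) \<and>
     vcomp C (wr C \<delta> c) \<delta> = vcomp C (wl C c \<delta>) \<delta> \<and>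
     vcomp C (wr C \<epsilon> c) \<delta> = id2 C c \<and> vcomp C (wl C c \<epsilon>) \<delta> = id2 C c"

text \<open>(J, v, lam) is an Eilenberg--Moore object of the monad t on k: lam is a t-action on v,
  and composing with the monad morphism (v,lam) : (J,1) \<rightarrow> (k,t) of the Lack--Street
  2-category of monads is an isomorphism of categories
  K(x,J) \<cong> Mnd(K)((x,1),(k,t)) for each 0-cell x. This is the value at t of a right
  2-adjoint to the inclusion of K in Mnd(K) (with counit (v,lam)).\<close>

definition em_object :: "('o,'a,'b,'z) twocat_scheme \<Rightarrow> 'o \<Rightarrow> 'a \<Rightarrow> 'b \<Rightarrow> 'b \<Rightarrow> 'o \<Rightarrow> 'a \<Rightarrow> 'b \<Rightarrow> bool" where
  "em_object C k t \<mu> \<eta> J v lam \<longleftrightarrow> J \<in> obj C \<and> hom1 C v J k \<and> hom2 C lam (comp1 C t v) v \<and>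
     vcomp C lam (wl C t lam) = vcomp C lam (wr C \<mu> v) \<and> vcomp C lam (wr C \<eta> v) = id2 C v \<and>
     (\<forall>x\<in>obj C. \<forall>V \<psi>. hom1 C V x k \<and> hom2 C \<psi> (comp1 C t V) V \<and>
        vcomp C \<psi> (wl C t \<psi>) = vcomp C \<psi> (wr C \<mu> V) \<and> vcomp C \<psi> (wr C \<eta> V) = id2 C V \<longrightarrow>
        (\<exists>!g. hom1 C g x J \<and> comp1 C v g = V \<and> wr C lam g = \<psi>)) \<and>
     (\<forall>x\<in>obj C. \<forall>g g' \<omega>. hom1 C g x J \<and> hom1 C g' x J \<and>
        hom2 C \<omega> (comp1 C v g) (comp1 C v g') \<and>
        vcomp C \<omega> (wr C lam g) = vcomp C (wr C lam g') (wl C t \<omega>) \<longrightarrow>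
        (\<exists>!\<theta>. hom2 C \<theta> g g' \<and> wl C v \<theta> = \<omega>))"

definition has_EM_constructions :: "('o,'a,'b,'z) twocat_scheme \<Rightarrow> bool" where
  "has_EM_constructions C \<longleftrightarrow>
     (\<forall>k t \<mu> \<eta>. is_monad C k t \<mu> \<eta> \<longrightarrow> (\<exists>J v lam. em_object C k t \<mu> \<eta> J v lam))"

definition idempotents_split :: "('o,'a,'b,'z) twocat_scheme \<Rightarrow> bool" where
  "idempotents_split C \<longleftrightarrow>
     (\<forall>e\<in>arr2 C. dom2 C e = cod2 C e \<and> vcomp C e e = e \<longrightarrow>
        (\<exists>W p i. hom2 C p (dom2 C e) W \<and> hom2 C i W (dom2 C e) \<and>
           vcomp C p i = id2 C W \<and> vcomp C i p = e))"

section \<open>The 2-category EM^w(K), restricted to endo-cells on a monad t\<close>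

definition emw_1cell :: "('o,'a,'b,'z) twocat_scheme \<Rightarrow> 'a \<Rightarrow> 'b \<Rightarrow> 'a \<Rightarrow> 'b \<Rightarrow> bool" where
  "emw_1cell C t \<mu> V \<psi> \<longleftrightarrow> hom2 C \<psi> (comp1 C t V) (comp1 C V t) \<and>
     vcomp C (wl C V \<mu>) (vcomp C (wr C \<psi> t) (wl C t \<psi>)) = vcomp C \<psi> (wr C \<mu> V)"

definition emw_2cell :: "('o,'a,'b,'z) twocat_scheme \<Rightarrow> 'a \<Rightarrow> 'b \<Rightarrow> 'b \<Rightarrow> 'a \<Rightarrow> 'b \<Rightarrow> 'a \<Rightarrow> 'b \<Rightarrow> 'b \<Rightarrow> bool" where
  "emw_2cell C t \<mu> \<eta> V \<psi> W \<phi> \<rho> \<longleftrightarrow> hom2 C \<rho> V (comp1 C W t) \<and>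
     vcomp C (wl C W \<mu>) (vcomp C (wr C \<rho> t) \<psi>) =
       vcomp C (wl C W \<mu>) (vcomp C (wr C \<phi> t) (wl C t \<rho>)) \<and>
     \<rho> = vcomp C (wl C W \<mu>) (vcomp C (wr C \<phi> t) (vcomp C (wr C \<eta> (comp1 C W t)) \<rho>))"

definition emw_hcomp :: "('o,'a,'b,'z) twocat_scheme \<Rightarrow> 'a \<Rightarrow> 'b \<Rightarrow> 'a \<Rightarrow> 'a \<Rightarrow> 'a \<Rightarrow> 'b \<Rightarrow> 'b \<Rightarrow> 'b \<Rightarrow> 'b" where
  "emw_hcomp C t \<mu> W' W V \<psi> \<rho>' \<rho> =
     vcomp C (wl C (comp1 C W' W) \<mu>) (vcomp C (wl C W' (wr C \<rho> t))
       (vcomp C (wl C W' \<psi>) (wr C \<rho>' V)))"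

definition emw_vcomp :: "('o,'a,'b,'z) twocat_scheme \<Rightarrow> 'a \<Rightarrow> 'b \<Rightarrow> 'a \<Rightarrow> 'b \<Rightarrow> 'b \<Rightarrow> 'b" where
  "emw_vcomp C t \<mu> U \<tau> \<rho> = vcomp C (wl C U \<mu>) (vcomp C (wr C \<tau> t) \<rho>)"

definition emw_id :: "('o,'a,'b,'z) twocat_scheme \<Rightarrow> 'b \<Rightarrow> 'a \<Rightarrow> 'b \<Rightarrow> 'b" where
  "emw_id C \<eta> W \<phi> = vcomp C \<phi> (wr C \<eta> W)"

definition emw_comonad :: "('o,'a,'b,'z) twocat_scheme \<Rightarrow> 'o \<Rightarrow> 'a \<Rightarrow> 'b \<Rightarrow> 'b \<Rightarrow> 'a \<Rightarrow> 'b \<Rightarrow> 'b \<Rightarrow> 'b \<Rightarrow> bool" where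
  "emw_comonad C k t \<mu> \<eta> c \<psi> D E \<longleftrightarrow>
     (let cc = comp1 C c c; \<psi>2 = vcomp C (wl C c \<psi>) (wr C \<psi> c); ic = emw_id C \<eta> c \<psi> in
     emw_1cell C t \<mu> c \<psi> \<and>
     emw_2cell C t \<mu> \<eta> c \<psi> cc \<psi>2 D \<and>
     emw_2cell C t \<mu> \<eta> c \<psi> (id1 C k) (id2 C t) E \<and>
     emw_vcomp C t \<mu> (comp1 C cc c) (emw_hcomp C t \<mu> cc c c \<psi> D ic) D =
       emw_vcomp C t \<mu> (comp1 C c cc) (emw_hcomp C t \<mu> c cc c \<psi> ic D) D \<and>
     emw_vcomp C t \<mu> (comp1 C (id1 C k) c) (emw_hcomp C t \<mu> (id1 C k) c c \<psi> E ic) D = ic \<and>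
     emw_vcomp C t \<mu> (comp1 C c (id1 C k)) (emw_hcomp C t \<mu> c (id1 C k) c \<psi> ic E) D = ic)"

definition weak_lifting :: "('o,'a,'b,'z) twocat_scheme \<Rightarrow> 'o \<Rightarrow> 'a \<Rightarrow> 'a \<Rightarrow> 'a \<Rightarrow> 'b \<Rightarrow> 'b \<Rightarrow> bool" where
  "weak_lifting C J v V Vb \<iota> \<pi> \<longleftrightarrow> hom1 C Vb J J \<and>
     hom2 C \<iota> (comp1 C v Vb) (comp1 C V v) \<and> hom2 C \<pi> (comp1 C V v) (comp1 C v Vb) \<and>
     vcomp C \<pi> \<iota> = id2 C (comp1 C v Vb)"

definition mult_law :: "('o,'a,'b,'z) twocat_scheme \<Rightarrow> 'a \<Rightarrow> 'b \<Rightarrow> 'a \<Rightarrow> 'b \<Rightarrow> bool" where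
  "mult_law C t \<mu> c \<psi> \<longleftrightarrow> hom2 C \<psi> (comp1 C t c) (comp1 C c t) \<and>
     vcomp C (wl C c \<mu>) (vcomp C (wr C \<psi> t) (wl C t \<psi>)) = vcomp C \<psi> (wr C \<mu> c)"

definition cond1i where
  "cond1i C k t \<mu> \<eta> c \<delta> \<epsilon> \<longleftrightarrow> (\<exists>\<psi>. mult_law C t \<mu> c \<psi> \<and>
     vcomp C (wr C \<delta> t) \<psi> =
       vcomp C (wl C (comp1 C c c) \<mu>) (vcomp C (wl C c (wr C \<psi> t)) (vcomp C (wr C \<psi> (comp1 C c t))
         (vcomp C (wl C t (wr C \<delta> t)) (vcomp C (wl C t \<psi>) (wl C t (wr C \<eta> c)))))) \<and>
     vcomp C (wr C \<epsilon> t) \<psi> =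
       vcomp C \<mu> (vcomp C (wl C t (wr C \<epsilon> t)) (vcomp C (wl C t \<psi>) (wl C t (wr C \<eta> c)))))"

definition cond1ii where
  "cond1ii C k t \<mu> \<eta> c \<delta> \<epsilon> \<longleftrightarrow> (\<exists>\<psi>. emw_comonad C k t \<mu> \<eta> c \<psi>
     (vcomp C (wr C \<delta> t) (vcomp C \<psi> (wr C \<eta> c)))
     (vcomp C (wr C \<epsilon> t) (vcomp C \<psi> (wr C \<eta> c))))"

definition cond1iii where
  "cond1iii C J v c \<delta> \<epsilon> \<longleftrightarrow> (\<exists>cb \<iota> \<pi> \<delta>i \<epsilon>i. weak_lifting C J v c cb \<iota> \<pi> \<and>
     is_comonad C J cb \<delta>i \<epsilon>i \<and>
     vcomp C (vcomp C (wl C c \<iota>) (wr C \<iota> cb)) (wl C v \<delta>i) = vcomp C (wr C \<delta> v) \<iota> \<and>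
     vcomp C (id2 C v) (wl C v \<epsilon>i) = vcomp C (wr C \<epsilon> v) \<iota>)"

definition cond2i where
  "cond2i C k t \<mu> \<eta> c \<delta> \<epsilon> \<longleftrightarrow> (\<exists>\<psi>. mult_law C t \<mu> c \<psi> \<and>
     vcomp C (wl C c \<psi>) (vcomp C (wr C \<psi> c) (wl C t \<delta>)) =
       vcomp C (wl C (comp1 C c c) \<mu>) (vcomp C (wl C c (wr C \<psi> t)) (vcomp C (wr C \<psi> (comp1 C c t))
         (vcomp C (wr C \<eta> (comp1 C (comp1 C c c) t)) (vcomp C (wr C \<delta> t) \<psi>)))) \<and>
     wl C t \<epsilon> = vcomp C (wr C \<epsilon> t) \<psi>)"

definition cond2ii where
  "cond2ii C k t \<mu> \<eta> c \<delta> \<epsilon> \<longleftrightarrow> (\<exists>\<psi>. emw_comonad C k t \<mu> \<eta> c \<psi>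
     (vcomp C (wl C c \<psi>) (vcomp C (wr C \<psi> c) (vcomp C (wr C \<eta> (comp1 C c c)) \<delta>)))
     (vcomp C \<eta> \<epsilon>))"

definition cond2iii where
  "cond2iii C J v c \<delta> \<epsilon> \<longleftrightarrow> (\<exists>cb \<iota> \<pi> \<delta>p \<epsilon>p. weak_lifting C J v c cb \<iota> \<pi> \<and>
     is_comonad C J cb \<delta>p \<epsilon>p \<and>
     vcomp C (wl C v \<delta>p) \<pi> = vcomp C (vcomp C (wr C \<pi> cb) (wl C c \<pi>)) (wr C \<delta> v) \<and>
     vcomp C (wl C v \<epsilon>p) \<pi> = vcomp C (id2 C v) (wr C \<epsilon> v))"

definition cond3i where
  "cond3i C k t \<mu> \<eta> c \<delta> \<epsilon> \<longleftrightarrow> (\<exists>\<psi>. mult_law C t \<mu> c \<psi> \<and>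
     vcomp C (wl C c \<psi>) (vcomp C (wr C \<psi> c) (wl C t \<delta>)) = vcomp C (wr C \<delta> t) \<psi> \<and>
     wl C t \<epsilon> = vcomp C (wr C \<epsilon> t) \<psi>)"

definition cond3ii where
  "cond3ii C J v c \<delta> \<epsilon> \<longleftrightarrow> (\<exists>cb \<iota> \<pi> \<delta>b \<epsilon>b. weak_lifting C J v c cb \<iota> \<pi> \<and>
     is_comonad C J cb \<delta>b \<epsilon>b \<and>
     vcomp C (vcomp C (wl C c \<iota>) (wr C \<iota> cb)) (wl C v \<delta>b) = vcomp C (wr C \<delta> v) \<iota> \<and>
     vcomp C (id2 C v) (wl C v \<epsilon>b) = vcomp C (wr C \<epsilon> v) \<iota> \<and>
     vcomp C (wl C v \<delta>b) \<pi> = vcomp C (vcomp C (wr C \<pi> cb) (wl C c \<pi>)) (wr C \<delta> v) \<and>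
     vcomp C (wl C v \<epsilon>b) \<pi> = vcomp C (id2 C v) (wr C \<epsilon> v))"

end

theory Submission
  imports Defs
begin


locale tc =
  fixes C :: "('o,'a,'b,'z) twocat_scheme"
  assumes TC: "two_category C"
begin

abbreviation A1 where "A1 f \<equiv> f \<in> arr1 C"
abbreviation A2 where "A2 a \<equiv> a \<in> arr2 C"
abbreviation vc (infixr "\<cdot>" 55) where "a \<cdot> b \<equiv> vcomp C a b"
abbreviation wlx (infixr "\<rhd>" 60) where "f \<rhd> a \<equiv> wl C f a"
abbreviation wrx (infixl "\<lhd>" 60) where "a \<lhd> f \<equiv> wr C a f"
abbreviation cp (infixr "\<odot>" 70) where "f \<odot> g \<equiv> comp1 C f g"

lemmas TCD = TC[unfolded two_category_def hom1_def hom2_def]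
lemmas ax1 = TCD[THEN conjunct1]
lemmas ax2 = TCD[THEN conjunct2[THEN conjunct1]]
lemmas ax3 = TCD[THEN conjunct2[THEN conjunct2[THEN conjunct1]]]
lemmas ax4 = TCD[THEN conjunct2[THEN conjunct2[THEN conjunct2[THEN conjunct1]]]]
lemmas ax5 = TCD[THEN conjunct2[THEN conjunct2[THEN conjunct2[THEN conjunct2[THEN conjunct1]]]]]
lemmas ax6 = TCD[THEN conjunct2[THEN conjunct2[THEN conjunct2[THEN conjunct2[THEN conjunct2[THEN conjunct1]]]]]]
lemmas ax7 = TCD[THEN conjunct2[THEN conjunct2[THEN conjunct2[THEN conjunct2[THEN conjunct2[THEN conjunct2[THEN conjunct1]]]]]]]
lemmas ax8 = TCD[THEN conjunct2[THEN conjunct2[THEN conjunct2[THEN conjunct2[THEN conjunct2[THEN conjunct2[THEN conjunct2[THEN conjunct1]]]]]]]]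
lemmas ax9 = TCD[THEN conjunct2[THEN conjunct2[THEN conjunct2[THEN conjunct2[THEN conjunct2[THEN conjunct2[THEN conjunct2[THEN conjunct2[THEN conjunct1]]]]]]]]]
lemmas ax10 = TCD[THEN conjunct2[THEN conjunct2[THEN conjunct2[THEN conjunct2[THEN conjunct2[THEN conjunct2[THEN conjunct2[THEN conjunct2[THEN conjunct2[THEN conjunct1]]]]]]]]]]
lemmas ax11 = TCD[THEN conjunct2[THEN conjunct2[THEN conjunct2[THEN conjunct2[THEN conjunct2[THEN conjunct2[THEN conjunct2[THEN conjunct2[THEN conjunct2[THEN conjunct2[THEN conjunct1]]]]]]]]]]]
lemmas ax12 = TCD[THEN conjunct2[THEN conjunct2[THEN conjunct2[THEN conjunct2[THEN conjunct2[THEN conjunct2[THEN conjunct2[THEN conjunct2[THEN conjunct2[THEN conjunct2[THEN conjunct2[THEN conjunct1]]]]]]]]]]]]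
lemmas ax13 = TCD[THEN conjunct2[THEN conjunct2[THEN conjunct2[THEN conjunct2[THEN conjunct2[THEN conjunct2[THEN conjunct2[THEN conjunct2[THEN conjunct2[THEN conjunct2[THEN conjunct2[THEN conjunct2[THEN conjunct1]]]]]]]]]]]]]
lemmas ax14 = TCD[THEN conjunct2[THEN conjunct2[THEN conjunct2[THEN conjunct2[THEN conjunct2[THEN conjunct2[THEN conjunct2[THEN conjunct2[THEN conjunct2[THEN conjunct2[THEN conjunct2[THEN conjunct2[THEN conjunct2[THEN conjunct1]]]]]]]]]]]]]]
lemmas ax15 = TCD[THEN conjunct2, THEN conjunct2, THEN conjunct2, THEN conjunct2, THEN conjunct2, THEN conjunct2, THEN conjunct2, THEN conjunct2, THEN conjunct2, THEN conjunct2, THEN conjunct2, THEN conjunct2, THEN conjunct2, THEN conjunct2]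

lemma c1[simp]: "A1 f \<Longrightarrow> A1 g \<Longrightarrow> src C g = trg C f \<Longrightarrow> A1 (g \<odot> f)"
  and c1s[simp]: "A1 f \<Longrightarrow> A1 g \<Longrightarrow> src C g = trg C f \<Longrightarrow> src C (g \<odot> f) = src C f"
  and c1t[simp]: "A1 f \<Longrightarrow> A1 g \<Longrightarrow> src C g = trg C f \<Longrightarrow> trg C (g \<odot> f) = trg C g"
  using ax3 by blast+

lemma c1assoc[simp]: "A1 f \<Longrightarrow> A1 g \<Longrightarrow> A1 h \<Longrightarrow> src C g = trg C f \<Longrightarrow> src C h = trg C g \<Longrightarrow>
   (h \<odot> g) \<odot> f = h \<odot> (g \<odot> f)"
  using ax4 by metis

lemma id1[simp]: "x \<in> obj C \<Longrightarrow> A1 (id1 C x)" "x \<in> obj C \<Longrightarrow> src C (id1 C x) = x"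
   "x \<in> obj C \<Longrightarrow> trg C (id1 C x) = x"
  using ax2 by blast+

lemma srcobj: "A1 f \<Longrightarrow> src C f \<in> obj C" and trgobj: "A1 f \<Longrightarrow> trg C f \<in> obj C"
  using ax1 by blast+

lemma id1l[simp]: "A1 f \<Longrightarrow> trg C f = x \<Longrightarrow> id1 C x \<odot> f = f"
  and id1r[simp]: "A1 f \<Longrightarrow> src C f = x \<Longrightarrow> f \<odot> id1 C x = f"
  using ax5 by blast+

lemma a2d[simp]: "A2 a \<Longrightarrow> A1 (dom2 C a)" "A2 a \<Longrightarrow> A1 (cod2 C a)"
  "A2 a \<Longrightarrow> src C (cod2 C a) = src C (dom2 C a)" "A2 a \<Longrightarrow> trg C (cod2 C a) = trg C (dom2 C a)"
  using ax6 by metis+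

lemma id2[simp]: "A1 f \<Longrightarrow> A2 (id2 C f)" "A1 f \<Longrightarrow> dom2 C (id2 C f) = f" "A1 f \<Longrightarrow> cod2 C (id2 C f) = f"
  using ax7 by blast+

lemma vcA[simp]: "A2 a \<Longrightarrow> A2 b \<Longrightarrow> dom2 C a = cod2 C b \<Longrightarrow> A2 (a \<cdot> b)"
  and vcD[simp]: "A2 a \<Longrightarrow> A2 b \<Longrightarrow> dom2 C a = cod2 C b \<Longrightarrow> dom2 C (a \<cdot> b) = dom2 C b"
  and vcC[simp]: "A2 a \<Longrightarrow> A2 b \<Longrightarrow> dom2 C a = cod2 C b \<Longrightarrow> cod2 C (a \<cdot> b) = cod2 C a"
  using ax8 by blast+

lemma vassoc[simp]: "A2 a \<Longrightarrow> A2 b \<Longrightarrow> A2 c \<Longrightarrow> dom2 C a = cod2 C b \<Longrightarrow> dom2 C b = cod2 C c \<Longrightarrow>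
  (a \<cdot> b) \<cdot> c = a \<cdot> (b \<cdot> c)"
  using ax9 by metis

lemma vidl[simp]: "A2 a \<Longrightarrow> cod2 C a = f \<Longrightarrow> id2 C f \<cdot> a = a"
  and vidr[simp]: "A2 a \<Longrightarrow> dom2 C a = f \<Longrightarrow> a \<cdot> id2 C f = a"
  using ax10 by blast+

lemma hcA: "A2 a \<Longrightarrow> A2 b \<Longrightarrow> src C (dom2 C a) = trg C (dom2 C b) \<Longrightarrow> A2 (hcomp C a b)"
  and hcD: "A2 a \<Longrightarrow> A2 b \<Longrightarrow> src C (dom2 C a) = trg C (dom2 C b) \<Longrightarrow> dom2 C (hcomp C a b) = dom2 C a \<odot> dom2 C b"
  and hcC: "A2 a \<Longrightarrow> A2 b \<Longrightarrow> src C (dom2 C a) = trg C (dom2 C b) \<Longrightarrow> cod2 C (hcomp C a b) = cod2 C a \<odot> cod2 C b"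
  using ax11 by blast+

lemma wlA[simp]: "A1 f \<Longrightarrow> A2 a \<Longrightarrow> src C f = trg C (dom2 C a) \<Longrightarrow> A2 (f \<rhd> a)"
  and wlD[simp]: "A1 f \<Longrightarrow> A2 a \<Longrightarrow> src C f = trg C (dom2 C a) \<Longrightarrow> dom2 C (f \<rhd> a) = f \<odot> dom2 C a"
  and wlC[simp]: "A1 f \<Longrightarrow> A2 a \<Longrightarrow> src C f = trg C (dom2 C a) \<Longrightarrow> cod2 C (f \<rhd> a) = f \<odot> cod2 C a"
  unfolding wl_def by (auto intro: hcA simp: hcD hcC)

lemma wrA[simp]: "A1 f \<Longrightarrow> A2 a \<Longrightarrow> src C (dom2 C a) = trg C f \<Longrightarrow> A2 (a \<lhd> f)"
  and wrD[simp]: "A1 f \<Longrightarrow> A2 a \<Longrightarrow> src C (dom2 C a) = trg C f \<Longrightarrow> dom2 C (a \<lhd> f) = dom2 C a \<odot> f"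
  and wrC[simp]: "A1 f \<Longrightarrow> A2 a \<Longrightarrow> src C (dom2 C a) = trg C f \<Longrightarrow> cod2 C (a \<lhd> f) = cod2 C a \<odot> f"
  unfolding wr_def by (auto intro: hcA simp: hcD hcC)

lemma interchange: "A2 a \<Longrightarrow> A2 a' \<Longrightarrow> A2 b \<Longrightarrow> A2 b' \<Longrightarrow> dom2 C a' = cod2 C a \<Longrightarrow> dom2 C b' = cod2 C b \<Longrightarrow>
   src C (dom2 C a) = trg C (dom2 C b) \<Longrightarrow> hcomp C (a' \<cdot> a) (b' \<cdot> b) = hcomp C a' b' \<cdot> hcomp C a b"
  using ax15 by blast

lemma hcassoc: "A2 a \<Longrightarrow> A2 b \<Longrightarrow> A2 c \<Longrightarrow> src C (dom2 C a) = trg C (dom2 C b) \<Longrightarrow> src C (dom2 C b) = trg C (dom2 C c) \<Longrightarrow>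
  hcomp C a (hcomp C b c) = hcomp C (hcomp C a b) c"
  using ax12 by blast

lemma hcid: "A1 f \<Longrightarrow> A1 g \<Longrightarrow> src C g = trg C f \<Longrightarrow> hcomp C (id2 C g) (id2 C f) = id2 C (g \<odot> f)"
  using ax13 by blast

lemma hcunit: "A2 a \<Longrightarrow> hcomp C (id2 C (id1 C (trg C (dom2 C a)))) a = a"
   "A2 a \<Longrightarrow> hcomp C a (id2 C (id1 C (src C (dom2 C a)))) = a"
  using ax14 by blast+

lemma wl_v[simp]: "A1 f \<Longrightarrow> A2 a \<Longrightarrow> A2 b \<Longrightarrow> dom2 C a = cod2 C b \<Longrightarrow> src C f = trg C (dom2 C b) \<Longrightarrow>
   f \<rhd> (a \<cdot> b) = (f \<rhd> a) \<cdot> (f \<rhd> b)"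
proof -
  assume h: "A1 f" "A2 a" "A2 b" "dom2 C a = cod2 C b" "src C f = trg C (dom2 C b)"
  have "f \<rhd> (a \<cdot> b) = hcomp C (id2 C f \<cdot> id2 C f) (a \<cdot> b)" using h by (simp add: wl_def)
  also have "\<dots> = (f \<rhd> a) \<cdot> (f \<rhd> b)" unfolding wl_def using h
    by (subst interchange) auto
  finally show ?thesis .
qed

lemma wr_v[simp]: "A1 f \<Longrightarrow> A2 a \<Longrightarrow> A2 b \<Longrightarrow> dom2 C a = cod2 C b \<Longrightarrow> src C (dom2 C b) = trg C f \<Longrightarrow>
   (a \<cdot> b) \<lhd> f = (a \<lhd> f) \<cdot> (b \<lhd> f)"
proof -
  assume h: "A1 f" "A2 a" "A2 b" "dom2 C a = cod2 C b" "src C (dom2 C b) = trg C f"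
  have "(a \<cdot> b) \<lhd> f = hcomp C (a \<cdot> b) (id2 C f \<cdot> id2 C f)" using h by (simp add: wr_def)
  also have "\<dots> = (a \<lhd> f) \<cdot> (b \<lhd> f)" unfolding wr_def using h
    by (subst interchange) auto
  finally show ?thesis .
qed

lemma wl_id[simp]: "A1 f \<Longrightarrow> A1 g \<Longrightarrow> src C f = trg C g \<Longrightarrow> f \<rhd> id2 C g = id2 C (f \<odot> g)"
  unfolding wl_def by (simp add: hcid)
lemma wr_id[simp]: "A1 f \<Longrightarrow> A1 g \<Longrightarrow> src C g = trg C f \<Longrightarrow> id2 C g \<lhd> f = id2 C (g \<odot> f)"
  unfolding wr_def by (simp add: hcid)

lemma wl_wl[simp]: "A1 f \<Longrightarrow> A1 g \<Longrightarrow> A2 a \<Longrightarrow> src C f = trg C g \<Longrightarrow> src C g = trg C (dom2 C a) \<Longrightarrow>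
   f \<rhd> (g \<rhd> a) = (f \<odot> g) \<rhd> a"
  unfolding wl_def by (simp add: hcassoc hcid)
lemma wr_wr[simp]: "A1 f \<Longrightarrow> A1 g \<Longrightarrow> A2 a \<Longrightarrow> src C g = trg C f \<Longrightarrow> src C (dom2 C a) = trg C g \<Longrightarrow>
   (a \<lhd> g) \<lhd> f = a \<lhd> (g \<odot> f)"
  unfolding wr_def by (subst hcassoc[symmetric]) (auto simp: hcid)
lemma wl_wr[simp]: "A1 f \<Longrightarrow> A1 g \<Longrightarrow> A2 a \<Longrightarrow> src C f = trg C (dom2 C a) \<Longrightarrow> src C (dom2 C a) = trg C g \<Longrightarrow>
   f \<rhd> (a \<lhd> g) = (f \<rhd> a) \<lhd> g"
  unfolding wl_def wr_def by (simp add: hcassoc)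

lemma wl_id1[simp]: "A2 a \<Longrightarrow> trg C (dom2 C a) = x \<Longrightarrow> id1 C x \<rhd> a = a"
  unfolding wl_def using hcunit by blast
lemma wr_id1[simp]: "A2 a \<Longrightarrow> src C (dom2 C a) = x \<Longrightarrow> a \<lhd> id1 C x = a"
  unfolding wr_def using hcunit by blast

lemma nat1: "A2 a \<Longrightarrow> A2 b \<Longrightarrow> src C (dom2 C b) = trg C (dom2 C a) \<Longrightarrow>
   (cod2 C b \<rhd> a) \<cdot> (b \<lhd> dom2 C a) = (b \<lhd> cod2 C a) \<cdot> (dom2 C b \<rhd> a)"
proof -
  assume h: "A2 a" "A2 b" "src C (dom2 C b) = trg C (dom2 C a)"
  have "(cod2 C b \<rhd> a) \<cdot> (b \<lhd> dom2 C a) = hcomp C (id2 C (cod2 C b) \<cdot> b) (a \<cdot> id2 C (dom2 C a))"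
    unfolding wl_def wr_def using h by (subst interchange) auto
  also have "\<dots> = hcomp C (b \<cdot> id2 C (dom2 C b)) (id2 C (cod2 C a) \<cdot> a)" using h by simp
  also have "\<dots> = (b \<lhd> cod2 C a) \<cdot> (dom2 C b \<rhd> a)"
    unfolding wl_def wr_def using h by (subst interchange) auto
  finally show ?thesis .
qed


lemma tl2: "a \<cdot> b = x \<Longrightarrow> A2 a \<Longrightarrow> A2 b \<Longrightarrow> A2 r \<Longrightarrow> dom2 C a = cod2 C b \<Longrightarrow> dom2 C b = cod2 C r \<Longrightarrow>
   a \<cdot> (b \<cdot> r) = x \<cdot> r"
  by (erule subst) simp
lemma tl3: "a \<cdot> (b \<cdot> d) = x \<Longrightarrow> A2 a \<Longrightarrow> A2 b \<Longrightarrow> A2 d \<Longrightarrow> A2 r \<Longrightarrow> dom2 C a = cod2 C b \<Longrightarrow>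
   dom2 C b = cod2 C d \<Longrightarrow> dom2 C d = cod2 C r \<Longrightarrow>
   a \<cdot> (b \<cdot> (d \<cdot> r)) = x \<cdot> r"
  by (erule subst) simp
lemma tl4: "a \<cdot> (b \<cdot> (d \<cdot> e)) = x \<Longrightarrow> A2 a \<Longrightarrow> A2 b \<Longrightarrow> A2 d \<Longrightarrow> A2 e \<Longrightarrow> A2 r \<Longrightarrow>
   dom2 C a = cod2 C b \<Longrightarrow> dom2 C b = cod2 C d \<Longrightarrow> dom2 C d = cod2 C e \<Longrightarrow> dom2 C e = cod2 C r \<Longrightarrow>
   a \<cdot> (b \<cdot> (d \<cdot> (e \<cdot> r))) = x \<cdot> r"
  by (erule subst) simp
lemma tl5: "a \<cdot> (b \<cdot> (d \<cdot> (e \<cdot> g))) = x \<Longrightarrow> A2 a \<Longrightarrow> A2 b \<Longrightarrow> A2 d \<Longrightarrow> A2 e \<Longrightarrow> A2 g \<Longrightarrow> A2 r \<Longrightarrow>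
   dom2 C a = cod2 C b \<Longrightarrow> dom2 C b = cod2 C d \<Longrightarrow> dom2 C d = cod2 C e \<Longrightarrow> dom2 C e = cod2 C g \<Longrightarrow>
   dom2 C g = cod2 C r \<Longrightarrow>
   a \<cdot> (b \<cdot> (d \<cdot> (e \<cdot> (g \<cdot> r)))) = x \<cdot> r"
  by (erule subst) simp
lemma tl6: "a \<cdot> (b \<cdot> (d \<cdot> (e \<cdot> (g \<cdot> h)))) = x \<Longrightarrow> A2 a \<Longrightarrow> A2 b \<Longrightarrow> A2 d \<Longrightarrow> A2 e \<Longrightarrow> A2 g \<Longrightarrow>
   A2 h \<Longrightarrow> A2 r \<Longrightarrow>
   dom2 C a = cod2 C b \<Longrightarrow> dom2 C b = cod2 C d \<Longrightarrow> dom2 C d = cod2 C e \<Longrightarrow> dom2 C e = cod2 C g \<Longrightarrow>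
   dom2 C g = cod2 C h \<Longrightarrow> dom2 C h = cod2 C r \<Longrightarrow>
   a \<cdot> (b \<cdot> (d \<cdot> (e \<cdot> (g \<cdot> (h \<cdot> r))))) = x \<cdot> r"
  by (erule subst) simp


lemma tl7: "a \<cdot> (b \<cdot> (d \<cdot> (e \<cdot> (g \<cdot> (h \<cdot> i))))) = x \<Longrightarrow> A2 a \<Longrightarrow> A2 b \<Longrightarrow> A2 d \<Longrightarrow> A2 e \<Longrightarrow> A2 g \<Longrightarrow>
   A2 h \<Longrightarrow> A2 i \<Longrightarrow> A2 r \<Longrightarrow>
   dom2 C a = cod2 C b \<Longrightarrow> dom2 C b = cod2 C d \<Longrightarrow> dom2 C d = cod2 C e \<Longrightarrow> dom2 C e = cod2 C g \<Longrightarrow>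
   dom2 C g = cod2 C h \<Longrightarrow> dom2 C h = cod2 C i \<Longrightarrow> dom2 C i = cod2 C r \<Longrightarrow>
   a \<cdot> (b \<cdot> (d \<cdot> (e \<cdot> (g \<cdot> (h \<cdot> (i \<cdot> r)))))) = x \<cdot> r"
  by (erule subst) simp

end


locale emset = tc C for C :: "('o,'a,'b,'z) twocat_scheme" +
  fixes k J :: 'o and t v f :: 'a and mu eta lam cu :: 'b
  assumes mon: "is_monad C k t mu eta"
  and em: "em_object C k t mu eta J v lam"
  and fT: "hom1 C f k J" and vf: "v \<odot> f = t" and lamf: "lam \<lhd> f = mu"
  and cuT: "hom2 C cu (f \<odot> v) (id1 C J)" and vcu: "v \<rhd> cu = lam"
begin

lemma objs[simp]: "k \<in> obj C" "J \<in> obj C" using em mon unfolding em_object_def is_monad_def by auto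

lemma tT[simp]: "A1 t" "src C t = k" "trg C t = k" using mon unfolding is_monad_def hom1_def by auto
lemma vT[simp]: "A1 v" "src C v = J" "trg C v = k" using em unfolding em_object_def hom1_def by auto
lemma fTT[simp]: "A1 f" "src C f = k" "trg C f = J" using fT unfolding hom1_def by auto
lemma muT[simp]: "A2 mu" "dom2 C mu = t \<odot> t" "cod2 C mu = t"
  using mon unfolding is_monad_def hom2_def by auto
lemma etaT[simp]: "A2 eta" "dom2 C eta = id1 C k" "cod2 C eta = t"
  using mon unfolding is_monad_def hom2_def by auto
lemma lamT[simp]: "A2 lam" "dom2 C lam = t \<odot> v" "cod2 C lam = v"
  using em unfolding em_object_def hom2_def by auto
lemma cuTT[simp]: "A2 cu" "dom2 C cu = f \<odot> v" "cod2 C cu = id1 C J"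
  using cuT unfolding hom2_def by auto

lemma vf2[simp]: "v \<odot> f = t" "A1 X \<Longrightarrow> trg C X = k \<Longrightarrow> v \<odot> (f \<odot> X) = t \<odot> X"
  using vf by (auto simp flip: c1assoc)

lemma mu_assoc: "mu \<cdot> (mu \<lhd> t) = mu \<cdot> (t \<rhd> mu)" and mu_l: "mu \<cdot> (eta \<lhd> t) = id2 C t"
  and mu_r: "mu \<cdot> (t \<rhd> eta) = id2 C t"
  using mon unfolding is_monad_def by auto

lemma lam_assoc: "lam \<cdot> (t \<rhd> lam) = lam \<cdot> (mu \<lhd> v)" and lam_unit: "lam \<cdot> (eta \<lhd> v) = id2 C v"
  using em unfolding em_object_def by auto

lemma lamf2[simp]: "lam \<lhd> f = mu" "A1 X \<Longrightarrow> trg C X = k \<Longrightarrow> lam \<lhd> (f \<odot> X) = mu \<lhd> X"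
  using lamf by (auto simp flip: wr_wr)

lemma lamf3[simp]: "A1 X \<Longrightarrow> src C X = k \<Longrightarrow> (X \<rhd> lam) \<lhd> f = X \<rhd> mu"
   "A1 X \<Longrightarrow> src C X = k \<Longrightarrow> A1 Y \<Longrightarrow> trg C Y = k \<Longrightarrow> (X \<rhd> lam) \<lhd> (f \<odot> Y) = (X \<rhd> mu) \<lhd> Y"
  by (simp_all flip: lamf2 add: wl_wr wr_wr)

lemma vcu2[simp]: "v \<rhd> cu = lam" "A1 X \<Longrightarrow> src C X = k \<Longrightarrow> (X \<odot> v) \<rhd> cu = X \<rhd> lam"
  using vcu by (auto simp flip: wl_wl)

lemma vcu3[simp]: "A1 X \<Longrightarrow> A1 Y \<Longrightarrow> src C X = trg C Y \<Longrightarrow> src C Y = k \<Longrightarrow> (X \<odot> Y \<odot> v) \<rhd> cu = (X \<odot> Y) \<rhd> lam"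
  "A1 X \<Longrightarrow> A1 Y \<Longrightarrow> A1 Z \<Longrightarrow> src C X = trg C Y \<Longrightarrow> src C Y = trg C Z \<Longrightarrow> src C Z = k \<Longrightarrow>
    (X \<odot> Y \<odot> Z \<odot> v) \<rhd> cu = (X \<odot> Y \<odot> Z) \<rhd> lam"
  using vcu2(2)[of "X \<odot> Y"] vcu2(2)[of "X \<odot> Y \<odot> Z"] by simp_all

lemma em1: "x \<in> obj C \<Longrightarrow> hom1 C V x k \<Longrightarrow> hom2 C \<psi> (t \<odot> V) V \<Longrightarrow>
        \<psi> \<cdot> (t \<rhd> \<psi>) = \<psi> \<cdot> (mu \<lhd> V) \<Longrightarrow> \<psi> \<cdot> (eta \<lhd> V) = id2 C V \<Longrightarrow>
        (\<exists>g. hom1 C g x J \<and> v \<odot> g = V \<and> lam \<lhd> g = \<psi>)"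
  using em unfolding em_object_def by blast

lemma em2: "x \<in> obj C \<Longrightarrow> hom1 C g x J \<Longrightarrow> hom1 C g' x J \<Longrightarrow>
        hom2 C \<omega> (v \<odot> g) (v \<odot> g') \<Longrightarrow>
        \<omega> \<cdot> (lam \<lhd> g) = (lam \<lhd> g') \<cdot> (t \<rhd> \<omega>) \<Longrightarrow>
        (\<exists>!\<theta>. hom2 C \<theta> g g' \<and> v \<rhd> \<theta> = \<omega>)"
  using em unfolding em_object_def by blast

lemma lam_nat: "A2 \<theta> \<Longrightarrow> trg C (dom2 C \<theta>) = J \<Longrightarrow>
   (v \<rhd> \<theta>) \<cdot> (lam \<lhd> dom2 C \<theta>) = (lam \<lhd> cod2 C \<theta>) \<cdot> ((t \<odot> v) \<rhd> \<theta>)"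
  using nat1[of \<theta> lam] by simp

lemma faithful: "A2 \<theta>1 \<Longrightarrow> A2 \<theta>2 \<Longrightarrow> dom2 C \<theta>1 = dom2 C \<theta>2 \<Longrightarrow> cod2 C \<theta>1 = cod2 C \<theta>2 \<Longrightarrow>
   trg C (dom2 C \<theta>1) = J \<Longrightarrow> v \<rhd> \<theta>1 = v \<rhd> \<theta>2 \<Longrightarrow> \<theta>1 = \<theta>2"
proof -
  assume h: "A2 \<theta>1" "A2 \<theta>2" "dom2 C \<theta>1 = dom2 C \<theta>2" "cod2 C \<theta>1 = cod2 C \<theta>2"
     "trg C (dom2 C \<theta>1) = J" "v \<rhd> \<theta>1 = v \<rhd> \<theta>2"
  let ?x = "src C (dom2 C \<theta>1)" and ?g = "dom2 C \<theta>1" and ?g' = "cod2 C \<theta>1"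
  have "\<exists>!\<theta>. hom2 C \<theta> ?g ?g' \<and> v \<rhd> \<theta> = v \<rhd> \<theta>1"
    apply (rule em2[of ?x])
    using h by (auto simp: hom1_def hom2_def srcobj lam_nat)
  then show ?thesis using h unfolding hom2_def by metis
qed

lemma lift2: "A1 g \<Longrightarrow> A1 g' \<Longrightarrow> trg C g = J \<Longrightarrow> trg C g' = J \<Longrightarrow> src C g' = src C g \<Longrightarrow>
   A2 \<omega> \<Longrightarrow> dom2 C \<omega> = v \<odot> g \<Longrightarrow> cod2 C \<omega> = v \<odot> g' \<Longrightarrow>
   \<omega> \<cdot> (lam \<lhd> g) = (lam \<lhd> g') \<cdot> (t \<rhd> \<omega>) \<Longrightarrow>
   \<exists>\<theta>. A2 \<theta> \<and> dom2 C \<theta> = g \<and> cod2 C \<theta> = g' \<and> v \<rhd> \<theta> = \<omega>"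
  using em2[of "src C g" g g' \<omega>] by (auto simp: hom1_def hom2_def srcobj)

lemma lift1: "A1 V \<Longrightarrow> src C V = J \<Longrightarrow> trg C V = k \<Longrightarrow> A2 \<psi> \<Longrightarrow> dom2 C \<psi> = t \<odot> V \<Longrightarrow> cod2 C \<psi> = V \<Longrightarrow>
        \<psi> \<cdot> (t \<rhd> \<psi>) = \<psi> \<cdot> (mu \<lhd> V) \<Longrightarrow> \<psi> \<cdot> (eta \<lhd> V) = id2 C V \<Longrightarrow>
        (\<exists>g. A1 g \<and> src C g = J \<and> trg C g = J \<and> v \<odot> g = V \<and> lam \<lhd> g = \<psi>)"
  using em1[of J V \<psi>] by (auto simp: hom1_def hom2_def)

end


locale cmset = emset +
  fixes c dl ec
  assumes cm: "is_comonad C k c dl ec"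
begin
lemma cT[simp]: "A1 c" "src C c = k" "trg C c = k" using cm unfolding is_comonad_def hom1_def by auto
lemma dlT[simp]: "A2 dl" "dom2 C dl = c" "cod2 C dl = c \<odot> c" using cm unfolding is_comonad_def hom2_def by auto
lemma ecT[simp]: "A2 ec" "dom2 C ec = c" "cod2 C ec = id1 C k" using cm unfolding is_comonad_def hom2_def by auto
lemma dl_coassoc: "(dl \<lhd> c) \<cdot> dl = (c \<rhd> dl) \<cdot> dl" and ec_l: "(ec \<lhd> c) \<cdot> dl = id2 C c"
  and ec_r: "(c \<rhd> ec) \<cdot> dl = id2 C c" using cm unfolding is_comonad_def by auto
end

context emset begin

definition ml where "ml W \<phi> \<longleftrightarrow> A1 W \<and> src C W = k \<and> trg C W = k \<and> A2 \<phi> \<and> dom2 C \<phi> = t \<odot> W \<and>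
   cod2 C \<phi> = W \<odot> t \<and> (W \<rhd> mu) \<cdot> ((\<phi> \<lhd> t) \<cdot> (t \<rhd> \<phi>)) = \<phi> \<cdot> (mu \<lhd> W)"

lemma mlD: assumes "ml W \<phi>" shows "A1 W" "src C W = k" "trg C W = k" "A2 \<phi>" "dom2 C \<phi> = t \<odot> W"
   "cod2 C \<phi> = W \<odot> t" "(W \<rhd> mu) \<cdot> ((\<phi> \<lhd> t) \<cdot> (t \<rhd> \<phi>)) = \<phi> \<cdot> (mu \<lhd> W)"
  using assms unfolding ml_def by auto

lemma GP1: assumes "ml W \<phi>" shows "(W \<rhd> mu) \<cdot> ((\<phi> \<lhd> t) \<cdot> ((eta \<lhd> (W \<odot> t)) \<cdot> \<phi>)) = \<phi>"
proof -
  note h = mlD[OF assms]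
  have n1: "(eta \<lhd> (W \<odot> t)) \<cdot> \<phi> = (t \<rhd> \<phi>) \<cdot> (eta \<lhd> (t \<odot> W))"
    using nat1[of \<phi> eta] h by simp
  have "(W \<rhd> mu) \<cdot> ((\<phi> \<lhd> t) \<cdot> ((eta \<lhd> (W \<odot> t)) \<cdot> \<phi>)) = (W \<rhd> mu) \<cdot> ((\<phi> \<lhd> t) \<cdot> ((t \<rhd> \<phi>) \<cdot> (eta \<lhd> (t \<odot> W))))"
    using h by (simp add: n1)
  also have "\<dots> = \<phi> \<cdot> ((mu \<lhd> W) \<cdot> (eta \<lhd> (t \<odot> W)))" using h by (simp add: tl3[OF h(7)])
  also have "\<dots> = \<phi> \<cdot> ((mu \<cdot> (eta \<lhd> t)) \<lhd> W)" using h by simp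
  also have "\<dots> = \<phi>" using h by (simp add: mu_l)
  finally show ?thesis .
qed


lemma GP2: assumes "ml W \<phi>" shows
  "(W \<rhd> mu) \<cdot> ((\<phi> \<lhd> t) \<cdot> ((eta \<lhd> (W \<odot> t)) \<cdot> ((W \<rhd> mu) \<cdot> (\<phi> \<lhd> t)))) = (W \<rhd> mu) \<cdot> (\<phi> \<lhd> t)"
proof -
  note h = mlD[OF assms]
  have n1: "(eta \<lhd> (W \<odot> t)) \<cdot> (W \<rhd> mu) = ((t \<odot> W) \<rhd> mu) \<cdot> (eta \<lhd> (W \<odot> t \<odot> t))"
    using nat1[of "W \<rhd> mu" eta] h by simp
  have n2: "(\<phi> \<lhd> t) \<cdot> ((t \<odot> W) \<rhd> mu) = ((W \<odot> t) \<rhd> mu) \<cdot> (\<phi> \<lhd> (t \<odot> t))"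
    using nat1[of mu \<phi>] h by simp
  have n3: "(W \<rhd> mu) \<cdot> ((W \<odot> t) \<rhd> mu) = (W \<rhd> mu) \<cdot> ((W \<rhd> mu) \<lhd> t)"
    using arg_cong[OF mu_assoc, of "wl C W"] h by simp
  have g: "((W \<rhd> mu) \<lhd> t) \<cdot> ((\<phi> \<lhd> (t \<odot> t)) \<cdot> ((eta \<lhd> (W \<odot> t \<odot> t)) \<cdot> (\<phi> \<lhd> t))) = \<phi> \<lhd> t"
    using arg_cong[OF GP1[OF assms], of "\<lambda>x. x \<lhd> t"] h by simp
  have "(W \<rhd> mu) \<cdot> ((\<phi> \<lhd> t) \<cdot> ((eta \<lhd> (W \<odot> t)) \<cdot> ((W \<rhd> mu) \<cdot> (\<phi> \<lhd> t)))) =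
     (W \<rhd> mu) \<cdot> (((W \<odot> t) \<rhd> mu) \<cdot> ((\<phi> \<lhd> (t \<odot> t)) \<cdot> ((eta \<lhd> (W \<odot> t \<odot> t)) \<cdot> (\<phi> \<lhd> t))))"
    using h by (simp add: tl2[OF n1] tl2[OF n2])
  also have "\<dots> = (W \<rhd> mu) \<cdot> (\<phi> \<lhd> t)"
    using h by (simp add: tl2[OF n3] g)
  finally show ?thesis .
qed

lemma M2: assumes "ml c \<psi>" shows "ml (c \<odot> c) ((c \<rhd> \<psi>) \<cdot> (\<psi> \<lhd> c))"
proof -
  note h = mlD[OF assms]
  have n1: "(\<psi> \<lhd> (c \<odot> t)) \<cdot> ((t \<odot> c) \<rhd> \<psi>) = ((c \<odot> t) \<rhd> \<psi>) \<cdot> (\<psi> \<lhd> (t \<odot> c))"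
    using nat1[of \<psi> \<psi>] h by simp
  have g1: "((c \<odot> c) \<rhd> mu) \<cdot> (((c \<rhd> \<psi>) \<lhd> t) \<cdot> ((c \<odot> t) \<rhd> \<psi>)) = (c \<rhd> \<psi>) \<cdot> ((c \<rhd> mu) \<lhd> c)"
    using arg_cong[OF h(7), of "wl C c"] h(1-6) by simp
  have g2: "((c \<rhd> mu) \<lhd> c) \<cdot> ((\<psi> \<lhd> (t \<odot> c)) \<cdot> ((t \<rhd> \<psi>) \<lhd> c)) = (\<psi> \<lhd> c) \<cdot> (mu \<lhd> (c \<odot> c))"
    using arg_cong[OF h(7), of "\<lambda>x. x \<lhd> c"] h(1-6) by simp
  have "((c \<odot> c) \<rhd> mu) \<cdot> ((((c \<rhd> \<psi>) \<cdot> (\<psi> \<lhd> c)) \<lhd> t) \<cdot> (t \<rhd> ((c \<rhd> \<psi>) \<cdot> (\<psi> \<lhd> c)))) =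
     ((c \<odot> c) \<rhd> mu) \<cdot> (((c \<rhd> \<psi>) \<lhd> t) \<cdot> (((c \<odot> t) \<rhd> \<psi>) \<cdot> ((\<psi> \<lhd> (t \<odot> c)) \<cdot> ((t \<rhd> \<psi>) \<lhd> c))))"
    using h by (simp add: tl2[OF n1])
  also have "\<dots> = ((c \<rhd> \<psi>) \<cdot> (\<psi> \<lhd> c)) \<cdot> (mu \<lhd> (c \<odot> c))"
    using h by (simp add: tl3[OF g1] g2)
  finally show ?thesis using h unfolding ml_def by simp
qed

definition ew where "ew W \<phi> = (W \<rhd> lam) \<cdot> ((\<phi> \<lhd> v) \<cdot> (eta \<lhd> (W \<odot> v)))"

lemma K1: assumes "ml W \<phi>" shows
  "(W \<rhd> lam) \<cdot> ((\<phi> \<lhd> v) \<cdot> (((t \<odot> W) \<rhd> lam) \<cdot> ((t \<rhd> \<phi>) \<lhd> v))) = (W \<rhd> lam) \<cdot> ((\<phi> \<lhd> v) \<cdot> (mu \<lhd> (W \<odot> v)))"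
proof -
  note h = mlD[OF assms]
  have n1: "(\<phi> \<lhd> v) \<cdot> ((t \<odot> W) \<rhd> lam) = ((W \<odot> t) \<rhd> lam) \<cdot> (\<phi> \<lhd> (t \<odot> v))"
    using nat1[of lam \<phi>] h by simp
  have n2: "(W \<rhd> lam) \<cdot> ((W \<odot> t) \<rhd> lam) = (W \<rhd> lam) \<cdot> ((W \<rhd> mu) \<lhd> v)"
    using arg_cong[OF lam_assoc, of "wl C W"] h by simp
  have g: "((W \<rhd> mu) \<lhd> v) \<cdot> ((\<phi> \<lhd> (t \<odot> v)) \<cdot> ((t \<rhd> \<phi>) \<lhd> v)) = (\<phi> \<lhd> v) \<cdot> (mu \<lhd> (W \<odot> v))"
    using arg_cong[OF h(7), of "\<lambda>x. x \<lhd> v"] h(1-6) by simp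
  show ?thesis using h by (simp add: tl2[OF n1] tl2[OF n2] g)
qed

lemma ewT: assumes "ml W \<phi>" shows "A2 (ew W \<phi>)" "dom2 C (ew W \<phi>) = W \<odot> v" "cod2 C (ew W \<phi>) = W \<odot> v"
  using mlD[OF assms] unfolding ew_def by auto

lemma K: assumes "ml W \<phi>" shows
  "(W \<rhd> lam) \<cdot> ((\<phi> \<lhd> v) \<cdot> (t \<rhd> ew W \<phi>)) = (W \<rhd> lam) \<cdot> (\<phi> \<lhd> v)"
proof -
  note h = mlD[OF assms]
  have "(W \<rhd> lam) \<cdot> ((\<phi> \<lhd> v) \<cdot> (t \<rhd> ew W \<phi>)) = (W \<rhd> lam) \<cdot> ((\<phi> \<lhd> v) \<cdot> ((mu \<lhd> (W \<odot> v)) \<cdot> ((t \<rhd> eta) \<lhd> (W \<odot> v))))"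
    using h unfolding ew_def by (simp add: tl4[OF K1[OF assms]])
  also have "\<dots> = (W \<rhd> lam) \<cdot> ((\<phi> \<lhd> v) \<cdot> ((mu \<cdot> (t \<rhd> eta)) \<lhd> (W \<odot> v)))" using h by simp
  also have "\<dots> = (W \<rhd> lam) \<cdot> (\<phi> \<lhd> v)" using h by (simp add: mu_r)
  finally show ?thesis .
qed

lemma K': assumes "ml W \<phi>" shows
  "ew W \<phi> \<cdot> ((W \<rhd> lam) \<cdot> (\<phi> \<lhd> v)) = (W \<rhd> lam) \<cdot> (\<phi> \<lhd> v)"
proof -
  note h = mlD[OF assms]
  have n1: "(eta \<lhd> (W \<odot> v)) \<cdot> (W \<rhd> lam) = ((t \<odot> W) \<rhd> lam) \<cdot> (eta \<lhd> (W \<odot> t \<odot> v))"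
    using nat1[of "W \<rhd> lam" eta] h by simp
  have n2: "(eta \<lhd> (W \<odot> t \<odot> v)) \<cdot> (\<phi> \<lhd> v) = ((t \<rhd> \<phi>) \<lhd> v) \<cdot> (eta \<lhd> (t \<odot> W \<odot> v))"
    using nat1[of "\<phi> \<lhd> v" eta] h by simp
  have "ew W \<phi> \<cdot> ((W \<rhd> lam) \<cdot> (\<phi> \<lhd> v)) =
     (W \<rhd> lam) \<cdot> ((\<phi> \<lhd> v) \<cdot> (((t \<odot> W) \<rhd> lam) \<cdot> (((t \<rhd> \<phi>) \<lhd> v) \<cdot> (eta \<lhd> (t \<odot> W \<odot> v)))))"
    using h unfolding ew_def by (simp add: tl2[OF n1] n2)
  also have "\<dots> = (W \<rhd> lam) \<cdot> ((\<phi> \<lhd> v) \<cdot> ((mu \<cdot> (eta \<lhd> t)) \<lhd> (W \<odot> v)))"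
    using h by (simp add: tl4[OF K1[OF assms]])
  also have "\<dots> = (W \<rhd> lam) \<cdot> (\<phi> \<lhd> v)" using h by (simp add: mu_l)
  finally show ?thesis .
qed

lemma ew_idem: assumes "ml W \<phi>" shows "ew W \<phi> \<cdot> ew W \<phi> = ew W \<phi>"
proof -
  note h = mlD[OF assms] ewT[OF assms]
  have "ew W \<phi> \<cdot> ew W \<phi> = (ew W \<phi> \<cdot> ((W \<rhd> lam) \<cdot> (\<phi> \<lhd> v))) \<cdot> (eta \<lhd> (W \<odot> v))"
    using h unfolding ew_def by simp
  also have "\<dots> = ew W \<phi>" using h by (simp only: K'[OF assms]) (simp add: ew_def)
  finally show ?thesis .
qed


lemma constructA: assumes ml: "ml c \<psi>" and sp: "idempotents_split C"
  shows "\<exists>cb \<iota> \<pi>. A1 cb \<and> src C cb = J \<and> trg C cb = J \<and> A2 \<iota> \<and> dom2 C \<iota> = v \<odot> cb \<and> cod2 C \<iota> = c \<odot> v \<and>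
    A2 \<pi> \<and> dom2 C \<pi> = c \<odot> v \<and> cod2 C \<pi> = v \<odot> cb \<and> \<pi> \<cdot> \<iota> = id2 C (v \<odot> cb) \<and> \<iota> \<cdot> \<pi> = ew c \<psi> \<and>
    lam \<lhd> cb = \<pi> \<cdot> ((c \<rhd> lam) \<cdot> ((\<psi> \<lhd> v) \<cdot> (t \<rhd> \<iota>)))"
proof -
  note h = mlD[OF ml] ewT[OF ml]
  obtain W0 p i where spl: "hom2 C p (c \<odot> v) W0" "hom2 C i W0 (c \<odot> v)" "p \<cdot> i = id2 C W0" "i \<cdot> p = ew c \<psi>"
    using sp ew_idem[OF ml] h unfolding idempotents_split_def by metis
  have pT[simp]: "A2 p" "dom2 C p = c \<odot> v" "cod2 C p = W0" and iT[simp]: "A2 i" "dom2 C i = W0" "cod2 C i = c \<odot> v"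
    using spl unfolding hom2_def by auto
  have W0T[simp]: "A1 W0" "src C W0 = J" "trg C W0 = k"
    using a2d[of p] h by auto
  define \<alpha> where "\<alpha> = p \<cdot> ((c \<rhd> lam) \<cdot> ((\<psi> \<lhd> v) \<cdot> (t \<rhd> i)))"
  have \<alpha>T: "A2 \<alpha>" "dom2 C \<alpha> = t \<odot> W0" "cod2 C \<alpha> = W0" unfolding \<alpha>_def using h by auto
  have n1: "(t \<rhd> i) \<cdot> (eta \<lhd> W0) = (eta \<lhd> (c \<odot> v)) \<cdot> i"
    using nat1[of i eta] h by simp
  have "\<alpha> \<cdot> (eta \<lhd> W0) = p \<cdot> (ew c \<psi> \<cdot> i)"
    unfolding \<alpha>_def ew_def using h by (simp add: n1)
  also have "\<dots> = (p \<cdot> i) \<cdot> (p \<cdot> i)" using h by (simp flip: spl(4))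
  also have "\<dots> = id2 C W0" using spl(3) by simp
  finally have un: "\<alpha> \<cdot> (eta \<lhd> W0) = id2 C W0" .
  have tip: "(t \<rhd> i) \<cdot> (t \<rhd> p) = t \<rhd> ew c \<psi>"
    using arg_cong[OF spl(4), of "wl C t"] h by simp
  have n2: "(mu \<lhd> (c \<odot> v)) \<cdot> ((t \<odot> t) \<rhd> i) = (t \<rhd> i) \<cdot> (mu \<lhd> W0)"
    using nat1[of i mu] h by simp
  have "\<alpha> \<cdot> (t \<rhd> \<alpha>) = p \<cdot> ((c \<rhd> lam) \<cdot> ((\<psi> \<lhd> v) \<cdot> ((t \<rhd> ew c \<psi>) \<cdot> (((t \<odot> c) \<rhd> lam) \<cdot> (((t \<rhd> \<psi>) \<lhd> v) \<cdot> ((t \<odot> t) \<rhd> i))))))"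
    unfolding \<alpha>_def using h by (simp add: tl2[OF tip])
  also have "\<dots> = p \<cdot> ((c \<rhd> lam) \<cdot> ((\<psi> \<lhd> v) \<cdot> (((t \<odot> c) \<rhd> lam) \<cdot> (((t \<rhd> \<psi>) \<lhd> v) \<cdot> ((t \<odot> t) \<rhd> i)))))"
    using h by (simp add: tl3[OF K[OF ml]])
  also have "\<dots> = \<alpha> \<cdot> (mu \<lhd> W0)"
    unfolding \<alpha>_def using h by (simp add: tl4[OF K1[OF ml]] n2)
  finally have as: "\<alpha> \<cdot> (t \<rhd> \<alpha>) = \<alpha> \<cdot> (mu \<lhd> W0)" .
  obtain cb where cb: "A1 cb" "src C cb = J" "trg C cb = J" "v \<odot> cb = W0" "lam \<lhd> cb = \<alpha>"
    using lift1[OF W0T(1,2,3) \<alpha>T as un] by blast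
  show ?thesis
    apply (rule exI[of _ cb], rule exI[of _ i], rule exI[of _ p])
    using cb spl(3,4) \<alpha>_def by simp
qed


lemma VF: assumes W: "A1 W" "src C W = k" "trg C W = k" and ph: "A2 \<phi>" "dom2 C \<phi> = t \<odot> W" "cod2 C \<phi> = W \<odot> t"
  and rh: "A2 \<rho>" "cod2 C \<rho> = W \<odot> t" "A1 (dom2 C \<rho>)" "src C (dom2 C \<rho>) = k" "trg C (dom2 C \<rho>) = k"
  shows "(W \<rhd> lam) \<cdot> (((W \<rhd> mu) \<cdot> ((\<phi> \<lhd> t) \<cdot> (t \<rhd> \<rho>))) \<lhd> v) =
    (W \<rhd> lam) \<cdot> ((\<phi> \<lhd> v) \<cdot> (t \<rhd> ((W \<rhd> lam) \<cdot> (\<rho> \<lhd> v))))"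
proof -
  have n1: "(\<phi> \<lhd> v) \<cdot> ((t \<odot> W) \<rhd> lam) = ((W \<odot> t) \<rhd> lam) \<cdot> (\<phi> \<lhd> (t \<odot> v))"
    using nat1[of lam \<phi>] W ph by simp
  have n2: "(W \<rhd> lam) \<cdot> ((W \<odot> t) \<rhd> lam) = (W \<rhd> lam) \<cdot> ((W \<rhd> mu) \<lhd> v)"
    using arg_cong[OF lam_assoc, of "wl C W"] W by simp
  show ?thesis using W ph rh by (simp add: tl2[OF n1] tl2[OF n2])
qed


lemma VF2: assumes W: "A1 W" "src C W = k" "trg C W = k" and ph: "A2 \<phi>" "dom2 C \<phi> = t \<odot> W" "cod2 C \<phi> = W \<odot> t"
  and rh: "A2 X" "cod2 C X = W \<odot> t" "A1 (dom2 C X)" "src C (dom2 C X) = k" "trg C (dom2 C X) = k"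
  shows "(W \<rhd> lam) \<cdot> (((W \<rhd> mu) \<cdot> ((\<phi> \<lhd> t) \<cdot> ((eta \<lhd> (W \<odot> t)) \<cdot> X))) \<lhd> v) =
    ew W \<phi> \<cdot> ((W \<rhd> lam) \<cdot> (X \<lhd> v))"
proof -
  have n1: "((W \<odot> t) \<rhd> lam) \<cdot> (\<phi> \<lhd> (t \<odot> v)) = (\<phi> \<lhd> v) \<cdot> ((t \<odot> W) \<rhd> lam)"
    using nat1[of lam \<phi>] W ph by simp
  have n2: "(W \<rhd> lam) \<cdot> ((W \<rhd> mu) \<lhd> v) = (W \<rhd> lam) \<cdot> ((W \<odot> t) \<rhd> lam)"
    using arg_cong[OF lam_assoc, of "wl C W"] W by simp
  have n3: "((t \<odot> W) \<rhd> lam) \<cdot> (eta \<lhd> (W \<odot> t \<odot> v)) = (eta \<lhd> (W \<odot> v)) \<cdot> (W \<rhd> lam)"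
    using nat1[of "W \<rhd> lam" eta] W by simp
  show ?thesis using W ph rh unfolding ew_def by (simp add: tl2[OF n1] tl2[OF n2] tl2[OF n3])
qed


lemma RVg: assumes U: "A1 U" "src C U = k" "trg C U = k" and V: "A1 V" "src C V = k" "trg C V = k"
  and Ub: "A1 Ub" "src C Ub = J" "trg C Ub = J" and Vb: "A1 Vb" "src C Vb = J" "trg C Vb = J"
  and iU: "A2 iU" "dom2 C iU = v \<odot> Ub" "cod2 C iU = U \<odot> v"
  and pV: "A2 pV" "dom2 C pV = V \<odot> v" "cod2 C pV = v \<odot> Vb"
  and Th: "A2 Th" "dom2 C Th = Vb" "cod2 C Th = Ub"
  shows "(U \<rhd> lam) \<cdot> (((iU \<lhd> f) \<cdot> (((v \<rhd> Th) \<lhd> f) \<cdot> ((pV \<lhd> f) \<cdot> (V \<rhd> eta)))) \<lhd> v) = iU \<cdot> ((v \<rhd> Th) \<cdot> pV)"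
proof -
  note [simp] = U V Ub Vb iU pV Th
  have n1: "(U \<rhd> lam) \<cdot> (iU \<lhd> (f \<odot> v)) = iU \<cdot> ((v \<odot> Ub) \<rhd> cu)" using nat1[of cu iU] by simp
  have n2: "((v \<odot> Ub) \<rhd> cu) \<cdot> ((v \<rhd> Th) \<lhd> (f \<odot> v)) = (v \<rhd> Th) \<cdot> ((v \<odot> Vb) \<rhd> cu)"
    using nat1[of cu "v \<rhd> Th"] by simp
  have n3: "((v \<odot> Vb) \<rhd> cu) \<cdot> (pV \<lhd> (f \<odot> v)) = pV \<cdot> (V \<rhd> lam)" using nat1[of cu pV] by simp
  have n4: "(V \<rhd> lam) \<cdot> ((V \<rhd> eta) \<lhd> v) = id2 C (V \<odot> v)" using arg_cong[OF lam_unit, of "wl C V"] by simp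
  show ?thesis by (simp add: tl2[OF n1] tl2[OF n2] tl2[OF n3] n4)
qed

lemma AB: assumes U: "A1 U" "src C U = k" "trg C U = k" and V: "A1 V" "src C V = k" "trg C V = k"
  and Ub: "A1 Ub" "src C Ub = J" "trg C Ub = J" and Vb: "A1 Vb" "src C Vb = J" "trg C Vb = J"
  and iU: "A2 iU" "dom2 C iU = v \<odot> Ub" "cod2 C iU = U \<odot> v"
  and pV: "A2 pV" "dom2 C pV = V \<odot> v" "cod2 C pV = v \<odot> Vb"
  and Th: "A2 Th" "dom2 C Th = Vb" "cod2 C Th = Ub"
  shows "(U \<rhd> mu) \<cdot> (((iU \<lhd> f) \<cdot> (((v \<rhd> Th) \<lhd> f) \<cdot> ((pV \<lhd> f) \<cdot> (V \<rhd> eta)))) \<lhd> t) = (iU \<lhd> f) \<cdot> (((v \<rhd> Th) \<lhd> f) \<cdot> (pV \<lhd> f))"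
  using arg_cong[OF RVg[OF assms], of "\<lambda>x. x \<lhd> f"] assms by simp

end


locale wl0 = cmset +
  fixes cb \<iota> \<pi>
  assumes cbT[simp]: "A1 cb" "src C cb = J" "trg C cb = J"
  and iT[simp]: "A2 \<iota>" "dom2 C \<iota> = v \<odot> cb" "cod2 C \<iota> = c \<odot> v"
  and pT[simp]: "A2 \<pi>" "dom2 C \<pi> = c \<odot> v" "cod2 C \<pi> = v \<odot> cb"
  and pi: "\<pi> \<cdot> \<iota> = id2 C (v \<odot> cb)"
begin

abbreviation "icc \<equiv> (c \<rhd> \<iota>) \<cdot> (\<iota> \<lhd> cb)"
abbreviation "pcc \<equiv> (\<pi> \<lhd> cb) \<cdot> (c \<rhd> \<pi>)"

lemma picc: "pcc \<cdot> icc = id2 C (v \<odot> cb \<odot> cb)"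
proof -
  have a: "(c \<rhd> \<pi>) \<cdot> (c \<rhd> \<iota>) = id2 C (c \<odot> v \<odot> cb)" using arg_cong[OF pi, of "wl C c"] by simp
  have b: "(\<pi> \<lhd> cb) \<cdot> (\<iota> \<lhd> cb) = id2 C (v \<odot> cb \<odot> cb)" using arg_cong[OF pi, of "\<lambda>x. x \<lhd> cb"] by simp
  show ?thesis by (simp add: tl2[OF a] b)
qed

lemma canc_i: "A2 x \<Longrightarrow> A2 y \<Longrightarrow> cod2 C x = v \<odot> cb \<Longrightarrow> cod2 C y = v \<odot> cb \<Longrightarrow> \<iota> \<cdot> x = \<iota> \<cdot> y \<Longrightarrow> x = y"
  by (metis pi vassoc vidl iT pT)

lemma canc_p: "A2 x \<Longrightarrow> A2 y \<Longrightarrow> dom2 C x = v \<odot> cb \<Longrightarrow> dom2 C y = v \<odot> cb \<Longrightarrow> x \<cdot> \<pi> = y \<cdot> \<pi> \<Longrightarrow> x = y"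
  by (metis pi vassoc vidr iT pT)

end

locale clift = wl0 +
  fixes \<psi>
  assumes ml: "ml c \<psi>"
  and ip: "\<iota> \<cdot> \<pi> = ew c \<psi>"
  and lc: "lam \<lhd> cb = \<pi> \<cdot> ((c \<rhd> lam) \<cdot> ((\<psi> \<lhd> v) \<cdot> (t \<rhd> \<iota>)))"
begin

lemmas h = mlD[OF ml] ewT[OF ml]
lemma psT[simp]: "A2 \<psi>" "dom2 C \<psi> = t \<odot> c" "cod2 C \<psi> = c \<odot> t" using h by auto
lemma ewcT[simp]: "A2 (ew c \<psi>)" "dom2 C (ew c \<psi>) = c \<odot> v" "cod2 C (ew c \<psi>) = c \<odot> v" using h by auto

lemma ewi: "ew c \<psi> \<cdot> \<iota> = \<iota>"
proof -
  have "ew c \<psi> \<cdot> \<iota> = \<iota> \<cdot> (\<pi> \<cdot> \<iota>)" by (simp flip: ip)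
  then show ?thesis by (simp add: pi)
qed

lemma pew: "\<pi> \<cdot> ew c \<psi> = \<pi>"
proof -
  have "\<pi> \<cdot> ew c \<psi> = (\<pi> \<cdot> \<iota>) \<cdot> \<pi>" by (simp flip: ip)
  then show ?thesis by (simp add: pi)
qed

lemma IL: "\<iota> \<cdot> ((lam \<lhd> cb) \<cdot> (t \<rhd> \<pi>)) = (c \<rhd> lam) \<cdot> (\<psi> \<lhd> v)"
proof -
  have tip: "(t \<rhd> \<iota>) \<cdot> (t \<rhd> \<pi>) = t \<rhd> ew c \<psi>"
    using arg_cong[OF ip, of "wl C t"] by simp
  have "\<iota> \<cdot> ((lam \<lhd> cb) \<cdot> (t \<rhd> \<pi>)) = ew c \<psi> \<cdot> ((c \<rhd> lam) \<cdot> ((\<psi> \<lhd> v) \<cdot> (t \<rhd> ew c \<psi>)))"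
    by (simp add: lc tl2[OF ip] tip)
  also have "\<dots> = (c \<rhd> lam) \<cdot> (\<psi> \<lhd> v)" by (simp add: K[OF ml] K'[OF ml])
  finally show ?thesis .
qed

lemma IL2: "\<iota> \<cdot> (lam \<lhd> cb) = (c \<rhd> lam) \<cdot> ((\<psi> \<lhd> v) \<cdot> (t \<rhd> \<iota>))"
proof -
  have tpi: "(t \<rhd> \<pi>) \<cdot> (t \<rhd> \<iota>) = id2 C (t \<odot> v \<odot> cb)"
    using arg_cong[OF pi, of "wl C t"] by simp
  have "(c \<rhd> lam) \<cdot> ((\<psi> \<lhd> v) \<cdot> (t \<rhd> \<iota>)) = \<iota> \<cdot> ((lam \<lhd> cb) \<cdot> ((t \<rhd> \<pi>) \<cdot> (t \<rhd> \<iota>)))"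
    by (simp add: tl3[OF IL])
  then show ?thesis by (simp add: tpi)
qed


abbreviation "ps2 \<equiv> (c \<rhd> \<psi>) \<cdot> (\<psi> \<lhd> c)"

lemma ml2: "ml (c \<odot> c) ps2" using M2[OF ml] .
lemma ew2T[simp]: "A2 (ew (c \<odot> c) ps2)" "dom2 C (ew (c \<odot> c) ps2) = c \<odot> c \<odot> v" "cod2 C (ew (c \<odot> c) ps2) = c \<odot> c \<odot> v"
  using ewT[OF ml2] by auto

lemma LCC: "lam \<lhd> (cb \<odot> cb) = pcc \<cdot> (((c \<odot> c) \<rhd> lam) \<cdot> ((ps2 \<lhd> v) \<cdot> (t \<rhd> icc)))"
proof -
  have l2: "(c \<rhd> lam) \<lhd> cb = (c \<rhd> \<pi>) \<cdot> (((c \<odot> c) \<rhd> lam) \<cdot> (((c \<rhd> \<psi>) \<lhd> v) \<cdot> ((c \<odot> t) \<rhd> \<iota>)))"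
    using arg_cong[OF lc, of "wl C c"] by simp
  have n: "((c \<odot> t) \<rhd> \<iota>) \<cdot> (\<psi> \<lhd> (v \<odot> cb)) = (\<psi> \<lhd> (c \<odot> v)) \<cdot> ((t \<odot> c) \<rhd> \<iota>)"
    using nat1[of \<iota> \<psi>] by simp
  have "lam \<lhd> (cb \<odot> cb) = (lam \<lhd> cb) \<lhd> cb" by simp
  also have "\<dots> = (\<pi> \<cdot> ((c \<rhd> lam) \<cdot> ((\<psi> \<lhd> v) \<cdot> (t \<rhd> \<iota>)))) \<lhd> cb" by (simp only: lc)
  also have "\<dots> = (\<pi> \<lhd> cb) \<cdot> (((c \<rhd> lam) \<lhd> cb) \<cdot> ((\<psi> \<lhd> (v \<odot> cb)) \<cdot> ((t \<rhd> \<iota>) \<lhd> cb)))" by simp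
  also have "\<dots> = pcc \<cdot> (((c \<odot> c) \<rhd> lam) \<cdot> ((ps2 \<lhd> v) \<cdot> (t \<rhd> icc)))"
    by (simp add: l2 tl2[OF n])
  finally show ?thesis .
qed

lemma ECC: "icc \<cdot> pcc = ew (c \<odot> c) ps2"
proof -
  have ILc: "(c \<rhd> \<iota>) \<cdot> (((c \<rhd> lam) \<lhd> cb) \<cdot> ((c \<odot> t) \<rhd> \<pi>)) = ((c \<odot> c) \<rhd> lam) \<cdot> ((c \<rhd> \<psi>) \<lhd> v)"
    using arg_cong[OF IL, of "wl C c"] by simp
  have n1: "(eta \<lhd> (c \<odot> v \<odot> cb)) \<cdot> (c \<rhd> \<pi>) = ((t \<odot> c) \<rhd> \<pi>) \<cdot> (eta \<lhd> (c \<odot> c \<odot> v))"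
    using nat1[of "c \<rhd> \<pi>" eta] by simp
  have n2: "(\<psi> \<lhd> (v \<odot> cb)) \<cdot> ((t \<odot> c) \<rhd> \<pi>) = ((c \<odot> t) \<rhd> \<pi>) \<cdot> (\<psi> \<lhd> (c \<odot> v))"
    using nat1[of \<pi> \<psi>] by simp
  have e: "(\<iota> \<lhd> cb) \<cdot> (\<pi> \<lhd> cb) = ew c \<psi> \<lhd> cb" using arg_cong[OF ip, of "\<lambda>x. x \<lhd> cb"] by simp
  have "icc \<cdot> pcc = (c \<rhd> \<iota>) \<cdot> ((ew c \<psi> \<lhd> cb) \<cdot> (c \<rhd> \<pi>))" by (simp add: tl2[OF e])
  also have "\<dots> = (c \<rhd> \<iota>) \<cdot> (((c \<rhd> lam) \<lhd> cb) \<cdot> ((\<psi> \<lhd> (v \<odot> cb)) \<cdot> ((eta \<lhd> (c \<odot> v \<odot> cb)) \<cdot> (c \<rhd> \<pi>))))"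
    unfolding ew_def by simp
  also have "\<dots> = ew (c \<odot> c) ps2"
    unfolding ew_def by (simp add: n1 tl2[OF n2] tl3[OF ILc])
  finally show ?thesis .
qed

end


context wl0 begin

abbreviation "icc3 \<equiv> ((c \<odot> c) \<rhd> \<iota>) \<cdot> (((c \<rhd> \<iota>) \<lhd> cb) \<cdot> (\<iota> \<lhd> (cb \<odot> cb)))"
abbreviation "pcc3 \<equiv> (\<pi> \<lhd> (cb \<odot> cb)) \<cdot> (((c \<rhd> \<pi>) \<lhd> cb) \<cdot> ((c \<odot> c) \<rhd> \<pi>))"

lemma picc3: "pcc3 \<cdot> icc3 = id2 C (v \<odot> cb \<odot> cb \<odot> cb)"
proof -
  have a: "((c \<odot> c) \<rhd> \<pi>) \<cdot> ((c \<odot> c) \<rhd> \<iota>) = id2 C (c \<odot> c \<odot> v \<odot> cb)" using arg_cong[OF pi, of "wl C (c \<odot> c)"] by simp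
  have b: "((c \<rhd> \<pi>) \<lhd> cb) \<cdot> ((c \<rhd> \<iota>) \<lhd> cb) = id2 C (c \<odot> v \<odot> cb \<odot> cb)"
    using arg_cong[OF pi, of "\<lambda>x. (c \<rhd> x) \<lhd> cb"] by simp
  have d: "(\<pi> \<lhd> (cb \<odot> cb)) \<cdot> (\<iota> \<lhd> (cb \<odot> cb)) = id2 C (v \<odot> cb \<odot> cb \<odot> cb)" using arg_cong[OF pi, of "\<lambda>x. x \<lhd> (cb \<odot> cb)"] by simp
  show ?thesis by (simp add: tl2[OF a] tl2[OF b] d)
qed

lemma canc3: "A2 x \<Longrightarrow> A2 y \<Longrightarrow> cod2 C x = v \<odot> cb \<odot> cb \<odot> cb \<Longrightarrow> cod2 C y = v \<odot> cb \<odot> cb \<odot> cb \<Longrightarrow> icc3 \<cdot> x = icc3 \<cdot> y \<Longrightarrow> x = y"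
proof -
  assume h: "A2 x" "A2 y" "cod2 C x = v \<odot> cb \<odot> cb \<odot> cb" "cod2 C y = v \<odot> cb \<odot> cb \<odot> cb" "icc3 \<cdot> x = icc3 \<cdot> y"
  have "x = (pcc3 \<cdot> icc3) \<cdot> x" using h by (simp add: picc3)
  also have "\<dots> = pcc3 \<cdot> (icc3 \<cdot> x)" using h by simp
  also have "\<dots> = pcc3 \<cdot> (icc3 \<cdot> y)" using h by simp
  also have "\<dots> = (pcc3 \<cdot> icc3) \<cdot> y" using h by simp
  also have "\<dots> = y" using h by (simp add: picc3)
  finally show ?thesis .
qed

lemma canc3p: "A2 x \<Longrightarrow> A2 y \<Longrightarrow> dom2 C x = v \<odot> cb \<Longrightarrow> dom2 C y = v \<odot> cb \<Longrightarrow> x \<cdot> \<pi> = y \<cdot> \<pi> \<Longrightarrow> x = y"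
  by (rule canc_p)

lemma coassoc_v: "(dl \<lhd> (c \<odot> v)) \<cdot> (dl \<lhd> v) = ((c \<rhd> dl) \<lhd> v) \<cdot> (dl \<lhd> v)"
  using arg_cong[OF dl_coassoc, of "\<lambda>x. x \<lhd> v"] by simp

lemma comonad_iota:
  assumes dbT: "A2 db" "dom2 C db = cb" "cod2 C db = cb \<odot> cb"
  and ebT: "A2 eb" "dom2 C eb = cb" "cod2 C eb = id1 C J"
  and idb: "icc \<cdot> (v \<rhd> db) = (dl \<lhd> v) \<cdot> \<iota>"
  and ieb: "v \<rhd> eb = (ec \<lhd> v) \<cdot> \<iota>"
  shows "is_comonad C J cb db eb"
proof -
  note [simp] = dbT ebT
  have idb': "(c \<rhd> \<iota>) \<cdot> ((\<iota> \<lhd> cb) \<cdot> (v \<rhd> db)) = (dl \<lhd> v) \<cdot> \<iota>" using idb by simp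
  have i1: "((c \<rhd> \<iota>) \<lhd> cb) \<cdot> ((\<iota> \<lhd> (cb \<odot> cb)) \<cdot> ((v \<rhd> db) \<lhd> cb)) = (dl \<lhd> (v \<odot> cb)) \<cdot> (\<iota> \<lhd> cb)"
    using arg_cong[OF idb', of "\<lambda>x. x \<lhd> cb"] by simp
  have i2: "((c \<odot> c) \<rhd> \<iota>) \<cdot> (((c \<rhd> \<iota>) \<lhd> cb) \<cdot> ((c \<odot> v) \<rhd> db)) = ((c \<rhd> dl) \<lhd> v) \<cdot> (c \<rhd> \<iota>)"
    using arg_cong[OF idb', of "wl C c"] by simp
  have n1: "((c \<odot> c) \<rhd> \<iota>) \<cdot> (dl \<lhd> (v \<odot> cb)) = (dl \<lhd> (c \<odot> v)) \<cdot> (c \<rhd> \<iota>)"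
    using nat1[of \<iota> dl] by simp
  have n2: "(\<iota> \<lhd> (cb \<odot> cb)) \<cdot> ((v \<odot> cb) \<rhd> db) = ((c \<odot> v) \<rhd> db) \<cdot> (\<iota> \<lhd> cb)"
    using nat1[of db \<iota>] by simp
  have ca: "(db \<lhd> cb) \<cdot> db = (cb \<rhd> db) \<cdot> db"
  proof (rule faithful)
    show "v \<rhd> ((db \<lhd> cb) \<cdot> db) = v \<rhd> ((cb \<rhd> db) \<cdot> db)"
    proof (rule canc3)
      have "icc3 \<cdot> (v \<rhd> ((db \<lhd> cb) \<cdot> db)) = (dl \<lhd> (c \<odot> v)) \<cdot> ((dl \<lhd> v) \<cdot> \<iota>)"
        by (simp add: tl3[OF i1] tl2[OF n1] idb')
      also have "\<dots> = ((c \<rhd> dl) \<lhd> v) \<cdot> ((dl \<lhd> v) \<cdot> \<iota>)" by (simp add: tl2[OF coassoc_v])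
      also have "\<dots> = icc3 \<cdot> (v \<rhd> ((cb \<rhd> db) \<cdot> db))"
        by (simp add: tl2[OF n2] tl3[OF i2] idb')
      finally show "icc3 \<cdot> (v \<rhd> ((db \<lhd> cb) \<cdot> db)) = icc3 \<cdot> (v \<rhd> ((cb \<rhd> db) \<cdot> db))" .
    qed simp_all
  qed simp_all
  have e1: "\<iota> \<cdot> ((v \<rhd> eb) \<lhd> cb) = (ec \<lhd> (c \<odot> v)) \<cdot> ((c \<rhd> \<iota>) \<cdot> (\<iota> \<lhd> cb))"
  proof -
    have n: "\<iota> \<cdot> (ec \<lhd> (v \<odot> cb)) = (ec \<lhd> (c \<odot> v)) \<cdot> (c \<rhd> \<iota>)" using nat1[of \<iota> ec] by simp
    show ?thesis by (simp add: ieb tl2[OF n])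
  qed
  have cl: "(eb \<lhd> cb) \<cdot> db = id2 C cb"
  proof (rule faithful)
    show "v \<rhd> ((eb \<lhd> cb) \<cdot> db) = v \<rhd> id2 C cb"
    proof (rule canc_i)
      have "\<iota> \<cdot> (v \<rhd> ((eb \<lhd> cb) \<cdot> db)) = (ec \<lhd> (c \<odot> v)) \<cdot> ((dl \<lhd> v) \<cdot> \<iota>)"
        by (simp add: tl2[OF e1] idb')
      also have "\<dots> = ((ec \<lhd> c) \<cdot> dl) \<lhd> v \<cdot> \<iota>" by simp
      also have "\<dots> = \<iota> \<cdot> (v \<rhd> id2 C cb)" by (simp add: ec_l)
      finally show "\<iota> \<cdot> (v \<rhd> ((eb \<lhd> cb) \<cdot> db)) = \<iota> \<cdot> (v \<rhd> id2 C cb)" .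
    qed simp_all
  qed simp_all
  have e2: "\<iota> \<cdot> ((v \<odot> cb) \<rhd> eb) = ((c \<rhd> ec) \<lhd> v) \<cdot> ((c \<rhd> \<iota>) \<cdot> (\<iota> \<lhd> cb))"
  proof -
    have n: "\<iota> \<cdot> ((v \<odot> cb) \<rhd> eb) = ((c \<odot> v) \<rhd> eb) \<cdot> (\<iota> \<lhd> cb)" using nat1[of eb \<iota>] by simp
    have m: "(c \<odot> v) \<rhd> eb = ((c \<rhd> ec) \<lhd> v) \<cdot> (c \<rhd> \<iota>)" using arg_cong[OF ieb, of "wl C c"] by simp
    show ?thesis by (simp add: n m)
  qed
  have cr: "(cb \<rhd> eb) \<cdot> db = id2 C cb"
  proof (rule faithful)
    show "v \<rhd> ((cb \<rhd> eb) \<cdot> db) = v \<rhd> id2 C cb"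
    proof (rule canc_i)
      have "\<iota> \<cdot> (v \<rhd> ((cb \<rhd> eb) \<cdot> db)) = ((c \<rhd> ec) \<lhd> v) \<cdot> ((dl \<lhd> v) \<cdot> \<iota>)"
        by (simp add: tl2[OF e2] idb')
      also have "\<dots> = ((c \<rhd> ec) \<cdot> dl) \<lhd> v \<cdot> \<iota>" by simp
      also have "\<dots> = \<iota> \<cdot> (v \<rhd> id2 C cb)" by (simp add: ec_r)
      finally show "\<iota> \<cdot> (v \<rhd> ((cb \<rhd> eb) \<cdot> db)) = \<iota> \<cdot> (v \<rhd> id2 C cb)" .
    qed simp_all
  qed simp_all
  show ?thesis unfolding is_comonad_def hom1_def hom2_def using ca cl cr by simp
qed


lemma comonad_pi:
  assumes dbT: "A2 db" "dom2 C db = cb" "cod2 C db = cb \<odot> cb"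
  and ebT: "A2 eb" "dom2 C eb = cb" "cod2 C eb = id1 C J"
  and pdb: "(v \<rhd> db) \<cdot> \<pi> = pcc \<cdot> (dl \<lhd> v)"
  and peb: "(v \<rhd> eb) \<cdot> \<pi> = ec \<lhd> v"
  shows "is_comonad C J cb db eb"
proof -
  note [simp] = dbT ebT
  have pdb': "(v \<rhd> db) \<cdot> \<pi> = (\<pi> \<lhd> cb) \<cdot> ((c \<rhd> \<pi>) \<cdot> (dl \<lhd> v))" using pdb by simp
  have p1: "((v \<rhd> db) \<lhd> cb) \<cdot> (\<pi> \<lhd> cb) = (\<pi> \<lhd> (cb \<odot> cb)) \<cdot> (((c \<rhd> \<pi>) \<lhd> cb) \<cdot> (dl \<lhd> (v \<odot> cb)))"
    using arg_cong[OF pdb', of "\<lambda>x. x \<lhd> cb"] by simp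
  have p2: "((c \<odot> v) \<rhd> db) \<cdot> (c \<rhd> \<pi>) = ((c \<rhd> \<pi>) \<lhd> cb) \<cdot> (((c \<odot> c) \<rhd> \<pi>) \<cdot> ((c \<rhd> dl) \<lhd> v))"
    using arg_cong[OF pdb', of "wl C c"] by simp
  have n1: "(dl \<lhd> (v \<odot> cb)) \<cdot> (c \<rhd> \<pi>) = ((c \<odot> c) \<rhd> \<pi>) \<cdot> (dl \<lhd> (c \<odot> v))"
    using nat1[of \<pi> dl] by simp
  have n2: "((v \<odot> cb) \<rhd> db) \<cdot> (\<pi> \<lhd> cb) = (\<pi> \<lhd> (cb \<odot> cb)) \<cdot> ((c \<odot> v) \<rhd> db)"
    using nat1[of db \<pi>] by simp
  have ca: "(db \<lhd> cb) \<cdot> db = (cb \<rhd> db) \<cdot> db"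
  proof (rule faithful)
    show "v \<rhd> ((db \<lhd> cb) \<cdot> db) = v \<rhd> ((cb \<rhd> db) \<cdot> db)"
    proof (rule canc_p)
      have "(v \<rhd> ((db \<lhd> cb) \<cdot> db)) \<cdot> \<pi> = pcc3 \<cdot> ((dl \<lhd> (c \<odot> v)) \<cdot> (dl \<lhd> v))"
        by (simp add: pdb' tl2[OF pdb'] tl2[OF p1] tl2[OF n1])
      also have "\<dots> = pcc3 \<cdot> (((c \<rhd> dl) \<lhd> v) \<cdot> (dl \<lhd> v))" by (simp add: coassoc_v)
      also have "\<dots> = (v \<rhd> ((cb \<rhd> db) \<cdot> db)) \<cdot> \<pi>"
        by (simp add: pdb' tl2[OF pdb'] tl2[OF n2] tl2[OF p2])
      finally show "(v \<rhd> ((db \<lhd> cb) \<cdot> db)) \<cdot> \<pi> = (v \<rhd> ((cb \<rhd> db) \<cdot> db)) \<cdot> \<pi>" .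
    qed simp_all
  qed simp_all
  have peb1: "((v \<rhd> eb) \<lhd> cb) \<cdot> (\<pi> \<lhd> cb) = ec \<lhd> (v \<odot> cb)"
    using arg_cong[OF peb, of "\<lambda>x. x \<lhd> cb"] by simp
  have peb2: "((c \<odot> v) \<rhd> eb) \<cdot> (c \<rhd> \<pi>) = (c \<rhd> ec) \<lhd> v"
    using arg_cong[OF peb, of "wl C c"] by simp
  have n3: "(ec \<lhd> (v \<odot> cb)) \<cdot> (c \<rhd> \<pi>) = \<pi> \<cdot> (ec \<lhd> (c \<odot> v))"
    using nat1[of \<pi> ec] by simp
  have n4: "((v \<odot> cb) \<rhd> eb) \<cdot> (\<pi> \<lhd> cb) = \<pi> \<cdot> ((c \<odot> v) \<rhd> eb)"
    using nat1[of eb \<pi>] by simp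
  have cl: "(eb \<lhd> cb) \<cdot> db = id2 C cb"
  proof (rule faithful)
    show "v \<rhd> ((eb \<lhd> cb) \<cdot> db) = v \<rhd> id2 C cb"
    proof (rule canc_p)
      have "(v \<rhd> ((eb \<lhd> cb) \<cdot> db)) \<cdot> \<pi> = \<pi> \<cdot> (((ec \<lhd> c) \<cdot> dl) \<lhd> v)"
        by (simp add: pdb' tl2[OF pdb'] tl2[OF peb1] tl2[OF n3])
      also have "\<dots> = (v \<rhd> id2 C cb) \<cdot> \<pi>" by (simp add: ec_l)
      finally show "(v \<rhd> ((eb \<lhd> cb) \<cdot> db)) \<cdot> \<pi> = (v \<rhd> id2 C cb) \<cdot> \<pi>" .
    qed simp_all
  qed simp_all
  have cr: "(cb \<rhd> eb) \<cdot> db = id2 C cb"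
  proof (rule faithful)
    show "v \<rhd> ((cb \<rhd> eb) \<cdot> db) = v \<rhd> id2 C cb"
    proof (rule canc_p)
      have "(v \<rhd> ((cb \<rhd> eb) \<cdot> db)) \<cdot> \<pi> = \<pi> \<cdot> (((c \<rhd> ec) \<cdot> dl) \<lhd> v)"
        by (simp add: pdb' tl2[OF pdb'] tl2[OF n4] tl2[OF peb2])
      also have "\<dots> = (v \<rhd> id2 C cb) \<cdot> \<pi>" by (simp add: ec_r)
      finally show "(v \<rhd> ((cb \<rhd> eb) \<cdot> db)) \<cdot> \<pi> = (v \<rhd> id2 C cb) \<cdot> \<pi>" .
    qed simp_all
  qed simp_all
  show ?thesis unfolding is_comonad_def hom1_def hom2_def using ca cl cr by simp
qed

end


context clift begin

lemma nd: "((c \<odot> c) \<rhd> lam) \<cdot> (dl \<lhd> (t \<odot> v)) = (dl \<lhd> v) \<cdot> (c \<rhd> lam)"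
  using nat1[of lam dl] by simp
lemma ne: "lam \<cdot> (ec \<lhd> (t \<odot> v)) = (ec \<lhd> v) \<cdot> (c \<rhd> lam)"
  using nat1[of lam ec] by simp

lemma D1v: assumes D1n: "(dl \<lhd> t) \<cdot> \<psi> = ((c \<odot> c) \<rhd> mu) \<cdot> (((c \<rhd> \<psi>) \<lhd> t) \<cdot> ((\<psi> \<lhd> (c \<odot> t)) \<cdot> (((t \<rhd> dl) \<lhd> t) \<cdot> ((t \<rhd> \<psi>) \<cdot> ((t \<rhd> eta) \<lhd> c)))))"
  shows "(dl \<lhd> v) \<cdot> ((c \<rhd> lam) \<cdot> (\<psi> \<lhd> v)) = ((c \<odot> c) \<rhd> lam) \<cdot> (((c \<rhd> \<psi>) \<lhd> v) \<cdot> ((\<psi> \<lhd> (c \<odot> v)) \<cdot> (((t \<rhd> dl) \<lhd> v) \<cdot> (t \<rhd> ew c \<psi>))))"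
proof -
  have vf: "((c \<odot> c) \<rhd> lam) \<cdot> ((((c \<odot> c) \<rhd> mu) \<cdot> ((ps2 \<lhd> t) \<cdot> (t \<rhd> ((dl \<lhd> t) \<cdot> (\<psi> \<cdot> (eta \<lhd> c)))))) \<lhd> v) =
    ((c \<odot> c) \<rhd> lam) \<cdot> ((ps2 \<lhd> v) \<cdot> (t \<rhd> (((c \<odot> c) \<rhd> lam) \<cdot> (((dl \<lhd> t) \<cdot> (\<psi> \<cdot> (eta \<lhd> c))) \<lhd> v))))"
    by (rule VF) simp_all
  show ?thesis using vf unfolding ew_def by (simp add: D1n[symmetric] tl2[OF nd])
qed

lemma E1v: assumes E1n: "(ec \<lhd> t) \<cdot> \<psi> = mu \<cdot> (((t \<rhd> ec) \<lhd> t) \<cdot> ((t \<rhd> \<psi>) \<cdot> ((t \<rhd> eta) \<lhd> c)))"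
  shows "(ec \<lhd> v) \<cdot> ((c \<rhd> lam) \<cdot> (\<psi> \<lhd> v)) = lam \<cdot> (((t \<rhd> ec) \<lhd> v) \<cdot> (t \<rhd> ew c \<psi>))"
proof -
  have vf: "(id1 C k \<rhd> lam) \<cdot> (((id1 C k \<rhd> mu) \<cdot> ((id2 C t \<lhd> t) \<cdot> (t \<rhd> ((ec \<lhd> t) \<cdot> (\<psi> \<cdot> (eta \<lhd> c)))))) \<lhd> v) =
    (id1 C k \<rhd> lam) \<cdot> ((id2 C t \<lhd> v) \<cdot> (t \<rhd> ((id1 C k \<rhd> lam) \<cdot> (((ec \<lhd> t) \<cdot> (\<psi> \<cdot> (eta \<lhd> c))) \<lhd> v))))"
    by (rule VF) simp_all
  show ?thesis using vf unfolding ew_def by (simp add: E1n[symmetric] tl2[OF ne])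
qed

lemma D2v: assumes D2n: "(c \<rhd> \<psi>) \<cdot> ((\<psi> \<lhd> c) \<cdot> (t \<rhd> dl)) = ((c \<odot> c) \<rhd> mu) \<cdot> (((c \<rhd> \<psi>) \<lhd> t) \<cdot> ((\<psi> \<lhd> (c \<odot> t)) \<cdot> ((eta \<lhd> (c \<odot> c \<odot> t)) \<cdot> ((dl \<lhd> t) \<cdot> \<psi>))))"
  shows "((c \<odot> c) \<rhd> lam) \<cdot> (((c \<rhd> \<psi>) \<lhd> v) \<cdot> ((\<psi> \<lhd> (c \<odot> v)) \<cdot> ((t \<rhd> dl) \<lhd> v))) = ew (c \<odot> c) ps2 \<cdot> ((dl \<lhd> v) \<cdot> ((c \<rhd> lam) \<cdot> (\<psi> \<lhd> v)))"
proof -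
  have vf: "((c \<odot> c) \<rhd> lam) \<cdot> ((((c \<odot> c) \<rhd> mu) \<cdot> ((ps2 \<lhd> t) \<cdot> ((eta \<lhd> ((c \<odot> c) \<odot> t)) \<cdot> ((dl \<lhd> t) \<cdot> \<psi>)))) \<lhd> v) =
    ew (c \<odot> c) ps2 \<cdot> (((c \<odot> c) \<rhd> lam) \<cdot> (((dl \<lhd> t) \<cdot> \<psi>) \<lhd> v))"
    by (rule VF2) simp_all
  show ?thesis using vf by (simp add: D2n[symmetric] tl2[OF nd])
qed

lemma E2v: assumes E2n: "t \<rhd> ec = (ec \<lhd> t) \<cdot> \<psi>"
  shows "(ec \<lhd> v) \<cdot> ((c \<rhd> lam) \<cdot> (\<psi> \<lhd> v)) = lam \<cdot> ((t \<rhd> ec) \<lhd> v)"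
proof -
  have "lam \<cdot> ((t \<rhd> ec) \<lhd> v) = lam \<cdot> (((ec \<lhd> t) \<cdot> \<psi>) \<lhd> v)" by (simp only: E2n)
  then show ?thesis by (simp add: tl2[OF ne])
qed


lemma twi: "(t \<rhd> ew c \<psi>) \<cdot> (t \<rhd> \<iota>) = t \<rhd> \<iota>"
  using arg_cong[OF ewi, of "wl C t"] by simp

lemma pce: "(\<pi> \<lhd> cb) \<cdot> ((c \<rhd> \<pi>) \<cdot> ew (c \<odot> c) ps2) = (\<pi> \<lhd> cb) \<cdot> (c \<rhd> \<pi>)"
proof -
  have "pcc \<cdot> ew (c \<odot> c) ps2 = (pcc \<cdot> icc) \<cdot> pcc" by (simp flip: ECC)
  then show ?thesis by (simp add: picc)
qed

lemma K2: "((c \<odot> c) \<rhd> lam) \<cdot> (((c \<rhd> \<psi>) \<lhd> v) \<cdot> ((\<psi> \<lhd> (c \<odot> v)) \<cdot> (t \<rhd> ew (c \<odot> c) ps2))) =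
   ((c \<odot> c) \<rhd> lam) \<cdot> (((c \<rhd> \<psi>) \<lhd> v) \<cdot> (\<psi> \<lhd> (c \<odot> v)))"
  using K[OF ml2] by simp

lemma tECC: "((t \<odot> c) \<rhd> \<iota>) \<cdot> (((t \<rhd> \<iota>) \<lhd> cb) \<cdot> (((t \<rhd> \<pi>) \<lhd> cb) \<cdot> ((t \<odot> c) \<rhd> \<pi>))) = t \<rhd> ew (c \<odot> c) ps2"
  using arg_cong[OF ECC, of "wl C t"] by simp

definition "Key1 \<longleftrightarrow> pcc \<cdot> ((dl \<lhd> v) \<cdot> ((c \<rhd> lam) \<cdot> ((\<psi> \<lhd> v) \<cdot> (t \<rhd> \<iota>)))) =
   pcc \<cdot> (((c \<odot> c) \<rhd> lam) \<cdot> (((c \<rhd> \<psi>) \<lhd> v) \<cdot> ((\<psi> \<lhd> (c \<odot> v)) \<cdot> (((t \<rhd> dl) \<lhd> v) \<cdot> (t \<rhd> \<iota>)))))"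
definition "KeyE \<longleftrightarrow> (ec \<lhd> v) \<cdot> ((c \<rhd> lam) \<cdot> ((\<psi> \<lhd> v) \<cdot> (t \<rhd> \<iota>))) = lam \<cdot> (((t \<rhd> ec) \<lhd> v) \<cdot> (t \<rhd> \<iota>))"

lemma Key1_1: assumes "(dl \<lhd> v) \<cdot> ((c \<rhd> lam) \<cdot> (\<psi> \<lhd> v)) = ((c \<odot> c) \<rhd> lam) \<cdot> (((c \<rhd> \<psi>) \<lhd> v) \<cdot> ((\<psi> \<lhd> (c \<odot> v)) \<cdot> (((t \<rhd> dl) \<lhd> v) \<cdot> (t \<rhd> ew c \<psi>))))"
  shows Key1
  unfolding Key1_def by (simp add: tl3[OF assms] twi)

lemma Key1_2: assumes "((c \<odot> c) \<rhd> lam) \<cdot> (((c \<rhd> \<psi>) \<lhd> v) \<cdot> ((\<psi> \<lhd> (c \<odot> v)) \<cdot> ((t \<rhd> dl) \<lhd> v))) = ew (c \<odot> c) ps2 \<cdot> ((dl \<lhd> v) \<cdot> ((c \<rhd> lam) \<cdot> (\<psi> \<lhd> v)))"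
  shows Key1
  unfolding Key1_def by (simp add: tl4[OF assms] tl3[OF pce])

lemma KeyE_1: assumes "(ec \<lhd> v) \<cdot> ((c \<rhd> lam) \<cdot> (\<psi> \<lhd> v)) = lam \<cdot> (((t \<rhd> ec) \<lhd> v) \<cdot> (t \<rhd> ew c \<psi>))"
  shows KeyE
  unfolding KeyE_def by (simp add: tl3[OF assms] twi)

lemma KeyE_2: assumes "(ec \<lhd> v) \<cdot> ((c \<rhd> lam) \<cdot> (\<psi> \<lhd> v)) = lam \<cdot> ((t \<rhd> ec) \<lhd> v)"
  shows KeyE
  unfolding KeyE_def by (simp add: tl3[OF assms])

lemma build: assumes Key1 KeyE
  shows "\<exists>db eb. A2 db \<and> dom2 C db = cb \<and> cod2 C db = cb \<odot> cb \<and> A2 eb \<and> dom2 C eb = cb \<and> cod2 C eb = id1 C J \<and>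
     v \<rhd> db = pcc \<cdot> ((dl \<lhd> v) \<cdot> \<iota>) \<and> v \<rhd> eb = (ec \<lhd> v) \<cdot> \<iota>"
proof -
  have IL2': "\<iota> \<cdot> (lam \<lhd> cb) = (c \<rhd> lam) \<cdot> ((\<psi> \<lhd> v) \<cdot> (t \<rhd> \<iota>))" by (rule IL2)
  have cd: "(pcc \<cdot> ((dl \<lhd> v) \<cdot> \<iota>)) \<cdot> (lam \<lhd> cb) = (lam \<lhd> (cb \<odot> cb)) \<cdot> (t \<rhd> (pcc \<cdot> ((dl \<lhd> v) \<cdot> \<iota>)))"
  proof -
    have "(pcc \<cdot> ((dl \<lhd> v) \<cdot> \<iota>)) \<cdot> (lam \<lhd> cb) = pcc \<cdot> ((dl \<lhd> v) \<cdot> ((c \<rhd> lam) \<cdot> ((\<psi> \<lhd> v) \<cdot> (t \<rhd> \<iota>))))"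
      by (simp add: IL2')
    also have "\<dots> = pcc \<cdot> (((c \<odot> c) \<rhd> lam) \<cdot> (((c \<rhd> \<psi>) \<lhd> v) \<cdot> ((\<psi> \<lhd> (c \<odot> v)) \<cdot> (((t \<rhd> dl) \<lhd> v) \<cdot> (t \<rhd> \<iota>)))))"
      using assms(1) unfolding Key1_def .
    also have "\<dots> = (lam \<lhd> (cb \<odot> cb)) \<cdot> (t \<rhd> (pcc \<cdot> ((dl \<lhd> v) \<cdot> \<iota>)))"
      by (simp add: LCC tl4[OF tECC] tl4[OF K2])
    finally show ?thesis .
  qed
  have ce: "((ec \<lhd> v) \<cdot> \<iota>) \<cdot> (lam \<lhd> cb) = (lam \<lhd> id1 C J) \<cdot> (t \<rhd> ((ec \<lhd> v) \<cdot> \<iota>))"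
    using assms(2) unfolding KeyE_def by (simp add: IL2')
  obtain db where db: "A2 db" "dom2 C db = cb" "cod2 C db = cb \<odot> cb" "v \<rhd> db = pcc \<cdot> ((dl \<lhd> v) \<cdot> \<iota>)"
    using lift2[of cb "cb \<odot> cb" "pcc \<cdot> ((dl \<lhd> v) \<cdot> \<iota>)"] cd by auto
  obtain eb where eb: "A2 eb" "dom2 C eb = cb" "cod2 C eb = id1 C J" "v \<rhd> eb = (ec \<lhd> v) \<cdot> \<iota>"
    using lift2[of cb "id1 C J" "(ec \<lhd> v) \<cdot> \<iota>"] ce by auto
  show ?thesis using db eb by blast
qed


lemma ECCn: "(c \<rhd> \<iota>) \<cdot> ((\<iota> \<lhd> cb) \<cdot> ((\<pi> \<lhd> cb) \<cdot> (c \<rhd> \<pi>))) = ew (c \<odot> c) ps2"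
  using ECC by simp

lemma IL1: assumes D: "(dl \<lhd> v) \<cdot> ((c \<rhd> lam) \<cdot> (\<psi> \<lhd> v)) = ((c \<odot> c) \<rhd> lam) \<cdot> (((c \<rhd> \<psi>) \<lhd> v) \<cdot> ((\<psi> \<lhd> (c \<odot> v)) \<cdot> (((t \<rhd> dl) \<lhd> v) \<cdot> (t \<rhd> ew c \<psi>))))"
  and db: "v \<rhd> db = pcc \<cdot> ((dl \<lhd> v) \<cdot> \<iota>)"
  shows "icc \<cdot> (v \<rhd> db) = (dl \<lhd> v) \<cdot> \<iota>"
proof -
  have nX: "((t \<rhd> dl) \<lhd> v) \<cdot> ((t \<rhd> ew c \<psi>) \<cdot> (eta \<lhd> (c \<odot> v))) = (eta \<lhd> (c \<odot> c \<odot> v)) \<cdot> ((dl \<lhd> v) \<cdot> ew c \<psi>)"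
    using nat1[of "(dl \<lhd> v) \<cdot> ew c \<psi>" eta] by simp
  have "(dl \<lhd> v) \<cdot> ew c \<psi> = (dl \<lhd> v) \<cdot> ((c \<rhd> lam) \<cdot> ((\<psi> \<lhd> v) \<cdot> (eta \<lhd> (c \<odot> v))))"
    by (simp add: ew_def[of c \<psi>])
  also have "\<dots> = ((c \<odot> c) \<rhd> lam) \<cdot> (((c \<rhd> \<psi>) \<lhd> v) \<cdot> ((\<psi> \<lhd> (c \<odot> v)) \<cdot> ((eta \<lhd> (c \<odot> c \<odot> v)) \<cdot> ((dl \<lhd> v) \<cdot> ew c \<psi>))))"
    by (simp add: tl3[OF D] nX)
  also have "\<dots> = ew (c \<odot> c) ps2 \<cdot> ((dl \<lhd> v) \<cdot> ew c \<psi>)"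
    by (simp add: ew_def[of "c \<odot> c" ps2])
  finally have A1: "ew (c \<odot> c) ps2 \<cdot> ((dl \<lhd> v) \<cdot> ew c \<psi>) = (dl \<lhd> v) \<cdot> ew c \<psi>" by simp
  have "icc \<cdot> (v \<rhd> db) = ew (c \<odot> c) ps2 \<cdot> ((dl \<lhd> v) \<cdot> (ew c \<psi> \<cdot> \<iota>))"
    by (simp add: db tl4[OF ECCn] ewi)
  also have "\<dots> = (dl \<lhd> v) \<cdot> \<iota>" by (simp add: tl3[OF A1]) (simp add: ewi)
  finally show ?thesis .
qed

lemma PD: assumes D: "((c \<odot> c) \<rhd> lam) \<cdot> (((c \<rhd> \<psi>) \<lhd> v) \<cdot> ((\<psi> \<lhd> (c \<odot> v)) \<cdot> ((t \<rhd> dl) \<lhd> v))) = ew (c \<odot> c) ps2 \<cdot> ((dl \<lhd> v) \<cdot> ((c \<rhd> lam) \<cdot> (\<psi> \<lhd> v)))"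
  and db: "v \<rhd> db = pcc \<cdot> ((dl \<lhd> v) \<cdot> \<iota>)"
  shows "(v \<rhd> db) \<cdot> \<pi> = pcc \<cdot> (dl \<lhd> v)"
proof -
  have nd2: "((t \<rhd> dl) \<lhd> v) \<cdot> (eta \<lhd> (c \<odot> v)) = (eta \<lhd> (c \<odot> c \<odot> v)) \<cdot> (dl \<lhd> v)"
    using nat1[of "dl \<lhd> v" eta] by simp
  have "(v \<rhd> db) \<cdot> \<pi> = (\<pi> \<lhd> cb) \<cdot> ((c \<rhd> \<pi>) \<cdot> ((dl \<lhd> v) \<cdot> ew c \<psi>))"
    by (simp add: db ip)
  also have "\<dots> = (\<pi> \<lhd> cb) \<cdot> ((c \<rhd> \<pi>) \<cdot> (ew (c \<odot> c) ps2 \<cdot> ((dl \<lhd> v) \<cdot> ((c \<rhd> lam) \<cdot> ((\<psi> \<lhd> v) \<cdot> (eta \<lhd> (c \<odot> v)))))))"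
    by (simp add: tl3[OF pce] ew_def[of c \<psi>])
  also have "\<dots> = (\<pi> \<lhd> cb) \<cdot> ((c \<rhd> \<pi>) \<cdot> (((c \<odot> c) \<rhd> lam) \<cdot> (((c \<rhd> \<psi>) \<lhd> v) \<cdot> ((\<psi> \<lhd> (c \<odot> v)) \<cdot> (((t \<rhd> dl) \<lhd> v) \<cdot> (eta \<lhd> (c \<odot> v)))))))"
    by (simp add: tl4[OF D[symmetric]])
  also have "\<dots> = (\<pi> \<lhd> cb) \<cdot> ((c \<rhd> \<pi>) \<cdot> (ew (c \<odot> c) ps2 \<cdot> (dl \<lhd> v)))"
    by (simp add: nd2 ew_def[of "c \<odot> c" ps2])
  also have "\<dots> = pcc \<cdot> (dl \<lhd> v)" by (simp add: tl3[OF pce])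
  finally show ?thesis .
qed

lemma PE: assumes E: "(ec \<lhd> v) \<cdot> ((c \<rhd> lam) \<cdot> (\<psi> \<lhd> v)) = lam \<cdot> ((t \<rhd> ec) \<lhd> v)"
  and eb: "v \<rhd> eb = (ec \<lhd> v) \<cdot> \<iota>"
  shows "(v \<rhd> eb) \<cdot> \<pi> = ec \<lhd> v"
proof -
  have ne2: "((t \<rhd> ec) \<lhd> v) \<cdot> (eta \<lhd> (c \<odot> v)) = (eta \<lhd> v) \<cdot> (ec \<lhd> v)"
    using nat1[of "ec \<lhd> v" eta] by simp
  have "(v \<rhd> eb) \<cdot> \<pi> = (ec \<lhd> v) \<cdot> ((c \<rhd> lam) \<cdot> ((\<psi> \<lhd> v) \<cdot> (eta \<lhd> (c \<odot> v))))"
    by (simp add: eb ip ew_def)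
  also have "\<dots> = (lam \<cdot> (eta \<lhd> v)) \<cdot> (ec \<lhd> v)" by (simp add: tl3[OF E] ne2)
  also have "\<dots> = ec \<lhd> v" by (simp add: lam_unit)
  finally show ?thesis .
qed

end


context wl0 begin

definition psl where "psl = (\<iota> \<lhd> f) \<cdot> ((lam \<lhd> (cb \<odot> f)) \<cdot> (((t \<rhd> \<pi>) \<lhd> f) \<cdot> ((t \<odot> c) \<rhd> eta)))"

lemma pslT[simp]: "A2 psl" "dom2 C psl = t \<odot> c" "cod2 C psl = c \<odot> t" unfolding psl_def by simp_all

lemma S1: "(c \<rhd> lam) \<cdot> (psl \<lhd> v) = \<iota> \<cdot> ((lam \<lhd> cb) \<cdot> (t \<rhd> \<pi>))"
proof -
  have n1: "(c \<rhd> lam) \<cdot> (\<iota> \<lhd> (f \<odot> v)) = \<iota> \<cdot> ((v \<odot> cb) \<rhd> cu)" using nat1[of cu \<iota>] by simp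
  have n2: "((v \<odot> cb) \<rhd> cu) \<cdot> (lam \<lhd> (cb \<odot> f \<odot> v)) = (lam \<lhd> cb) \<cdot> ((t \<odot> v \<odot> cb) \<rhd> cu)"
    using nat1[of cu "lam \<lhd> cb"] by simp
  have n3: "((t \<odot> v \<odot> cb) \<rhd> cu) \<cdot> ((t \<rhd> \<pi>) \<lhd> (f \<odot> v)) = (t \<rhd> \<pi>) \<cdot> ((t \<odot> c) \<rhd> lam)"
    using nat1[of cu "t \<rhd> \<pi>"] by simp
  have u: "((t \<odot> c) \<rhd> lam) \<cdot> (((t \<odot> c) \<rhd> eta) \<lhd> v) = id2 C (t \<odot> c \<odot> v)"
    using arg_cong[OF lam_unit, of "wl C (t \<odot> c)"] by simp
  show ?thesis unfolding psl_def by (simp add: tl2[OF n1] tl2[OF n2] tl2[OF n3] u)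
qed


lemma pif: "(\<pi> \<lhd> f) \<cdot> (\<iota> \<lhd> f) = id2 C (v \<odot> cb \<odot> f)" using arg_cong[OF pi, of "\<lambda>x. x \<lhd> f"] by simp
lemma tpi: "(t \<rhd> \<pi>) \<cdot> (t \<rhd> \<iota>) = id2 C (t \<odot> v \<odot> cb)" using arg_cong[OF pi, of "wl C t"] by simp
lemma tpif: "((t \<rhd> \<pi>) \<lhd> f) \<cdot> ((t \<rhd> \<iota>) \<lhd> f) = id2 C (t \<odot> v \<odot> cb \<odot> f)" using arg_cong[OF pi, of "\<lambda>x. (t \<rhd> x) \<lhd> f"] by simp

lemma S1f: "(c \<rhd> mu) \<cdot> (psl \<lhd> t) = (\<iota> \<lhd> f) \<cdot> ((lam \<lhd> (cb \<odot> f)) \<cdot> ((t \<rhd> \<pi>) \<lhd> f))"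
  using arg_cong[OF S1, of "\<lambda>x. x \<lhd> f"] by simp

lemma S1': "(c \<rhd> lam) \<cdot> ((psl \<lhd> v) \<cdot> (t \<rhd> \<iota>)) = \<iota> \<cdot> (lam \<lhd> cb)"
  by (simp add: tl2[OF S1] tpi)

lemma S2: "(c \<rhd> mu) \<cdot> ((psl \<lhd> t) \<cdot> ((t \<rhd> \<iota>) \<lhd> f)) = (\<iota> \<lhd> f) \<cdot> (lam \<lhd> (cb \<odot> f))"
  by (simp add: tl2[OF S1f] tpif)

lemma PSL: "(\<pi> \<lhd> f) \<cdot> psl = (lam \<lhd> (cb \<odot> f)) \<cdot> (((t \<rhd> \<pi>) \<lhd> f) \<cdot> ((t \<odot> c) \<rhd> eta))"
  unfolding psl_def by (simp add: tl2[OF pif])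

lemma S3: "ml c psl"
proof -
  have tp: "t \<rhd> psl = ((t \<rhd> \<iota>) \<lhd> f) \<cdot> (((t \<rhd> lam) \<lhd> (cb \<odot> f)) \<cdot> ((((t \<odot> t) \<rhd> \<pi>) \<lhd> f) \<cdot> ((t \<odot> t \<odot> c) \<rhd> eta)))"
    unfolding psl_def by simp
  have la: "(lam \<lhd> (cb \<odot> f)) \<cdot> ((t \<rhd> lam) \<lhd> (cb \<odot> f)) = (lam \<lhd> (cb \<odot> f)) \<cdot> (mu \<lhd> (v \<odot> cb \<odot> f))"
    using arg_cong[OF lam_assoc, of "\<lambda>x. x \<lhd> (cb \<odot> f)"] by simp
  have n1: "(mu \<lhd> (v \<odot> cb \<odot> f)) \<cdot> (((t \<odot> t) \<rhd> \<pi>) \<lhd> f) = ((t \<rhd> \<pi>) \<lhd> f) \<cdot> (mu \<lhd> (c \<odot> t))"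
    using nat1[of "\<pi> \<lhd> f" mu] by simp
  have n2: "(mu \<lhd> (c \<odot> t)) \<cdot> ((t \<odot> t \<odot> c) \<rhd> eta) = ((t \<odot> c) \<rhd> eta) \<cdot> (mu \<lhd> c)"
    using nat1[of "c \<rhd> eta" mu] by simp
  have "(c \<rhd> mu) \<cdot> ((psl \<lhd> t) \<cdot> (t \<rhd> psl)) = (\<iota> \<lhd> f) \<cdot> ((lam \<lhd> (cb \<odot> f)) \<cdot> (((t \<rhd> \<pi>) \<lhd> f) \<cdot> (((t \<odot> c) \<rhd> eta) \<cdot> (mu \<lhd> c))))"
    unfolding tp by (simp add: tl2[OF S1f] tl2[OF tpif] tl2[OF la] tl2[OF n1] n2)
  also have "\<dots> = psl \<cdot> (mu \<lhd> c)" by (simp add: psl_def)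
  finally show ?thesis unfolding ml_def by simp
qed

lemma PE0: "(lam \<lhd> (cb \<odot> f)) \<cdot> (((t \<rhd> \<pi>) \<lhd> f) \<cdot> (((t \<odot> c) \<rhd> eta) \<cdot> (eta \<lhd> c))) = (\<pi> \<lhd> f) \<cdot> (c \<rhd> eta)"
proof -
  have n1: "((t \<odot> c) \<rhd> eta) \<cdot> (eta \<lhd> c) = (eta \<lhd> (c \<odot> t)) \<cdot> (c \<rhd> eta)" using nat1[of "c \<rhd> eta" eta] by simp
  have n2: "((t \<rhd> \<pi>) \<lhd> f) \<cdot> (eta \<lhd> (c \<odot> t)) = (eta \<lhd> (v \<odot> cb \<odot> f)) \<cdot> (\<pi> \<lhd> f)" using nat1[of "\<pi> \<lhd> f" eta] by simp
  have lu: "(lam \<lhd> (cb \<odot> f)) \<cdot> (eta \<lhd> (v \<odot> cb \<odot> f)) = id2 C (v \<odot> cb \<odot> f)"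
    using arg_cong[OF lam_unit, of "\<lambda>x. x \<lhd> (cb \<odot> f)"] by simp
  show ?thesis by (simp add: n1 tl2[OF n2] tl2[OF lu])
qed

lemma S4: "psl \<cdot> (eta \<lhd> c) = (\<iota> \<lhd> f) \<cdot> ((\<pi> \<lhd> f) \<cdot> (c \<rhd> eta))"
  unfolding psl_def by (simp add: PE0)


lemma H1: assumes W: "A1 W" "src C W = k" "trg C W = k" and Wb: "A1 Wb" "src C Wb = J" "trg C Wb = J"
  and iW: "A2 iW" "dom2 C iW = v \<odot> Wb" "cod2 C iW = W \<odot> v" and th: "A2 th" "dom2 C th = cb" "cod2 C th = Wb"
  and W': "A1 W'" "src C W' = k" "trg C W' = k" and Wb': "A1 Wb'" "src C Wb' = J" "trg C Wb' = J"
  and iW': "A2 iW'" "dom2 C iW' = v \<odot> Wb'" "cod2 C iW' = W' \<odot> v" and th': "A2 th'" "dom2 C th' = cb" "cod2 C th' = Wb'"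
  shows "emw_hcomp C t mu W' W c psl ((iW' \<lhd> f) \<cdot> (((v \<rhd> th') \<lhd> f) \<cdot> ((\<pi> \<lhd> f) \<cdot> (c \<rhd> eta))))
      ((iW \<lhd> f) \<cdot> (((v \<rhd> th) \<lhd> f) \<cdot> ((\<pi> \<lhd> f) \<cdot> (c \<rhd> eta)))) =
    (((W' \<rhd> iW) \<cdot> (iW' \<lhd> Wb)) \<lhd> f) \<cdot> (((v \<rhd> ((Wb' \<rhd> th) \<cdot> (th' \<lhd> cb))) \<lhd> f) \<cdot> ((pcc \<lhd> f) \<cdot> ((c \<odot> c) \<rhd> eta)))"
proof -
  note [simp] = W Wb iW th W' Wb' iW' th'
  have ab: "(W \<rhd> mu) \<cdot> (((iW \<lhd> f) \<cdot> (((v \<rhd> th) \<lhd> f) \<cdot> ((\<pi> \<lhd> f) \<cdot> (c \<rhd> eta)))) \<lhd> t) = (iW \<lhd> f) \<cdot> (((v \<rhd> th) \<lhd> f) \<cdot> (\<pi> \<lhd> f))"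
    by (rule AB) simp_all
  note abw = arg_cong[OF ab, of "wl C W'", simplified]
  note psw = arg_cong[OF PSL, of "wl C W'", simplified]
  have ln0: "(v \<rhd> th) \<cdot> (lam \<lhd> cb) = (lam \<lhd> Wb) \<cdot> ((t \<odot> v) \<rhd> th)" using nat1[of th lam] by simp
  note ln = arg_cong[OF ln0, of "\<lambda>x. W' \<rhd> (x \<lhd> f)", simplified]
  define Q where "Q = ((v \<rhd> th) \<lhd> f) \<cdot> ((\<pi> \<lhd> f) \<cdot> (c \<rhd> eta))"
  define \<rho>' where "\<rho>' = (iW' \<lhd> f) \<cdot> (((v \<rhd> th') \<lhd> f) \<cdot> ((\<pi> \<lhd> f) \<cdot> (c \<rhd> eta)))"
  have QT: "A2 Q" "dom2 C Q = c" "cod2 C Q = v \<odot> Wb \<odot> f" unfolding Q_def by simp_all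
  have rT: "A2 \<rho>'" "dom2 C \<rho>' = c" "cod2 C \<rho>' = W' \<odot> t" unfolding \<rho>'_def by simp_all
  have nq0: "((W' \<odot> t) \<rhd> Q) \<cdot> (\<rho>' \<lhd> c) = (\<rho>' \<lhd> (v \<odot> Wb \<odot> f)) \<cdot> (c \<rhd> Q)"
    using nat1[of Q \<rho>'] QT rT by simp
  note nq = nq0[unfolded Q_def \<rho>'_def, simplified]
  have rv0: "(W' \<rhd> lam) \<cdot> (((iW' \<lhd> f) \<cdot> (((v \<rhd> th') \<lhd> f) \<cdot> ((\<pi> \<lhd> f) \<cdot> (c \<rhd> eta)))) \<lhd> v) = iW' \<cdot> ((v \<rhd> th') \<cdot> \<pi>)"
    by (rule RVg) simp_all
  note rv = arg_cong[OF rv0, of "\<lambda>x. x \<lhd> (Wb \<odot> f)", simplified]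
  have n60: "((v \<odot> cb) \<rhd> th) \<cdot> (\<pi> \<lhd> cb) = (\<pi> \<lhd> Wb) \<cdot> ((c \<odot> v) \<rhd> th)" using nat1[of th \<pi>] by simp
  note n6 = arg_cong[OF n60, of "\<lambda>x. x \<lhd> f", simplified, symmetric]
  have n70: "((v \<odot> Wb') \<rhd> th) \<cdot> ((v \<rhd> th') \<lhd> cb) = ((v \<rhd> th') \<lhd> Wb) \<cdot> ((v \<odot> cb) \<rhd> th)" using nat1[of th "v \<rhd> th'"] by simp
  note n7 = arg_cong[OF n70, of "\<lambda>x. x \<lhd> f", simplified, symmetric]
  show ?thesis unfolding emw_hcomp_def
    by (simp add: tl5[OF abw] tl2[OF psw] tl2[OF ln] nq tl5[OF rv] tl2[OF n6] tl2[OF n7])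
qed


lemma CP: assumes X: "A1 X" "src C X = k" "trg C X = k" and Xb: "A1 Xb" "src C Xb = J" "trg C Xb = J"
  and iX: "A2 iX" "dom2 C iX = v \<odot> Xb" "cod2 C iX = X \<odot> v" and th: "A2 th" "dom2 C th = cb" "cod2 C th = Xb"
  and ph: "A2 phX" "dom2 C phX = t \<odot> X" "cod2 C phX = X \<odot> t"
  and S2X: "(X \<rhd> mu) \<cdot> ((phX \<lhd> t) \<cdot> ((t \<rhd> iX) \<lhd> f)) = (iX \<lhd> f) \<cdot> (lam \<lhd> (Xb \<odot> f))"
  shows "emw_2cell C t mu eta c psl X phX ((iX \<lhd> f) \<cdot> (((v \<rhd> th) \<lhd> f) \<cdot> ((\<pi> \<lhd> f) \<cdot> (c \<rhd> eta))))"
proof -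
  note [simp] = X Xb iX th ph
  define \<rho> where "\<rho> = (iX \<lhd> f) \<cdot> (((v \<rhd> th) \<lhd> f) \<cdot> ((\<pi> \<lhd> f) \<cdot> (c \<rhd> eta)))"
  have rT[simp]: "A2 \<rho>" "dom2 C \<rho> = c" "cod2 C \<rho> = X \<odot> t" unfolding \<rho>_def by simp_all
  have ab: "(X \<rhd> mu) \<cdot> (\<rho> \<lhd> t) = (iX \<lhd> f) \<cdot> (((v \<rhd> th) \<lhd> f) \<cdot> (\<pi> \<lhd> f))"
    unfolding \<rho>_def by (rule AB) simp_all
  have ln0: "(v \<rhd> th) \<cdot> (lam \<lhd> cb) = (lam \<lhd> Xb) \<cdot> ((t \<odot> v) \<rhd> th)" using nat1[of th lam] by simp
  note lnf = arg_cong[OF ln0, of "\<lambda>x. x \<lhd> f", simplified, symmetric]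
  have a: "(X \<rhd> mu) \<cdot> ((\<rho> \<lhd> t) \<cdot> psl) = (iX \<lhd> f) \<cdot> (((v \<rhd> th) \<lhd> f) \<cdot> ((lam \<lhd> (cb \<odot> f)) \<cdot> (((t \<rhd> \<pi>) \<lhd> f) \<cdot> ((t \<odot> c) \<rhd> eta))))"
  proof -
    have "(X \<rhd> mu) \<cdot> ((\<rho> \<lhd> t) \<cdot> psl) = ((X \<rhd> mu) \<cdot> (\<rho> \<lhd> t)) \<cdot> psl" by simp
    also have "\<dots> = ((iX \<lhd> f) \<cdot> (((v \<rhd> th) \<lhd> f) \<cdot> (\<pi> \<lhd> f))) \<cdot> psl" by (simp only: ab)
    also have "\<dots> = (iX \<lhd> f) \<cdot> (((v \<rhd> th) \<lhd> f) \<cdot> ((lam \<lhd> (cb \<odot> f)) \<cdot> (((t \<rhd> \<pi>) \<lhd> f) \<cdot> ((t \<odot> c) \<rhd> eta))))"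
      by (simp add: PSL)
    finally show ?thesis .
  qed
  have b: "(X \<rhd> mu) \<cdot> ((phX \<lhd> t) \<cdot> (t \<rhd> \<rho>)) = (iX \<lhd> f) \<cdot> (((v \<rhd> th) \<lhd> f) \<cdot> ((lam \<lhd> (cb \<odot> f)) \<cdot> (((t \<rhd> \<pi>) \<lhd> f) \<cdot> ((t \<odot> c) \<rhd> eta))))"
    unfolding \<rho>_def by (simp add: tl3[OF S2X] tl2[OF lnf])
  have nr: "(eta \<lhd> (X \<odot> t)) \<cdot> \<rho> = (t \<rhd> \<rho>) \<cdot> (eta \<lhd> c)" using nat1[of \<rho> eta] by simp
  have c: "\<rho> = (X \<rhd> mu) \<cdot> ((phX \<lhd> t) \<cdot> ((eta \<lhd> (X \<odot> t)) \<cdot> \<rho>))"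
  proof -
    have "(X \<rhd> mu) \<cdot> ((phX \<lhd> t) \<cdot> ((eta \<lhd> (X \<odot> t)) \<cdot> \<rho>)) = ((X \<rhd> mu) \<cdot> ((phX \<lhd> t) \<cdot> (t \<rhd> \<rho>))) \<cdot> (eta \<lhd> c)"
      by (simp add: nr)
    also have "\<dots> = \<rho>" unfolding b by (simp add: PE0 \<rho>_def)
    finally show ?thesis by simp
  qed
  show ?thesis unfolding emw_2cell_def hom2_def \<rho>_def[symmetric] using a b c by simp
qed


lemma S2cc: "((c \<odot> c) \<rhd> mu) \<cdot> (((c \<rhd> psl) \<lhd> t) \<cdot> ((psl \<lhd> (c \<odot> t)) \<cdot> ((((t \<odot> c) \<rhd> \<iota>) \<lhd> f) \<cdot> ((t \<rhd> \<iota>) \<lhd> (cb \<odot> f))))) =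
   ((c \<rhd> \<iota>) \<lhd> f) \<cdot> ((\<iota> \<lhd> (cb \<odot> f)) \<cdot> (lam \<lhd> (cb \<odot> cb \<odot> f)))"
proof -
  have n: "(psl \<lhd> (c \<odot> t)) \<cdot> (((t \<odot> c) \<rhd> \<iota>) \<lhd> f) = (((c \<odot> t) \<rhd> \<iota>) \<lhd> f) \<cdot> (psl \<lhd> (v \<odot> cb \<odot> f))"
    using nat1[of "\<iota> \<lhd> f" psl] by simp
  note s2c = arg_cong[OF S2, of "wl C c", simplified]
  note s1c = arg_cong[OF S1', of "\<lambda>x. x \<lhd> (cb \<odot> f)", simplified]
  show ?thesis apply (simp add: tl2[OF n])
    apply (simp add: tl3[OF s2c])
    apply (simp add: s1c)
    done
qed

lemma icf: "psl \<cdot> (eta \<lhd> c) = (\<iota> \<lhd> f) \<cdot> (((v \<rhd> id2 C cb) \<lhd> f) \<cdot> ((\<pi> \<lhd> f) \<cdot> (c \<rhd> eta)))"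
  by (simp add: S4)

end

context wl0 begin

lemma T: assumes cm': "is_comonad C J cb db eb"
  shows "emw_comonad C k t mu eta c psl ((icc \<lhd> f) \<cdot> (((v \<rhd> db) \<lhd> f) \<cdot> ((\<pi> \<lhd> f) \<cdot> (c \<rhd> eta))))
     ((id2 C v \<lhd> f) \<cdot> (((v \<rhd> eb) \<lhd> f) \<cdot> ((\<pi> \<lhd> f) \<cdot> (c \<rhd> eta))))"
proof -
  have dbT[simp]: "A2 db" "dom2 C db = cb" "cod2 C db = cb \<odot> cb" and ebT[simp]: "A2 eb" "dom2 C eb = cb" "cod2 C eb = id1 C J"
    using cm' unfolding is_comonad_def hom2_def by auto
  have coa: "(db \<lhd> cb) \<cdot> db = (cb \<rhd> db) \<cdot> db" and cl: "(eb \<lhd> cb) \<cdot> db = id2 C cb" and cr: "(cb \<rhd> eb) \<cdot> db = id2 C cb"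
    using cm' unfolding is_comonad_def by auto
  note coaf = arg_cong[OF coa, of "\<lambda>x. (v \<rhd> x) \<lhd> f", simplified]
  note clf = arg_cong[OF cl, of "\<lambda>x. (v \<rhd> x) \<lhd> f", simplified]
  note crf = arg_cong[OF cr, of "\<lambda>x. (v \<rhd> x) \<lhd> f", simplified]
  note piccf = arg_cong[OF picc, of "\<lambda>x. x \<lhd> f", simplified]
  let ?D = "(icc \<lhd> f) \<cdot> (((v \<rhd> db) \<lhd> f) \<cdot> ((\<pi> \<lhd> f) \<cdot> (c \<rhd> eta)))"
  let ?E = "(id2 C v \<lhd> f) \<cdot> (((v \<rhd> eb) \<lhd> f) \<cdot> ((\<pi> \<lhd> f) \<cdot> (c \<rhd> eta)))"
  let ?ic = "(\<iota> \<lhd> f) \<cdot> (((v \<rhd> id2 C cb) \<lhd> f) \<cdot> ((\<pi> \<lhd> f) \<cdot> (c \<rhd> eta)))"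
  have e1: "emw_1cell C t mu c psl" using S3 unfolding ml_def emw_1cell_def hom2_def by simp
  have e2: "emw_2cell C t mu eta c psl (c \<odot> c) ((c \<rhd> psl) \<cdot> (psl \<lhd> c)) ?D"
    by (rule CP[where Xb = "cb \<odot> cb" and th = db]) (simp_all add: S2cc)
  have e3: "emw_2cell C t mu eta c psl (id1 C k) (id2 C t) ?E"
    by (rule CP[where Xb = "id1 C J" and th = eb]) simp_all
  have h1: "emw_hcomp C t mu (c \<odot> c) c c psl ?D ?ic =
    ((((c \<odot> c) \<rhd> \<iota>) \<cdot> (icc \<lhd> cb)) \<lhd> f) \<cdot> (((v \<rhd> (((cb \<odot> cb) \<rhd> id2 C cb) \<cdot> (db \<lhd> cb))) \<lhd> f) \<cdot> ((pcc \<lhd> f) \<cdot> ((c \<odot> c) \<rhd> eta)))"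
    by (rule H1) simp_all
  have a1: "(((c \<odot> c) \<odot> c) \<rhd> mu) \<cdot> ((((((c \<odot> c) \<rhd> \<iota>) \<cdot> (icc \<lhd> cb)) \<lhd> f) \<cdot> (((v \<rhd> (((cb \<odot> cb) \<rhd> id2 C cb) \<cdot> (db \<lhd> cb))) \<lhd> f) \<cdot> ((pcc \<lhd> f) \<cdot> ((c \<odot> c) \<rhd> eta)))) \<lhd> t) =
     ((((c \<odot> c) \<rhd> \<iota>) \<cdot> (icc \<lhd> cb)) \<lhd> f) \<cdot> (((v \<rhd> (((cb \<odot> cb) \<rhd> id2 C cb) \<cdot> (db \<lhd> cb))) \<lhd> f) \<cdot> (pcc \<lhd> f))"
    by (rule AB) simp_all
  have h2: "emw_hcomp C t mu c (c \<odot> c) c psl ?ic ?D =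
    (((c \<rhd> icc) \<cdot> (\<iota> \<lhd> (cb \<odot> cb))) \<lhd> f) \<cdot> (((v \<rhd> ((cb \<rhd> db) \<cdot> (id2 C cb \<lhd> cb))) \<lhd> f) \<cdot> ((pcc \<lhd> f) \<cdot> ((c \<odot> c) \<rhd> eta)))"
    by (rule H1) simp_all
  have a2: "((c \<odot> (c \<odot> c)) \<rhd> mu) \<cdot> (((((c \<rhd> icc) \<cdot> (\<iota> \<lhd> (cb \<odot> cb))) \<lhd> f) \<cdot> (((v \<rhd> ((cb \<rhd> db) \<cdot> (id2 C cb \<lhd> cb))) \<lhd> f) \<cdot> ((pcc \<lhd> f) \<cdot> ((c \<odot> c) \<rhd> eta)))) \<lhd> t) =
    (((c \<rhd> icc) \<cdot> (\<iota> \<lhd> (cb \<odot> cb))) \<lhd> f) \<cdot> (((v \<rhd> ((cb \<rhd> db) \<cdot> (id2 C cb \<lhd> cb))) \<lhd> f) \<cdot> (pcc \<lhd> f))"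
    by (rule AB) simp_all
  have co: "emw_vcomp C t mu ((c \<odot> c) \<odot> c) (emw_hcomp C t mu (c \<odot> c) c c psl ?D ?ic) ?D =
      emw_vcomp C t mu (c \<odot> (c \<odot> c)) (emw_hcomp C t mu c (c \<odot> c) c psl ?ic ?D) ?D"
  proof -
    have "emw_vcomp C t mu ((c \<odot> c) \<odot> c) (emw_hcomp C t mu (c \<odot> c) c c psl ?D ?ic) ?D =
       ((((c \<odot> c) \<odot> c) \<rhd> mu) \<cdot> ((emw_hcomp C t mu (c \<odot> c) c c psl ?D ?ic) \<lhd> t)) \<cdot> ?D"
      unfolding emw_vcomp_def h1 by simp
    also have "\<dots> = (((((c \<odot> c) \<rhd> \<iota>) \<cdot> (icc \<lhd> cb)) \<lhd> f) \<cdot> (((v \<rhd> (((cb \<odot> cb) \<rhd> id2 C cb) \<cdot> (db \<lhd> cb))) \<lhd> f) \<cdot> (pcc \<lhd> f))) \<cdot> ?D"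
      unfolding h1 a1 ..
    also have "\<dots> = ((((c \<rhd> icc) \<cdot> (\<iota> \<lhd> (cb \<odot> cb))) \<lhd> f) \<cdot> (((v \<rhd> ((cb \<rhd> db) \<cdot> (id2 C cb \<lhd> cb))) \<lhd> f) \<cdot> (pcc \<lhd> f))) \<cdot> ?D"
      by (simp add: tl4[OF piccf] tl2[OF coaf])
    also have "\<dots> = (((c \<odot> (c \<odot> c)) \<rhd> mu) \<cdot> ((emw_hcomp C t mu c (c \<odot> c) c psl ?ic ?D) \<lhd> t)) \<cdot> ?D"
      unfolding h2 a2 ..
    also have "\<dots> = emw_vcomp C t mu (c \<odot> (c \<odot> c)) (emw_hcomp C t mu c (c \<odot> c) c psl ?ic ?D) ?D"
      unfolding emw_vcomp_def h2 by simp
    finally show ?thesis .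
  qed
  have h3: "emw_hcomp C t mu (id1 C k) c c psl ?E ?ic =
    (((id1 C k \<rhd> \<iota>) \<cdot> (id2 C v \<lhd> cb)) \<lhd> f) \<cdot> (((v \<rhd> ((id1 C J \<rhd> id2 C cb) \<cdot> (eb \<lhd> cb))) \<lhd> f) \<cdot> ((pcc \<lhd> f) \<cdot> ((c \<odot> c) \<rhd> eta)))"
    by (rule H1) simp_all
  have a3: "((id1 C k \<odot> c) \<rhd> mu) \<cdot> (((((id1 C k \<rhd> \<iota>) \<cdot> (id2 C v \<lhd> cb)) \<lhd> f) \<cdot> (((v \<rhd> ((id1 C J \<rhd> id2 C cb) \<cdot> (eb \<lhd> cb))) \<lhd> f) \<cdot> ((pcc \<lhd> f) \<cdot> ((c \<odot> c) \<rhd> eta)))) \<lhd> t) =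
    (((id1 C k \<rhd> \<iota>) \<cdot> (id2 C v \<lhd> cb)) \<lhd> f) \<cdot> (((v \<rhd> ((id1 C J \<rhd> id2 C cb) \<cdot> (eb \<lhd> cb))) \<lhd> f) \<cdot> (pcc \<lhd> f))"
    by (rule AB) simp_all
  have cl3: "emw_vcomp C t mu (id1 C k \<odot> c) (emw_hcomp C t mu (id1 C k) c c psl ?E ?ic) ?D = psl \<cdot> (eta \<lhd> c)"
  proof -
    have "emw_vcomp C t mu (id1 C k \<odot> c) (emw_hcomp C t mu (id1 C k) c c psl ?E ?ic) ?D =
       (((id1 C k \<odot> c) \<rhd> mu) \<cdot> ((emw_hcomp C t mu (id1 C k) c c psl ?E ?ic) \<lhd> t)) \<cdot> ?D"
      unfolding emw_vcomp_def h3 by simp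
    also have "\<dots> = ((((id1 C k \<rhd> \<iota>) \<cdot> (id2 C v \<lhd> cb)) \<lhd> f) \<cdot> (((v \<rhd> ((id1 C J \<rhd> id2 C cb) \<cdot> (eb \<lhd> cb))) \<lhd> f) \<cdot> (pcc \<lhd> f))) \<cdot> ?D"
      unfolding h3 a3 ..
    also have "\<dots> = psl \<cdot> (eta \<lhd> c)"
      by (simp add: tl4[OF piccf] tl2[OF clf] S4)
    finally show ?thesis .
  qed
  have h4: "emw_hcomp C t mu c (id1 C k) c psl ?ic ?E =
    (((c \<rhd> id2 C v) \<cdot> (\<iota> \<lhd> id1 C J)) \<lhd> f) \<cdot> (((v \<rhd> ((cb \<rhd> eb) \<cdot> (id2 C cb \<lhd> cb))) \<lhd> f) \<cdot> ((pcc \<lhd> f) \<cdot> ((c \<odot> c) \<rhd> eta)))"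
    by (rule H1) simp_all
  have a4: "((c \<odot> id1 C k) \<rhd> mu) \<cdot> (((((c \<rhd> id2 C v) \<cdot> (\<iota> \<lhd> id1 C J)) \<lhd> f) \<cdot> (((v \<rhd> ((cb \<rhd> eb) \<cdot> (id2 C cb \<lhd> cb))) \<lhd> f) \<cdot> ((pcc \<lhd> f) \<cdot> ((c \<odot> c) \<rhd> eta)))) \<lhd> t) =
    (((c \<rhd> id2 C v) \<cdot> (\<iota> \<lhd> id1 C J)) \<lhd> f) \<cdot> (((v \<rhd> ((cb \<rhd> eb) \<cdot> (id2 C cb \<lhd> cb))) \<lhd> f) \<cdot> (pcc \<lhd> f))"
    by (rule AB) simp_all
  have cr3: "emw_vcomp C t mu (c \<odot> id1 C k) (emw_hcomp C t mu c (id1 C k) c psl ?ic ?E) ?D = psl \<cdot> (eta \<lhd> c)"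
  proof -
    have "emw_vcomp C t mu (c \<odot> id1 C k) (emw_hcomp C t mu c (id1 C k) c psl ?ic ?E) ?D =
       (((c \<odot> id1 C k) \<rhd> mu) \<cdot> ((emw_hcomp C t mu c (id1 C k) c psl ?ic ?E) \<lhd> t)) \<cdot> ?D"
      unfolding emw_vcomp_def h4 by simp
    also have "\<dots> = ((((c \<rhd> id2 C v) \<cdot> (\<iota> \<lhd> id1 C J)) \<lhd> f) \<cdot> (((v \<rhd> ((cb \<rhd> eb) \<cdot> (id2 C cb \<lhd> cb))) \<lhd> f) \<cdot> (pcc \<lhd> f))) \<cdot> ?D"
      unfolding h4 a4 ..
    also have "\<dots> = psl \<cdot> (eta \<lhd> c)"
      by (simp add: tl4[OF piccf] tl2[OF crf] S4)
    finally show ?thesis .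
  qed
  have icf': "emw_id C eta c psl = ?ic" unfolding emw_id_def by (simp add: S4)
  show ?thesis unfolding emw_comonad_def Let_def icf'
    using e1 e2 e3 co cl3 cr3 by (simp only: icf)
qed

end

context wl0 begin

lemma idD1: assumes dbT: "A2 db" "dom2 C db = cb" "cod2 C db = cb \<odot> cb" and idb: "icc \<cdot> (v \<rhd> db) = (dl \<lhd> v) \<cdot> \<iota>"
  shows "(dl \<lhd> t) \<cdot> (psl \<cdot> (eta \<lhd> c)) = (icc \<lhd> f) \<cdot> (((v \<rhd> db) \<lhd> f) \<cdot> ((\<pi> \<lhd> f) \<cdot> (c \<rhd> eta)))"
proof -
  note [simp] = dbT
  note idbf = arg_cong[OF idb, of "\<lambda>x. x \<lhd> f", simplified]
  show ?thesis by (simp add: S4 tl3[OF idbf])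
qed

lemma idE1: assumes ebT: "A2 eb" "dom2 C eb = cb" "cod2 C eb = id1 C J" and ieb: "v \<rhd> eb = (ec \<lhd> v) \<cdot> \<iota>"
  shows "(ec \<lhd> t) \<cdot> (psl \<cdot> (eta \<lhd> c)) = (id2 C v \<lhd> f) \<cdot> (((v \<rhd> eb) \<lhd> f) \<cdot> ((\<pi> \<lhd> f) \<cdot> (c \<rhd> eta)))"
proof -
  note [simp] = ebT
  note iebf = arg_cong[OF ieb, of "\<lambda>x. x \<lhd> f", simplified]
  show ?thesis by (simp add: S4 iebf)
qed

lemma PS2E: "(c \<rhd> psl) \<cdot> ((psl \<lhd> c) \<cdot> (eta \<lhd> (c \<odot> c))) =
  ((c \<rhd> \<iota>) \<lhd> f) \<cdot> ((\<iota> \<lhd> (cb \<odot> f)) \<cdot> ((\<pi> \<lhd> (cb \<odot> f)) \<cdot> (((c \<rhd> \<pi>) \<lhd> f) \<cdot> ((c \<odot> c) \<rhd> eta))))"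
proof -
  note s4c = arg_cong[OF S4, of "\<lambda>x. x \<lhd> c", simplified]
  have cp: "c \<rhd> psl = ((c \<rhd> \<iota>) \<lhd> f) \<cdot> (((c \<rhd> lam) \<lhd> (cb \<odot> f)) \<cdot> ((((c \<odot> t) \<rhd> \<pi>) \<lhd> f) \<cdot> ((c \<odot> t \<odot> c) \<rhd> eta)))"
    unfolding psl_def by simp
  have n1: "((c \<odot> t \<odot> c) \<rhd> eta) \<cdot> (\<iota> \<lhd> (f \<odot> c)) = (\<iota> \<lhd> (f \<odot> c \<odot> t)) \<cdot> ((v \<odot> cb \<odot> f \<odot> c) \<rhd> eta)"
    using nat1[of eta "\<iota> \<lhd> (f \<odot> c)"] by simp
  have n2: "(((c \<odot> t) \<rhd> \<pi>) \<lhd> f) \<cdot> (\<iota> \<lhd> (f \<odot> c \<odot> t)) = (\<iota> \<lhd> (f \<odot> v \<odot> cb \<odot> f)) \<cdot> (((v \<odot> cb \<odot> f) \<rhd> \<pi>) \<lhd> f)"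
    using nat1[of "\<pi> \<lhd> f" "\<iota> \<lhd> f"] by simp
  have n30: "(c \<rhd> lam) \<cdot> (\<iota> \<lhd> (f \<odot> v)) = \<iota> \<cdot> ((v \<odot> cb) \<rhd> cu)" using nat1[of cu \<iota>] by simp
  note n3 = arg_cong[OF n30, of "\<lambda>x. x \<lhd> (cb \<odot> f)", simplified]
  have n4: "((v \<odot> cb \<odot> f \<odot> c) \<rhd> eta) \<cdot> (\<pi> \<lhd> (f \<odot> c)) = (\<pi> \<lhd> (f \<odot> c \<odot> t)) \<cdot> ((c \<odot> v \<odot> f \<odot> c) \<rhd> eta)"
    using nat1[of eta "\<pi> \<lhd> (f \<odot> c)"] by simp
  have n5: "(((v \<odot> cb \<odot> f) \<rhd> \<pi>) \<lhd> f) \<cdot> (\<pi> \<lhd> (f \<odot> c \<odot> t)) = (\<pi> \<lhd> (f \<odot> v \<odot> cb \<odot> f)) \<cdot> (((c \<odot> v \<odot> f) \<rhd> \<pi>) \<lhd> f)"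
    using nat1[of "\<pi> \<lhd> f" "\<pi> \<lhd> f"] by simp
  have n60: "((v \<odot> cb) \<rhd> cu) \<cdot> (\<pi> \<lhd> (f \<odot> v)) = \<pi> \<cdot> (c \<rhd> lam)" using nat1[of cu \<pi>] by simp
  note n6 = arg_cong[OF n60, of "\<lambda>x. x \<lhd> (cb \<odot> f)", simplified]
  note pe0c = arg_cong[OF PE0, of "wl C c", simplified]
  show ?thesis unfolding cp
    apply (simp add: s4c)
    apply (simp add: tl2[OF n1])
    apply (simp add: tl2[OF n2])
    apply (simp add: tl2[OF n3])
    apply (simp add: tl2[OF n4])
    apply (simp add: tl2[OF n5])
    apply (simp add: tl2[OF n6])
    apply (simp add: pe0c)
    done
qed


lemma idD2: assumes dbT: "A2 db" "dom2 C db = cb" "cod2 C db = cb \<odot> cb" and pdb: "(v \<rhd> db) \<cdot> \<pi> = pcc \<cdot> (dl \<lhd> v)"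
  shows "(c \<rhd> psl) \<cdot> ((psl \<lhd> c) \<cdot> ((eta \<lhd> (c \<odot> c)) \<cdot> dl)) = (icc \<lhd> f) \<cdot> (((v \<rhd> db) \<lhd> f) \<cdot> ((\<pi> \<lhd> f) \<cdot> (c \<rhd> eta)))"
proof -
  note [simp] = dbT
  note pdbf = arg_cong[OF pdb, of "\<lambda>x. x \<lhd> f", simplified]
  have n: "((c \<odot> c) \<rhd> eta) \<cdot> dl = (dl \<lhd> t) \<cdot> (c \<rhd> eta)" using nat1[of eta dl] by simp
  show ?thesis by (simp add: tl3[OF PS2E] n tl3[OF pdbf[symmetric]])
qed

lemma idE2: assumes ebT: "A2 eb" "dom2 C eb = cb" "cod2 C eb = id1 C J" and peb: "(v \<rhd> eb) \<cdot> \<pi> = ec \<lhd> v"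
  shows "eta \<cdot> ec = (id2 C v \<lhd> f) \<cdot> (((v \<rhd> eb) \<lhd> f) \<cdot> ((\<pi> \<lhd> f) \<cdot> (c \<rhd> eta)))"
proof -
  note [simp] = ebT
  note pebf = arg_cong[OF peb, of "\<lambda>x. x \<lhd> f", simplified]
  have n: "eta \<cdot> ec = (ec \<lhd> t) \<cdot> (c \<rhd> eta)" using nat1[of eta ec] by simp
  show ?thesis by (simp add: tl2[OF pebf] n)
qed

end

context cmset begin

lemma P1: assumes ml: "ml c \<psi>"
  and ew: "emw_comonad C k t mu eta c \<psi> ((dl \<lhd> t) \<cdot> (\<psi> \<cdot> (eta \<lhd> c))) ((ec \<lhd> t) \<cdot> (\<psi> \<cdot> (eta \<lhd> c)))"
  shows "(dl \<lhd> t) \<cdot> \<psi> = ((c \<odot> c) \<rhd> mu) \<cdot> (((c \<rhd> \<psi>) \<lhd> t) \<cdot> ((\<psi> \<lhd> (c \<odot> t)) \<cdot> (((t \<rhd> dl) \<lhd> t) \<cdot> ((t \<rhd> \<psi>) \<cdot> ((t \<rhd> eta) \<lhd> c)))))"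
    "(ec \<lhd> t) \<cdot> \<psi> = mu \<cdot> (((t \<rhd> ec) \<lhd> t) \<cdot> ((t \<rhd> \<psi>) \<cdot> ((t \<rhd> eta) \<lhd> c)))"
proof -
  note h = mlD[OF ml]
  note [simp] = h(1-6)
  have d: "((c \<odot> c) \<rhd> mu) \<cdot> ((((dl \<lhd> t) \<cdot> (\<psi> \<cdot> (eta \<lhd> c))) \<lhd> t) \<cdot> \<psi>) = ((c \<odot> c) \<rhd> mu) \<cdot> ((((c \<rhd> \<psi>) \<cdot> (\<psi> \<lhd> c)) \<lhd> t) \<cdot> (t \<rhd> ((dl \<lhd> t) \<cdot> (\<psi> \<cdot> (eta \<lhd> c)))))"
    using ew unfolding emw_comonad_def emw_2cell_def Let_def by blast
  have e: "(id1 C k \<rhd> mu) \<cdot> ((((ec \<lhd> t) \<cdot> (\<psi> \<cdot> (eta \<lhd> c))) \<lhd> t) \<cdot> \<psi>) = (id1 C k \<rhd> mu) \<cdot> ((id2 C t \<lhd> t) \<cdot> (t \<rhd> ((ec \<lhd> t) \<cdot> (\<psi> \<cdot> (eta \<lhd> c)))))"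
    using ew unfolding emw_comonad_def emw_2cell_def Let_def by blast
  have nd: "((c \<odot> c) \<rhd> mu) \<cdot> (dl \<lhd> (t \<odot> t)) = (dl \<lhd> t) \<cdot> (c \<rhd> mu)" using nat1[of mu dl] by simp
  have ne: "mu \<cdot> (ec \<lhd> (t \<odot> t)) = (ec \<lhd> t) \<cdot> (c \<rhd> mu)" using nat1[of mu ec] by simp
  have g: "(c \<rhd> mu) \<cdot> ((\<psi> \<lhd> t) \<cdot> ((eta \<lhd> (c \<odot> t)) \<cdot> \<psi>)) = \<psi>" using GP1[OF ml] .
  show "(dl \<lhd> t) \<cdot> \<psi> = ((c \<odot> c) \<rhd> mu) \<cdot> (((c \<rhd> \<psi>) \<lhd> t) \<cdot> ((\<psi> \<lhd> (c \<odot> t)) \<cdot> (((t \<rhd> dl) \<lhd> t) \<cdot> ((t \<rhd> \<psi>) \<cdot> ((t \<rhd> eta) \<lhd> c)))))"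
    using d by (simp add: tl2[OF nd] g)
  show "(ec \<lhd> t) \<cdot> \<psi> = mu \<cdot> (((t \<rhd> ec) \<lhd> t) \<cdot> ((t \<rhd> \<psi>) \<cdot> ((t \<rhd> eta) \<lhd> c)))"
    using e by (simp add: tl2[OF ne] g)
qed

lemma P2: assumes ml: "ml c \<psi>"
  and ew: "emw_comonad C k t mu eta c \<psi> ((c \<rhd> \<psi>) \<cdot> ((\<psi> \<lhd> c) \<cdot> ((eta \<lhd> (c \<odot> c)) \<cdot> dl))) (eta \<cdot> ec)"
  shows "(c \<rhd> \<psi>) \<cdot> ((\<psi> \<lhd> c) \<cdot> (t \<rhd> dl)) = ((c \<odot> c) \<rhd> mu) \<cdot> (((c \<rhd> \<psi>) \<lhd> t) \<cdot> ((\<psi> \<lhd> (c \<odot> t)) \<cdot> ((eta \<lhd> (c \<odot> c \<odot> t)) \<cdot> ((dl \<lhd> t) \<cdot> \<psi>))))"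
    "t \<rhd> ec = (ec \<lhd> t) \<cdot> \<psi>"
proof -
  note h = mlD[OF ml]
  note [simp] = h(1-6)
  have d: "((c \<odot> c) \<rhd> mu) \<cdot> ((((c \<rhd> \<psi>) \<cdot> ((\<psi> \<lhd> c) \<cdot> ((eta \<lhd> (c \<odot> c)) \<cdot> dl))) \<lhd> t) \<cdot> \<psi>) = ((c \<odot> c) \<rhd> mu) \<cdot> ((((c \<rhd> \<psi>) \<cdot> (\<psi> \<lhd> c)) \<lhd> t) \<cdot> (t \<rhd> ((c \<rhd> \<psi>) \<cdot> ((\<psi> \<lhd> c) \<cdot> ((eta \<lhd> (c \<odot> c)) \<cdot> dl)))))"
    using ew unfolding emw_comonad_def emw_2cell_def Let_def by blast
  have e: "(id1 C k \<rhd> mu) \<cdot> (((eta \<cdot> ec) \<lhd> t) \<cdot> \<psi>) = (id1 C k \<rhd> mu) \<cdot> ((id2 C t \<lhd> t) \<cdot> (t \<rhd> (eta \<cdot> ec)))"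
    using ew unfolding emw_comonad_def emw_2cell_def Let_def by blast
  note m2 = mlD(7)[OF M2[OF ml], simplified]
  show "(c \<rhd> \<psi>) \<cdot> ((\<psi> \<lhd> c) \<cdot> (t \<rhd> dl)) = ((c \<odot> c) \<rhd> mu) \<cdot> (((c \<rhd> \<psi>) \<lhd> t) \<cdot> ((\<psi> \<lhd> (c \<odot> t)) \<cdot> ((eta \<lhd> (c \<odot> c \<odot> t)) \<cdot> ((dl \<lhd> t) \<cdot> \<psi>))))"
  proof -
    have "(c \<rhd> \<psi>) \<cdot> ((\<psi> \<lhd> c) \<cdot> (t \<rhd> dl)) = (c \<rhd> \<psi>) \<cdot> ((\<psi> \<lhd> c) \<cdot> (((mu \<cdot> (t \<rhd> eta)) \<lhd> (c \<odot> c)) \<cdot> (t \<rhd> dl)))"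
      by (simp add: mu_r)
    also have "\<dots> = ((c \<odot> c) \<rhd> mu) \<cdot> (((c \<rhd> \<psi>) \<lhd> t) \<cdot> ((\<psi> \<lhd> (c \<odot> t)) \<cdot> ((eta \<lhd> (c \<odot> c \<odot> t)) \<cdot> ((dl \<lhd> t) \<cdot> \<psi>))))"
      using d by (simp add: tl3[OF m2[symmetric]])
    finally show ?thesis .
  qed
  show "t \<rhd> ec = (ec \<lhd> t) \<cdot> \<psi>" using e by (simp add: tl2[OF mu_r] tl2[OF mu_l])
qed


lemma P3a: assumes ml: "ml c \<psi>" and D3: "(c \<rhd> \<psi>) \<cdot> ((\<psi> \<lhd> c) \<cdot> (t \<rhd> dl)) = (dl \<lhd> t) \<cdot> \<psi>"
  and E3: "t \<rhd> ec = (ec \<lhd> t) \<cdot> \<psi>"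
  shows "(dl \<lhd> t) \<cdot> \<psi> = ((c \<odot> c) \<rhd> mu) \<cdot> (((c \<rhd> \<psi>) \<lhd> t) \<cdot> ((\<psi> \<lhd> (c \<odot> t)) \<cdot> (((t \<rhd> dl) \<lhd> t) \<cdot> ((t \<rhd> \<psi>) \<cdot> ((t \<rhd> eta) \<lhd> c)))))"
    "(ec \<lhd> t) \<cdot> \<psi> = mu \<cdot> (((t \<rhd> ec) \<lhd> t) \<cdot> ((t \<rhd> \<psi>) \<cdot> ((t \<rhd> eta) \<lhd> c)))"
    "(c \<rhd> \<psi>) \<cdot> ((\<psi> \<lhd> c) \<cdot> (t \<rhd> dl)) = ((c \<odot> c) \<rhd> mu) \<cdot> (((c \<rhd> \<psi>) \<lhd> t) \<cdot> ((\<psi> \<lhd> (c \<odot> t)) \<cdot> ((eta \<lhd> (c \<odot> c \<odot> t)) \<cdot> ((dl \<lhd> t) \<cdot> \<psi>))))"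
proof -
  note h = mlD[OF ml]
  note [simp] = h(1-6)
  note m2 = mlD(7)[OF M2[OF ml], simplified]
  note g2 = GP1[OF M2[OF ml], simplified]
  note D3t = arg_cong[OF D3, of "wl C t", simplified]
  note E3t = arg_cong[OF E3, of "wl C t", simplified]
  have n1: "(mu \<lhd> (c \<odot> c)) \<cdot> ((t \<odot> t) \<rhd> dl) = (t \<rhd> dl) \<cdot> (mu \<lhd> c)" using nat1[of dl mu] by simp
  have u: "(mu \<lhd> c) \<cdot> ((t \<rhd> eta) \<lhd> c) = id2 C (t \<odot> c)" using arg_cong[OF mu_r, of "\<lambda>x. x \<lhd> c"] by simp
  have n2: "mu \<cdot> ((t \<odot> t) \<rhd> ec) = (t \<rhd> ec) \<cdot> (mu \<lhd> c)" using nat1[of ec mu] by simp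
  show "(dl \<lhd> t) \<cdot> \<psi> = ((c \<odot> c) \<rhd> mu) \<cdot> (((c \<rhd> \<psi>) \<lhd> t) \<cdot> ((\<psi> \<lhd> (c \<odot> t)) \<cdot> (((t \<rhd> dl) \<lhd> t) \<cdot> ((t \<rhd> \<psi>) \<cdot> ((t \<rhd> eta) \<lhd> c)))))"
    apply (simp add: tl2[OF D3t[symmetric]])
    apply (simp add: tl5[OF m2] tl2[OF n1] u)
    apply (simp add: D3)
    done
  show "(ec \<lhd> t) \<cdot> \<psi> = mu \<cdot> (((t \<rhd> ec) \<lhd> t) \<cdot> ((t \<rhd> \<psi>) \<cdot> ((t \<rhd> eta) \<lhd> c)))"
    apply (simp add: tl2[OF E3t[symmetric]])
    apply (simp add: tl2[OF n2] u)
    apply (simp add: E3)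
    done
  show "(c \<rhd> \<psi>) \<cdot> ((\<psi> \<lhd> c) \<cdot> (t \<rhd> dl)) = ((c \<odot> c) \<rhd> mu) \<cdot> (((c \<rhd> \<psi>) \<lhd> t) \<cdot> ((\<psi> \<lhd> (c \<odot> t)) \<cdot> ((eta \<lhd> (c \<odot> c \<odot> t)) \<cdot> ((dl \<lhd> t) \<cdot> \<psi>))))"
    by (simp add: D3[symmetric] tl6[OF g2])
qed

lemma P3b: assumes ml: "ml c \<psi>"
  and D1: "(dl \<lhd> t) \<cdot> \<psi> = ((c \<odot> c) \<rhd> mu) \<cdot> (((c \<rhd> \<psi>) \<lhd> t) \<cdot> ((\<psi> \<lhd> (c \<odot> t)) \<cdot> (((t \<rhd> dl) \<lhd> t) \<cdot> ((t \<rhd> \<psi>) \<cdot> ((t \<rhd> eta) \<lhd> c)))))"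
  and D2: "(c \<rhd> \<psi>) \<cdot> ((\<psi> \<lhd> c) \<cdot> (t \<rhd> dl)) = ((c \<odot> c) \<rhd> mu) \<cdot> (((c \<rhd> \<psi>) \<lhd> t) \<cdot> ((\<psi> \<lhd> (c \<odot> t)) \<cdot> ((eta \<lhd> (c \<odot> c \<odot> t)) \<cdot> ((dl \<lhd> t) \<cdot> \<psi>))))"
  shows "(c \<rhd> \<psi>) \<cdot> ((\<psi> \<lhd> c) \<cdot> (t \<rhd> dl)) = (dl \<lhd> t) \<cdot> \<psi>"
proof -
  note h = mlD[OF ml]
  note [simp] = h(1-6)
  note g2 = GP2[OF M2[OF ml], simplified]
  show ?thesis unfolding D2 apply (simp only: D1)
    apply (simp add: tl7[OF g2])
    done
qed

end


context cmset begin

lemma mlI: "mult_law C t mu c \<psi> \<Longrightarrow> ml c \<psi>" unfolding mult_law_def ml_def hom2_def by simp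
lemma mlE: "ml c \<psi> \<Longrightarrow> mult_law C t mu c \<psi>" unfolding mult_law_def ml_def hom2_def by simp

lemma rawD1: "ml c \<psi> \<Longrightarrow> (vcomp C (wr C dl t) \<psi> =
       vcomp C (wl C (comp1 C c c) mu) (vcomp C (wl C c (wr C \<psi> t)) (vcomp C (wr C \<psi> (comp1 C c t))
         (vcomp C (wl C t (wr C dl t)) (vcomp C (wl C t \<psi>) (wl C t (wr C eta c))))))) \<longleftrightarrow>
   ((dl \<lhd> t) \<cdot> \<psi> = ((c \<odot> c) \<rhd> mu) \<cdot> (((c \<rhd> \<psi>) \<lhd> t) \<cdot> ((\<psi> \<lhd> (c \<odot> t)) \<cdot> (((t \<rhd> dl) \<lhd> t) \<cdot> ((t \<rhd> \<psi>) \<cdot> ((t \<rhd> eta) \<lhd> c))))))"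
  using mlD[of c \<psi>] by simp

lemma rawE1: "ml c \<psi> \<Longrightarrow> (vcomp C (wr C ec t) \<psi> =
       vcomp C mu (vcomp C (wl C t (wr C ec t)) (vcomp C (wl C t \<psi>) (wl C t (wr C eta c))))) \<longleftrightarrow>
    ((ec \<lhd> t) \<cdot> \<psi> = mu \<cdot> (((t \<rhd> ec) \<lhd> t) \<cdot> ((t \<rhd> \<psi>) \<cdot> ((t \<rhd> eta) \<lhd> c))))"
  using mlD[of c \<psi>] by simp

lemma rawD2: "ml c \<psi> \<Longrightarrow> (vcomp C (wl C c \<psi>) (vcomp C (wr C \<psi> c) (wl C t dl)) =
       vcomp C (wl C (comp1 C c c) mu) (vcomp C (wl C c (wr C \<psi> t)) (vcomp C (wr C \<psi> (comp1 C c t))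
         (vcomp C (wr C eta (comp1 C (comp1 C c c) t)) (vcomp C (wr C dl t) \<psi>))))) \<longleftrightarrow>
    ((c \<rhd> \<psi>) \<cdot> ((\<psi> \<lhd> c) \<cdot> (t \<rhd> dl)) = ((c \<odot> c) \<rhd> mu) \<cdot> (((c \<rhd> \<psi>) \<lhd> t) \<cdot> ((\<psi> \<lhd> (c \<odot> t)) \<cdot> ((eta \<lhd> (c \<odot> c \<odot> t)) \<cdot> ((dl \<lhd> t) \<cdot> \<psi>)))))"
  using mlD[of c \<psi>] by simp

end


context cmset begin

lemma imp1a: assumes sp: "idempotents_split C" and h: "cond1i C k t mu eta c dl ec"
  shows "cond1iii C J v c dl ec"
proof -
  obtain \<psi> where m: "mult_law C t mu c \<psi>"
    and d: "vcomp C (wr C dl t) \<psi> =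
       vcomp C (wl C (comp1 C c c) mu) (vcomp C (wl C c (wr C \<psi> t)) (vcomp C (wr C \<psi> (comp1 C c t))
         (vcomp C (wl C t (wr C dl t)) (vcomp C (wl C t \<psi>) (wl C t (wr C eta c))))))"
    and e: "vcomp C (wr C ec t) \<psi> =
       vcomp C mu (vcomp C (wl C t (wr C ec t)) (vcomp C (wl C t \<psi>) (wl C t (wr C eta c))))"
    using h unfolding cond1i_def by blast
  have ml: "ml c \<psi>" using mlI[OF m] .
  note D1n = rawD1[OF ml, THEN iffD1, OF d] and E1n = rawE1[OF ml, THEN iffD1, OF e]
  obtain cb \<iota> \<pi> where cbi: "A1 cb" "src C cb = J" "trg C cb = J" "A2 \<iota>" "dom2 C \<iota> = v \<odot> cb" "cod2 C \<iota> = c \<odot> v"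
    "A2 \<pi>" "dom2 C \<pi> = c \<odot> v" "cod2 C \<pi> = v \<odot> cb" "\<pi> \<cdot> \<iota> = id2 C (v \<odot> cb)" "\<iota> \<cdot> \<pi> = ew c \<psi>"
    "lam \<lhd> cb = \<pi> \<cdot> ((c \<rhd> lam) \<cdot> ((\<psi> \<lhd> v) \<cdot> (t \<rhd> \<iota>)))"
    using constructA[OF ml sp] by blast
  interpret L: clift C k J t v f mu eta lam cu c dl ec cb \<iota> \<pi> \<psi>
    by unfold_locales (simp_all add: cbi ml)
  note D1v = L.D1v[OF D1n] and E1v = L.E1v[OF E1n]
  obtain db eb where dbe: "A2 db" "dom2 C db = cb" "cod2 C db = cb \<odot> cb" "A2 eb" "dom2 C eb = cb" "cod2 C eb = id1 C J"
     "v \<rhd> db = L.pcc \<cdot> ((dl \<lhd> v) \<cdot> \<iota>)" "v \<rhd> eb = (ec \<lhd> v) \<cdot> \<iota>"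
    using L.build[OF L.Key1_1[OF D1v] L.KeyE_1[OF E1v]] by blast
  have idb: "L.icc \<cdot> (v \<rhd> db) = (dl \<lhd> v) \<cdot> \<iota>" using L.IL1[OF D1v dbe(7)] .
  have cm': "is_comonad C J cb db eb" using L.comonad_iota[OF dbe(1-6) idb dbe(8)] .
  show ?thesis unfolding cond1iii_def weak_lifting_def hom1_def hom2_def
    apply (rule exI[of _ cb], rule exI[of _ \<iota>], rule exI[of _ \<pi>], rule exI[of _ db], rule exI[of _ eb])
    using cbi cm' idb dbe by simp
qed

lemma wlD: "weak_lifting C J v c cb \<iota> \<pi> \<Longrightarrow> A1 cb \<and> src C cb = J \<and> trg C cb = J \<and> A2 \<iota> \<and> dom2 C \<iota> = v \<odot> cb \<and> cod2 C \<iota> = c \<odot> v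
   \<and> A2 \<pi> \<and> dom2 C \<pi> = c \<odot> v \<and> cod2 C \<pi> = v \<odot> cb \<and> \<pi> \<cdot> \<iota> = id2 C (v \<odot> cb)"
  unfolding weak_lifting_def hom1_def hom2_def by auto

lemma imp1b: assumes h: "cond1iii C J v c dl ec" shows "cond1ii C k t mu eta c dl ec"
proof -
  obtain cb \<iota> \<pi> db eb where w: "weak_lifting C J v c cb \<iota> \<pi>" and cm': "is_comonad C J cb db eb"
    and i1: "vcomp C (vcomp C (wl C c \<iota>) (wr C \<iota> cb)) (wl C v db) = vcomp C (wr C dl v) \<iota>"
    and i2: "vcomp C (id2 C v) (wl C v eb) = vcomp C (wr C ec v) \<iota>"
    using h unfolding cond1iii_def by blast
  note wd = wlD[OF w]
  interpret L: wl0 C k J t v f mu eta lam cu c dl ec cb \<iota> \<pi>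
    by unfold_locales (simp_all add: wd)
  have dbT: "A2 db" "dom2 C db = cb" "cod2 C db = cb \<odot> cb" and ebT: "A2 eb" "dom2 C eb = cb" "cod2 C eb = id1 C J"
    using cm' unfolding is_comonad_def hom2_def by auto
  have i2': "v \<rhd> eb = (ec \<lhd> v) \<cdot> \<iota>" using i2 ebT by simp
  show ?thesis unfolding cond1ii_def
    apply (rule exI[of _ L.psl])
    using L.T[OF cm'] by (simp only: L.idD1[OF dbT i1] L.idE1[OF ebT i2'])
qed

lemma emwD: "emw_comonad C k t mu eta c \<psi> D E \<Longrightarrow> ml c \<psi>"
  unfolding emw_comonad_def Let_def emw_1cell_def ml_def hom2_def by simp

lemma imp1c: assumes h: "cond1ii C k t mu eta c dl ec" shows "cond1i C k t mu eta c dl ec"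
proof -
  obtain \<psi> where e: "emw_comonad C k t mu eta c \<psi> ((dl \<lhd> t) \<cdot> (\<psi> \<cdot> (eta \<lhd> c))) ((ec \<lhd> t) \<cdot> (\<psi> \<cdot> (eta \<lhd> c)))"
    using h unfolding cond1ii_def by blast
  have ml: "ml c \<psi>" using emwD[OF e] .
  show ?thesis unfolding cond1i_def
    apply (rule exI[of _ \<psi>])
    using mlE[OF ml] rawD1[OF ml] rawE1[OF ml] P1[OF ml e] by simp
qed

end


context cmset begin

lemma imp2a: assumes sp: "idempotents_split C" and h: "cond2i C k t mu eta c dl ec"
  shows "cond2iii C J v c dl ec"
proof -
  obtain \<psi> where m: "mult_law C t mu c \<psi>"
    and d: "vcomp C (wl C c \<psi>) (vcomp C (wr C \<psi> c) (wl C t dl)) =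
       vcomp C (wl C (comp1 C c c) mu) (vcomp C (wl C c (wr C \<psi> t)) (vcomp C (wr C \<psi> (comp1 C c t))
         (vcomp C (wr C eta (comp1 C (comp1 C c c) t)) (vcomp C (wr C dl t) \<psi>))))"
    and e: "wl C t ec = vcomp C (wr C ec t) \<psi>"
    using h unfolding cond2i_def by blast
  have ml: "ml c \<psi>" using mlI[OF m] .
  note D2n = rawD2[OF ml, THEN iffD1, OF d]
  obtain cb \<iota> \<pi> where cbi: "A1 cb" "src C cb = J" "trg C cb = J" "A2 \<iota>" "dom2 C \<iota> = v \<odot> cb" "cod2 C \<iota> = c \<odot> v"
    "A2 \<pi>" "dom2 C \<pi> = c \<odot> v" "cod2 C \<pi> = v \<odot> cb" "\<pi> \<cdot> \<iota> = id2 C (v \<odot> cb)" "\<iota> \<cdot> \<pi> = ew c \<psi>"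
    "lam \<lhd> cb = \<pi> \<cdot> ((c \<rhd> lam) \<cdot> ((\<psi> \<lhd> v) \<cdot> (t \<rhd> \<iota>)))"
    using constructA[OF ml sp] by blast
  interpret L: clift C k J t v f mu eta lam cu c dl ec cb \<iota> \<pi> \<psi>
    by unfold_locales (simp_all add: cbi ml)
  note D2v = L.D2v[OF D2n] and E2v = L.E2v[OF e]
  obtain db eb where dbe: "A2 db" "dom2 C db = cb" "cod2 C db = cb \<odot> cb" "A2 eb" "dom2 C eb = cb" "cod2 C eb = id1 C J"
     "v \<rhd> db = L.pcc \<cdot> ((dl \<lhd> v) \<cdot> \<iota>)" "v \<rhd> eb = (ec \<lhd> v) \<cdot> \<iota>"
    using L.build[OF L.Key1_2[OF D2v] L.KeyE_2[OF E2v]] by blast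
  have pdb: "(v \<rhd> db) \<cdot> \<pi> = L.pcc \<cdot> (dl \<lhd> v)" using L.PD[OF D2v dbe(7)] .
  have peb: "(v \<rhd> eb) \<cdot> \<pi> = ec \<lhd> v" using L.PE[OF E2v dbe(8)] .
  have cm': "is_comonad C J cb db eb" using L.comonad_pi[OF dbe(1-6) pdb peb] .
  show ?thesis unfolding cond2iii_def weak_lifting_def hom1_def hom2_def
    apply (rule exI[of _ cb], rule exI[of _ \<iota>], rule exI[of _ \<pi>], rule exI[of _ db], rule exI[of _ eb])
    using cbi cm' pdb peb dbe by simp
qed

lemma imp2b: assumes h: "cond2iii C J v c dl ec" shows "cond2ii C k t mu eta c dl ec"
proof -
  obtain cb \<iota> \<pi> db eb where w: "weak_lifting C J v c cb \<iota> \<pi>" and cm': "is_comonad C J cb db eb"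
    and p1: "vcomp C (wl C v db) \<pi> = vcomp C (vcomp C (wr C \<pi> cb) (wl C c \<pi>)) (wr C dl v)"
    and p2: "vcomp C (wl C v eb) \<pi> = vcomp C (id2 C v) (wr C ec v)"
    using h unfolding cond2iii_def by blast
  note wd = wlD[OF w]
  interpret L: wl0 C k J t v f mu eta lam cu c dl ec cb \<iota> \<pi>
    by unfold_locales (simp_all add: wd)
  have dbT: "A2 db" "dom2 C db = cb" "cod2 C db = cb \<odot> cb" and ebT: "A2 eb" "dom2 C eb = cb" "cod2 C eb = id1 C J"
    using cm' unfolding is_comonad_def hom2_def by auto
  have p2': "(v \<rhd> eb) \<cdot> \<pi> = ec \<lhd> v" using p2 ebT by simp
  show ?thesis unfolding cond2ii_def
    apply (rule exI[of _ L.psl])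
    using L.T[OF cm'] by (simp only: L.idD2[OF dbT p1] L.idE2[OF ebT p2'])
qed

lemma imp2c: assumes h: "cond2ii C k t mu eta c dl ec" shows "cond2i C k t mu eta c dl ec"
proof -
  obtain \<psi> where e: "emw_comonad C k t mu eta c \<psi> ((c \<rhd> \<psi>) \<cdot> ((\<psi> \<lhd> c) \<cdot> ((eta \<lhd> (c \<odot> c)) \<cdot> dl))) (eta \<cdot> ec)"
    using h unfolding cond2ii_def by blast
  have ml: "ml c \<psi>" using emwD[OF e] .
  show ?thesis unfolding cond2i_def
    apply (rule exI[of _ \<psi>])
    using mlE[OF ml] rawD2[OF ml] P2[OF ml e] by simp
qed

lemma imp3a: assumes sp: "idempotents_split C" and h: "cond3i C k t mu eta c dl ec"
  shows "cond3ii C J v c dl ec"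
proof -
  obtain \<psi> where m: "mult_law C t mu c \<psi>"
    and d: "(c \<rhd> \<psi>) \<cdot> ((\<psi> \<lhd> c) \<cdot> (t \<rhd> dl)) = (dl \<lhd> t) \<cdot> \<psi>"
    and e: "t \<rhd> ec = (ec \<lhd> t) \<cdot> \<psi>"
    using h unfolding cond3i_def by blast
  have ml: "ml c \<psi>" using mlI[OF m] .
  note P = P3a[OF ml d e]
  obtain cb \<iota> \<pi> where cbi: "A1 cb" "src C cb = J" "trg C cb = J" "A2 \<iota>" "dom2 C \<iota> = v \<odot> cb" "cod2 C \<iota> = c \<odot> v"
    "A2 \<pi>" "dom2 C \<pi> = c \<odot> v" "cod2 C \<pi> = v \<odot> cb" "\<pi> \<cdot> \<iota> = id2 C (v \<odot> cb)" "\<iota> \<cdot> \<pi> = ew c \<psi>"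
    "lam \<lhd> cb = \<pi> \<cdot> ((c \<rhd> lam) \<cdot> ((\<psi> \<lhd> v) \<cdot> (t \<rhd> \<iota>)))"
    using constructA[OF ml sp] by blast
  interpret L: clift C k J t v f mu eta lam cu c dl ec cb \<iota> \<pi> \<psi>
    by unfold_locales (simp_all add: cbi ml)
  note D1v = L.D1v[OF P(1)] and E1v = L.E1v[OF P(2)] and D2v = L.D2v[OF P(3)] and E2v = L.E2v[OF e]
  obtain db eb where dbe: "A2 db" "dom2 C db = cb" "cod2 C db = cb \<odot> cb" "A2 eb" "dom2 C eb = cb" "cod2 C eb = id1 C J"
     "v \<rhd> db = L.pcc \<cdot> ((dl \<lhd> v) \<cdot> \<iota>)" "v \<rhd> eb = (ec \<lhd> v) \<cdot> \<iota>"
    using L.build[OF L.Key1_1[OF D1v] L.KeyE_1[OF E1v]] by blast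
  have idb: "L.icc \<cdot> (v \<rhd> db) = (dl \<lhd> v) \<cdot> \<iota>" using L.IL1[OF D1v dbe(7)] .
  have pdb: "(v \<rhd> db) \<cdot> \<pi> = L.pcc \<cdot> (dl \<lhd> v)" using L.PD[OF D2v dbe(7)] .
  have peb: "(v \<rhd> eb) \<cdot> \<pi> = ec \<lhd> v" using L.PE[OF E2v dbe(8)] .
  have cm': "is_comonad C J cb db eb" using L.comonad_iota[OF dbe(1-6) idb dbe(8)] .
  show ?thesis unfolding cond3ii_def weak_lifting_def hom1_def hom2_def
    apply (rule exI[of _ cb], rule exI[of _ \<iota>], rule exI[of _ \<pi>], rule exI[of _ db], rule exI[of _ eb])
    using cbi cm' idb pdb peb dbe by simp
qed

lemma imp3b: assumes h: "cond3ii C J v c dl ec" shows "cond3i C k t mu eta c dl ec"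
proof -
  obtain cb \<iota> \<pi> db eb where w: "weak_lifting C J v c cb \<iota> \<pi>" and cm': "is_comonad C J cb db eb"
    and i1: "vcomp C (vcomp C (wl C c \<iota>) (wr C \<iota> cb)) (wl C v db) = vcomp C (wr C dl v) \<iota>"
    and i2: "vcomp C (id2 C v) (wl C v eb) = vcomp C (wr C ec v) \<iota>"
    and p1: "vcomp C (wl C v db) \<pi> = vcomp C (vcomp C (wr C \<pi> cb) (wl C c \<pi>)) (wr C dl v)"
    and p2: "vcomp C (wl C v eb) \<pi> = vcomp C (id2 C v) (wr C ec v)"
    using h unfolding cond3ii_def by blast
  note wd = wlD[OF w]
  interpret L: wl0 C k J t v f mu eta lam cu c dl ec cb \<iota> \<pi>
    by unfold_locales (simp_all add: wd)
  have dbT: "A2 db" "dom2 C db = cb" "cod2 C db = cb \<odot> cb" and ebT: "A2 eb" "dom2 C eb = cb" "cod2 C eb = id1 C J"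
    using cm' unfolding is_comonad_def hom2_def by auto
  have i2': "v \<rhd> eb = (ec \<lhd> v) \<cdot> \<iota>" using i2 ebT by simp
  have p2': "(v \<rhd> eb) \<cdot> \<pi> = ec \<lhd> v" using p2 ebT by simp
  have e1: "emw_comonad C k t mu eta c L.psl ((dl \<lhd> t) \<cdot> (L.psl \<cdot> (eta \<lhd> c))) ((ec \<lhd> t) \<cdot> (L.psl \<cdot> (eta \<lhd> c)))"
    using L.T[OF cm'] by (simp only: L.idD1[OF dbT i1] L.idE1[OF ebT i2'])
  have e2: "emw_comonad C k t mu eta c L.psl ((c \<rhd> L.psl) \<cdot> ((L.psl \<lhd> c) \<cdot> ((eta \<lhd> (c \<odot> c)) \<cdot> dl))) (eta \<cdot> ec)"
    using L.T[OF cm'] by (simp only: L.idD2[OF dbT p1] L.idE2[OF ebT p2'])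
  have ml: "ml c L.psl" using emwD[OF e1] .
  note Q1 = P1[OF ml e1] and Q2 = P2[OF ml e2]
  have d3: "(c \<rhd> L.psl) \<cdot> ((L.psl \<lhd> c) \<cdot> (t \<rhd> dl)) = (dl \<lhd> t) \<cdot> L.psl" using P3b[OF ml Q1(1) Q2(1)] .
  show ?thesis unfolding cond3i_def
    apply (rule exI[of _ L.psl])
    using mlE[OF ml] d3 Q2(2) by simp
qed

end


theorem corollary5p1:
  fixes C :: "('o,'a,'b,'z) twocat_scheme"
    and k J :: 'o and t c v :: 'a and \<mu> \<eta> \<delta> \<epsilon> lam :: 'b
  assumes "two_category C"
    and "has_EM_constructions C"
    and "idempotents_split C"
    and "is_monad C k t \<mu> \<eta>"
    and "is_comonad C k c \<delta> \<epsilon>"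
    and "em_object C k t \<mu> \<eta> J v lam"
  shows "(cond1i C k t \<mu> \<eta> c \<delta> \<epsilon> \<longleftrightarrow> cond1ii C k t \<mu> \<eta> c \<delta> \<epsilon>) \<and>
         (cond1ii C k t \<mu> \<eta> c \<delta> \<epsilon> \<longleftrightarrow> cond1iii C J v c \<delta> \<epsilon>) \<and>
         (cond2i C k t \<mu> \<eta> c \<delta> \<epsilon> \<longleftrightarrow> cond2ii C k t \<mu> \<eta> c \<delta> \<epsilon>) \<and>
         (cond2ii C k t \<mu> \<eta> c \<delta> \<epsilon> \<longleftrightarrow> cond2iii C J v c \<delta> \<epsilon>) \<and>
         (cond3i C k t \<mu> \<eta> c \<delta> \<epsilon> \<longleftrightarrow> cond3ii C J v c \<delta> \<epsilon>)"
proof -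
  interpret tc C by unfold_locales (rule assms(1))
  note mon = assms(4) and em = assms(6)
  have kJ: "k \<in> obj C" "J \<in> obj C" using em mon unfolding em_object_def is_monad_def by auto
  have tT: "A1 t" "src C t = k" "trg C t = k" using mon unfolding is_monad_def hom1_def by auto
  have vT: "A1 v" "src C v = J" "trg C v = k" using em unfolding em_object_def hom1_def by auto
  have muT: "A2 \<mu>" "dom2 C \<mu> = t \<odot> t" "cod2 C \<mu> = t" using mon unfolding is_monad_def hom2_def by auto
  have lamT: "A2 lam" "dom2 C lam = t \<odot> v" "cod2 C lam = v" using em unfolding em_object_def hom2_def by auto
  have ma: "\<mu> \<cdot> (\<mu> \<lhd> t) = \<mu> \<cdot> (t \<rhd> \<mu>)" and mu1: "\<mu> \<cdot> (\<eta> \<lhd> t) = id2 C t"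
    using mon unfolding is_monad_def by auto
  have la: "lam \<cdot> (t \<rhd> lam) = lam \<cdot> (\<mu> \<lhd> v)" using em unfolding em_object_def by auto
  obtain f where f: "hom1 C f k J" "v \<odot> f = t" "lam \<lhd> f = \<mu>"
  proof -
    have "\<exists>g. hom1 C g k J \<and> v \<odot> g = t \<and> lam \<lhd> g = \<mu>"
      using em kJ tT muT ma mu1 unfolding em_object_def hom1_def hom2_def by (metis)
    then show ?thesis using that by blast
  qed
  have fT: "A1 f" "src C f = k" "trg C f = J" using f(1) unfolding hom1_def by auto
  have vfv: "v \<odot> (f \<odot> v) = t \<odot> v" using f(2) fT vT by (simp flip: c1assoc)
  have lfv: "lam \<lhd> (f \<odot> v) = \<mu> \<lhd> v" using wr_wr[of v f lam] f(3) fT vT lamT tT by simp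
  obtain cu where cu: "hom2 C cu (f \<odot> v) (id1 C J)" "v \<rhd> cu = lam"
  proof -
    have "\<exists>!\<theta>. hom2 C \<theta> (f \<odot> v) (id1 C J) \<and> v \<rhd> \<theta> = lam"
    proof (rule em[unfolded em_object_def, THEN conjunct2, THEN conjunct2, THEN conjunct2, THEN conjunct2,
          THEN conjunct2, THEN conjunct2, THEN bspec[OF _ kJ(2)], rule_format])
      show "hom1 C (f \<odot> v) J J \<and> hom1 C (id1 C J) J J \<and> hom2 C lam (v \<odot> f \<odot> v) (v \<odot> id1 C J) \<and>
        lam \<cdot> (lam \<lhd> (f \<odot> v)) = (lam \<lhd> id1 C J) \<cdot> (t \<rhd> lam)"
        unfolding hom1_def hom2_def using fT vT kJ lamT tT vfv lfv la by simp
    qed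
    then show ?thesis using that by blast
  qed
  interpret cmset C k J t v f \<mu> \<eta> lam cu c \<delta> \<epsilon>
    by unfold_locales (simp_all add: mon em f cu assms(5))
  have sp: "idempotents_split C" by (rule assms(3))
  show ?thesis using imp1a[OF sp] imp1b imp1c imp2a[OF sp] imp2b imp2c imp3a[OF sp] imp3b by blast
qed


end
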